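(* Let $\mathcal{H}=\mathcal{H}_1\otimes\cdots\otimes\mathcal{H}_n$ be a tensor product of finite-dimensional complex Hilbert spaces, $\ket{\psi}\in\mathcal{H}$ a unit vector and $\rho=\ket{\psi}\bra{\psi}$. For each $k$ with $0\le k\le n$ let $\mathrm{Harm}^k(\rho)\subseteq\Omega^k(\rho)$ be the space of harmonic entanglement $k$-forms, i.e. those $\omega$ with $d^k\omega=0$ and $\delta^{k-1}\omega=0$. Then $$\mathrm{Harm}^k(\rho)\cong\mathrm{Harm}^{n-k}(\rho).$$
   Context: Notation. For $I\subseteq\{1,\dots,n\}$, $\mathcal{H}_I=\bigotimes_{i\in I}\mathcal{H}_i$ with factors in increasing order; $\rho_I=\mathrm{tr}_{I^C}(\rho)$ is the reduced density matrix (partial trace over the complementary factors), $s_I$ is the orthogonal projection onto $\mathrm{im}(\rho_I)$, and $\mathcal{O}|_{\rho_I}=s_I\mathcal{O}s_I$ for an operator $\mathcal{O}$ on $\mathcal{H}_I$. Entanglement forms. $\Omega^0(\rho)=\mathbb{C}$, and for $1\le k\le n$, $\Omega^k(\rho)=\prod_{|I|=k}\{s_I\mathcal{O}s_I:\mathcal{O}\in\mathrm{End}(\mathcal{H}_I)\}$ (tuples $\omega=(\omega_I)_{|I|=k}$ indexed by the $k$-element subsets). Signed tensor product. For $j\notin J$ and an operator $X$ on $\mathcal{H}_J$, $\mathbb{I}_j\,\widehat{\otimes}\,X$ denotes $(-1)^{p}$ times the operator on $\mathcal{H}_{J\cup\{j\}}$ (factors in increasing order) acting as the identity on the factor $\mathcal{H}_j$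 and as $X$ on the remaining factors, where $p=\#\{i\in J: i<j\}$. Coboundary. $d^0\lambda=(\lambda s_{\{1\}},\dots,\lambda s_{\{n\}})$ for $\lambda\in\mathbb{C}$; for $1\le m\le n-1$, $d^m:\Omega^m(\rho)\to\Omega^{m+1}(\rho)$ has components $(d^m\omega)_I = \big(m\sum_{j\in I}\mathbb{I}_j\,\widehat{\otimes}\,\omega_{I\setminus\{j\}}\big)\big|_{\rho_I}$ for $|I|=m+1$; $d^n=0$. (This satisfies $d^{m}\circ d^{m-1}=0$.) Inner product. On $\Omega^0=\mathbb{C}$, $\langle z,w\rangle=z\bar w$. For $1\le k\le n$ and each $|I|=k$, take a Schmidt decomposition $\ket{\psi}=\sum_{\alpha=1}^{S}\lambda_\alpha\ket{\alpha_I}\otimes\ket{\alpha_{I^C}}$ of $\ket\psi$ with respect to the bipartition $\mathcal{H}_I\otimes\mathcal{H}_{I^C}$ (factors reordered; $\mathcal{H}_\emptyset=\mathbb{C}$), with $\lambda_\alpha>0$ and orthonormal $\ket{\alpha_I}$, which span $\mathrm{im}(\rho_I)$; write $(\omega_I)_{\alpha\beta}=\bra{\alpha_I}\omega_I\ket{\beta_I}$. Then $$\langle\omega,\eta\rangle=\sum_{|I|=k}\sum_{\alpha,\beta=1}^{S}\lambda_\alpha\lambda_\beta\,(\omega_I)_{\alpha\beta}\,\overline{(\eta_I)_{\alpha\beta}},$$ which is positive definite and independent of the choice of Schmidt bases. (In the paper this is defined as $\mathrm{tr}((\omega\wedge\ast\eta)|_{\rho})$ via a wedge product and Hodge star, and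 shown to equal this formula.) Codifferential. $\delta^{k-1}:\Omega^k(\rho)\to\Omega^{k-1}(\rho)$ is the adjoint of $d^{k-1}$ with respect to these inner products: $\langle d^{k-1}\omega,\eta\rangle=\langle\omega,\delta^{k-1}\eta\rangle$. For $k=0$, $\delta^{-1}=0$. *)

theory Defs
  imports Complex_Main
begin

text \<open>Parties are indexed by 0..<n (party i corresponds to the paper's i+1),
  the i-th factor is C^(dims i). A basis multi-index on a subset I of parties is a
  function a :: nat => nat with a i < dims i for i in I and a i = 0 outside I.
  Vectors on H_I are functions on such multi-indices, operators on H_I are
  matrices indexed by pairs of multi-indices (zero outside idx I x idx I).
  A form is a function from subsets I to operators on H_I.\<close>

type_synonym mindex = "nat \<Rightarrow> nat"
type_synonym qop = "mindex \<Rightarrow> mindex \<Rightarrow> complex"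
type_synonym eform = "nat set \<Rightarrow> qop"

definition idx :: "(nat \<Rightarrow> nat) \<Rightarrow> nat set \<Rightarrow> mindex set" where
  "idx dims I = {a. (\<forall>i\<in>I. a i < dims i) \<and> (\<forall>i. i \<notin> I \<longrightarrow> a i = 0)}"

definition zidx :: mindex where "zidx = (\<lambda>i. 0)"

definition merge :: "nat set \<Rightarrow> mindex \<Rightarrow> mindex \<Rightarrow> mindex" where
  "merge I a c = (\<lambda>i. if i \<in> I then a i else c i)"

definition restr :: "nat set \<Rightarrow> mindex \<Rightarrow> mindex" where
  "restr J a = (\<lambda>i. if i \<in> J then a i else 0)"

definition mmul :: "(nat \<Rightarrow> nat) \<Rightarrow> nat set \<Rightarrow> qop \<Rightarrow> qop \<Rightarrow> qop" where
  "mmul dims I A B = (\<lambda>a b. \<Sum>c\<in>idx dims I. A a c * B c b)"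

definition mapp :: "(nat \<Rightarrow> nat) \<Rightarrow> nat set \<Rightarrow> qop \<Rightarrow> (mindex \<Rightarrow> complex) \<Rightarrow> (mindex \<Rightarrow> complex)" where
  "mapp dims I A v = (\<lambda>a. \<Sum>b\<in>idx dims I. A a b * v b)"

definition op_supported :: "(nat \<Rightarrow> nat) \<Rightarrow> nat set \<Rightarrow> qop \<Rightarrow> bool" where
  "op_supported dims I A \<longleftrightarrow> (\<forall>a b. (a \<notin> idx dims I \<or> b \<notin> idx dims I) \<longrightarrow> A a b = 0)"

definition unit_state :: "nat \<Rightarrow> (nat \<Rightarrow> nat) \<Rightarrow> (mindex \<Rightarrow> complex) \<Rightarrow> bool" where
  "unit_state n dims psi \<longleftrightarrow> (\<Sum>a\<in>idx dims {0..<n}. (cmod (psi a))^2) = 1"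

text \<open>Reduced density matrix rho_I = tr_{I^C} |psi><psi|.\<close>
definition rho_red :: "nat \<Rightarrow> (nat \<Rightarrow> nat) \<Rightarrow> (mindex \<Rightarrow> complex) \<Rightarrow> nat set \<Rightarrow> qop" where
  "rho_red n dims psi I = (\<lambda>a b. if a \<in> idx dims I \<and> b \<in> idx dims I then
      (\<Sum>c\<in>idx dims ({0..<n} - I). psi (merge I a c) * cnj (psi (merge I b c))) else 0)"

definition supp_proj :: "nat \<Rightarrow> (nat \<Rightarrow> nat) \<Rightarrow> (mindex \<Rightarrow> complex) \<Rightarrow> nat set \<Rightarrow> qop" where
  "supp_proj n dims psi I = (THE P. op_supported dims I P \<and> mmul dims I P P = P \<and>
      (\<forall>a b. P b a = cnj (P a b)) \<and>
      range (mapp dims I P) = range (mapp dims I (rho_red n dims psi I)))"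

definition restrict_rho :: "nat \<Rightarrow> (nat \<Rightarrow> nat) \<Rightarrow> (mindex \<Rightarrow> complex) \<Rightarrow> nat set \<Rightarrow> qop \<Rightarrow> qop" where
  "restrict_rho n dims psi I X =
     mmul dims I (mmul dims I (supp_proj n dims psi I) X) (supp_proj n dims psi I)"

definition zero_form :: eform where "zero_form = (\<lambda>I a b. 0)"

definition form_add :: "eform \<Rightarrow> eform \<Rightarrow> eform" where
  "form_add x y = (\<lambda>I a b. x I a b + y I a b)"

definition form_scale :: "complex \<Rightarrow> eform \<Rightarrow> eform" where
  "form_scale c x = (\<lambda>I a b. c * x I a b)"

text \<open>Omega^k(rho): tuples (omega_I)_{|I|=k} with omega_I = s_I O s_I; components at
  other index sets are fixed to 0. Omega^0 consists of the scalar component at I = {},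
  where H_{} = C and s_{} = 1.\<close>
definition Omega :: "nat \<Rightarrow> (nat \<Rightarrow> nat) \<Rightarrow> (mindex \<Rightarrow> complex) \<Rightarrow> nat \<Rightarrow> eform set" where
  "Omega n dims psi k = {\<omega>. \<forall>I. if I \<subseteq> {0..<n} \<and> card I = k
      then (\<exists>X. op_supported dims I X \<and> \<omega> I = restrict_rho n dims psi I X)
      else \<omega> I = (\<lambda>a b. 0)}"

definition sten :: "(nat \<Rightarrow> nat) \<Rightarrow> nat \<Rightarrow> nat set \<Rightarrow> qop \<Rightarrow> qop" where
  "sten dims j J X = (\<lambda>a b. if a \<in> idx dims (insert j J) \<and> b \<in> idx dims (insert j J) \<and> a j = b j
      then (-1) ^ card {i\<in>J. i < j} * X (restr J a) (restr J b) else 0)"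

definition dform :: "nat \<Rightarrow> (nat \<Rightarrow> nat) \<Rightarrow> (mindex \<Rightarrow> complex) \<Rightarrow> nat \<Rightarrow> eform \<Rightarrow> eform" where
  "dform n dims psi m \<omega> = (\<lambda>I. if I \<subseteq> {0..<n} \<and> card I = Suc m then
      (if m = 0 then (\<lambda>a b. \<omega> {} zidx zidx * supp_proj n dims psi I a b)
       else restrict_rho n dims psi I
              (\<lambda>a b. of_nat m * (\<Sum>j\<in>I. sten dims j (I - {j}) (\<omega> (I - {j})) a b)))
    else (\<lambda>a b. 0))"

definition schmidt :: "nat \<Rightarrow> (nat \<Rightarrow> nat) \<Rightarrow> (mindex \<Rightarrow> complex) \<Rightarrow> nat set \<Rightarrow>
    nat \<Rightarrow> (nat \<Rightarrow> real) \<Rightarrow> (nat \<Rightarrow> mindex \<Rightarrow> complex) \<Rightarrow> (nat \<Rightarrow> mindex \<Rightarrow> complex) \<Rightarrow> bool" where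
  "schmidt n dims psi I S lam u v \<longleftrightarrow>
     (\<forall>\<alpha><S. lam \<alpha> > 0) \<and>
     (\<forall>\<alpha><S. \<forall>\<beta><S. (\<Sum>a\<in>idx dims I. u \<alpha> a * cnj (u \<beta> a)) = (if \<alpha> = \<beta> then 1 else 0)) \<and>
     (\<forall>\<alpha><S. \<forall>\<beta><S. (\<Sum>c\<in>idx dims ({0..<n} - I). v \<alpha> c * cnj (v \<beta> c)) = (if \<alpha> = \<beta> then 1 else 0)) \<and>
     (\<forall>a\<in>idx dims I. \<forall>c\<in>idx dims ({0..<n} - I).
        psi (merge I a c) = (\<Sum>\<alpha><S. complex_of_real (lam \<alpha>) * u \<alpha> a * v \<alpha> c))"

definition schmidt_choice where
  "schmidt_choice n dims psi I = (SOME (S, lam, u, v). schmidt n dims psi I S lam u v)"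

definition mat_entry :: "(nat \<Rightarrow> nat) \<Rightarrow> nat set \<Rightarrow> (mindex \<Rightarrow> complex) \<Rightarrow> qop \<Rightarrow> (mindex \<Rightarrow> complex) \<Rightarrow> complex" where
  "mat_entry dims I x A y = (\<Sum>a\<in>idx dims I. \<Sum>b\<in>idx dims I. cnj (x a) * A a b * y b)"

definition inner_form :: "nat \<Rightarrow> (nat \<Rightarrow> nat) \<Rightarrow> (mindex \<Rightarrow> complex) \<Rightarrow> nat \<Rightarrow> eform \<Rightarrow> eform \<Rightarrow> complex" where
  "inner_form n dims psi k \<omega> \<eta> =
    (if k = 0 then \<omega> {} zidx zidx * cnj (\<eta> {} zidx zidx)
     else (\<Sum>I\<in>{I. I \<subseteq> {0..<n} \<and> card I = k}.
        (case schmidt_choice n dims psi I of (S, lam, u, v) \<Rightarrow>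
          \<Sum>\<alpha><S. \<Sum>\<beta><S. complex_of_real (lam \<alpha> * lam \<beta>) *
             mat_entry dims I (u \<alpha>) (\<omega> I) (u \<beta>) * cnj (mat_entry dims I (u \<alpha>) (\<eta> I) (u \<beta>)))))"

definition codiff :: "nat \<Rightarrow> (nat \<Rightarrow> nat) \<Rightarrow> (mindex \<Rightarrow> complex) \<Rightarrow> nat \<Rightarrow> eform \<Rightarrow> eform" where
  "codiff n dims psi k \<eta> = (if k = 0 then zero_form else
     (THE \<xi>. \<xi> \<in> Omega n dims psi (k - 1) \<and>
        (\<forall>\<omega>\<in>Omega n dims psi (k - 1).
           inner_form n dims psi k (dform n dims psi (k - 1) \<omega>) \<eta> =
           inner_form n dims psi (k - 1) \<omega> \<xi>)))"

definition Harm :: "nat \<Rightarrow> (nat \<Rightarrow> nat) \<Rightarrow> (mindex \<Rightarrow> complex) \<Rightarrow> nat \<Rightarrow> eform set" where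
  "Harm n dims psi k = {\<omega> \<in> Omega n dims psi k.
      dform n dims psi k \<omega> = zero_form \<and> codiff n dims psi k \<omega> = zero_form}"

end

theory Submission
  imports Defs "HOL-Analysis.Analysis"
begin


definition inn :: "'a set \<Rightarrow> ('a \<Rightarrow> complex) \<Rightarrow> ('a \<Rightarrow> complex) \<Rightarrow> complex" where
  "inn A x y = (\<Sum>a\<in>A. x a * cnj (y a))"

lemma inn_cnj: "cnj (inn A x y) = inn A y x"
  by (simp add: inn_def mult.commute)

lemma inn_add_left: "inn A (\<lambda>a. x a + y a) z = inn A x z + inn A y z"
  by (simp add: inn_def algebra_simps sum.distrib)
lemma inn_add_right: "inn A x (\<lambda>a. y a + z a) = inn A x y + inn A x z"
  by (simp add: inn_def algebra_simps sum.distrib)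
lemma inn_diff_left: "inn A (\<lambda>a. x a - y a) z = inn A x z - inn A y z"
  by (simp add: inn_def algebra_simps sum_subtractf)
lemma inn_diff_right: "inn A x (\<lambda>a. y a - z a) = inn A x y - inn A x z"
  by (simp add: inn_def algebra_simps sum_subtractf)
lemma inn_scale_left: "inn A (\<lambda>a. c * x a) z = c * inn A x z"
  by (simp add: inn_def algebra_simps sum_distrib_left)
lemma inn_scale_right: "inn A x (\<lambda>a. c * y a) = cnj c * inn A x y"
  by (simp add: inn_def algebra_simps sum_distrib_left)
lemma inn_sum_left: "inn A (\<lambda>a. \<Sum>i\<in>I. f i a) z = (\<Sum>i\<in>I. inn A (f i) z)"
  by (simp add: inn_def sum_distrib_right sum.swap[of _ I])
lemma inn_sum_right: "inn A x (\<lambda>a. \<Sum>i\<in>I. f i a) = (\<Sum>i\<in>I. inn A x (f i))"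
  by (simp add: inn_def sum_distrib_left sum.swap[of _ I])
lemma inn_cong: "(\<And>a. a \<in> A \<Longrightarrow> x a = x' a) \<Longrightarrow> (\<And>a. a \<in> A \<Longrightarrow> y a = y' a) \<Longrightarrow> inn A x y = inn A x' y'"
  by (simp add: inn_def)

lemma inn_self: "inn A x x = of_real (\<Sum>a\<in>A. (cmod (x a))^2)"
  unfolding inn_def of_real_sum by (intro sum.cong refl) (simp only: complex_norm_square)

lemma inn_self_Re: "Re (inn A x x) = (\<Sum>a\<in>A. (cmod (x a))^2)"
  by (simp add: inn_self)

lemma inn_self_nonneg: "Re (inn A x x) \<ge> 0"
  by (simp add: inn_self_Re sum_nonneg)

lemma inn_self_zero: "finite A \<Longrightarrow> Re (inn A x x) = 0 \<Longrightarrow> a \<in> A \<Longrightarrow> x a = 0"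
  by (simp add: inn_self_Re sum_nonneg_eq_0_iff)

definition orthonormal :: "'a set \<Rightarrow> (nat \<Rightarrow> 'a \<Rightarrow> complex) \<Rightarrow> nat \<Rightarrow> bool" where
  "orthonormal A w m \<longleftrightarrow> (\<forall>i<m. \<forall>j<m. inn A (w i) (w j) = (if i = j then 1 else 0))"

lemma inn_expand_left:
  assumes "orthonormal A w m" "j < m"
  shows "inn A (\<lambda>a. \<Sum>i<m. c i * w i a) (w j) = c j"
proof -
  have "inn A (\<lambda>a. \<Sum>i<m. c i * w i a) (w j) = (\<Sum>i<m. c i * inn A (w i) (w j))"
    by (simp add: inn_sum_left inn_scale_left)
  also have "\<dots> = (\<Sum>i<m. if i = j then c i else 0)"
    using assms by (intro sum.cong) (auto simp: orthonormal_def)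
  finally show ?thesis using assms by simp
qed

lemma bessel:
  assumes "orthonormal A w m"
  shows "(\<Sum>i<m. (cmod (inn A x (w i)))^2) \<le> Re (inn A x x)"
proof -
  define c where "c i = inn A x (w i)" for i
  define p where "p a = x a - (\<Sum>i<m. c i * w i a)" for a
  have cw: "inn A (\<lambda>a. \<Sum>i<m. c i * w i a) (w j) = c j" if "j < m" for j
    using inn_expand_left[OF assms that] .
  have pw: "inn A p (w j) = 0" if "j < m" for j
    unfolding p_def inn_diff_left using cw[OF that] by (simp add: c_def)
  have pe: "p = (\<lambda>a. x a - (\<Sum>i<m. c i * w i a))" by (simp add: fun_eq_iff p_def)
  have "inn A p p = inn A p (\<lambda>a. x a - (\<Sum>i<m. c i * w i a))"
    by (simp only: pe[symmetric])
  also have "\<dots> = inn A p x - inn A p (\<lambda>a. \<Sum>i<m. c i * w i a)"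
    by (rule inn_diff_right)
  also have "inn A p (\<lambda>a. \<Sum>i<m. c i * w i a) = 0"
    by (simp add: inn_sum_right inn_scale_right pw)
  also have "inn A p x = inn A x x - (\<Sum>i<m. c i * cnj (c i))"
  proof -
    have wx: "inn A (w i) x = cnj (c i)" for i by (simp add: c_def inn_cnj)
    have "inn A p x = inn A x x - inn A (\<lambda>a. \<Sum>i<m. c i * w i a) x"
      by (simp only: pe inn_diff_left)
    also have "inn A (\<lambda>a. \<Sum>i<m. c i * w i a) x = (\<Sum>i<m. c i * cnj (c i))"
      by (simp only: inn_sum_left inn_scale_left wx)
    finally show ?thesis .
  qed
  finally have "inn A p p = inn A x x - (\<Sum>i<m. c i * cnj (c i))" by simp
  hence "Re (inn A p p) = Re (inn A x x) - (\<Sum>i<m. (cmod (c i))^2)"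
    by (simp add: complex_norm_square[symmetric])
  with inn_self_nonneg[of A p] show ?thesis by (simp add: c_def)
qed

lemma orthonormal_card:
  assumes "finite A" "orthonormal A w m"
  shows "m \<le> card A"
proof -
  have "real m = (\<Sum>i<m. Re (inn A (w i) (w i)))"
    using assms(2) by (simp add: orthonormal_def)
  also have "\<dots> = (\<Sum>i<m. \<Sum>a\<in>A. (cmod (w i a))^2)"
    by (simp add: inn_self_Re)
  also have "\<dots> = (\<Sum>a\<in>A. \<Sum>i<m. (cmod (inn A (\<lambda>b. if b = a then 1 else 0) (w i)))^2)"
  proof -
    have "inn A (\<lambda>b. if b = a then 1 else 0) (w i) = cnj (w i a)" if "a \<in> A" for a i
    proof -
      have "inn A (\<lambda>b. if b = a then 1 else 0) (w i) = (\<Sum>b\<in>A. if b = a then cnj (w i a) else 0)"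
        unfolding inn_def by (rule sum.cong) auto
      then show ?thesis using that assms(1) by simp
    qed
    then show ?thesis by (simp add: sum.swap[of _ A])
  qed
  also have "\<dots> \<le> (\<Sum>a\<in>A. Re (inn A (\<lambda>b. if b = a then 1 else 0) (\<lambda>b. if b = a then 1 else 0)))"
    by (intro sum_mono bessel[OF assms(2)])
  also have "\<dots> = (\<Sum>a\<in>A. 1)"
  proof (intro sum.cong refl)
    fix a assume a: "a \<in> A"
    have "inn A (\<lambda>b. if b = a then 1 else 0) (\<lambda>b. if b = a then 1 else 0) = (\<Sum>b\<in>A. if b = a then 1 else 0)"
      unfolding inn_def by (rule sum.cong) auto
    then show "Re (inn A (\<lambda>b. if b = a then 1 else 0) (\<lambda>b. if b = a then 1 else 0)) = 1"
      using a assms(1) by simp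
  qed
  finally show ?thesis by simp
qed


lemma sum_if_eq_delta: "finite I \<Longrightarrow> j \<in> I \<Longrightarrow> (\<Sum>i\<in>I. (if i = j then f i else 0)) = f j"
  by (simp add: sum.delta)

locale psdmat =
  fixes A :: "'a set" and C :: "'c set" and M :: "'a \<Rightarrow> 'c \<Rightarrow> complex"
  assumes finA: "finite A" and finC: "finite C"
begin

definition rho where "rho a b = (\<Sum>c\<in>C. M a c * cnj (M b c))"
definition app where "app x = (\<lambda>a. \<Sum>b\<in>A. rho a b * x b)"

lemma cnj_rho: "cnj (rho b a) = rho a b"
  by (simp add: rho_def mult.commute)

lemma app_cong: "(\<And>b. b \<in> A \<Longrightarrow> x b = x' b) \<Longrightarrow> app x a = app x' a"
  by (simp add: app_def)

lemma app_add: "app (\<lambda>b. x b + y b) a = app x a + app y a"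
  by (simp add: app_def algebra_simps sum.distrib)

lemma app_scale: "app (\<lambda>b. c * x b) a = c * app x a"
  by (simp add: app_def algebra_simps sum_distrib_left)

lemma app_herm: "inn A (app x) y = inn A x (app y)"
proof -
  have "inn A (app x) y = (\<Sum>a\<in>A. \<Sum>b\<in>A. rho a b * x b * cnj (y a))"
    by (simp add: inn_def app_def sum_distrib_right)
  also have "\<dots> = (\<Sum>b\<in>A. \<Sum>a\<in>A. x b * (cnj (rho b a) * cnj (y a)))"
    by (subst sum.swap) (simp add: cnj_rho mult_ac)
  also have "\<dots> = inn A x (app y)"
    by (simp add: inn_def app_def sum_distrib_left)
  finally show ?thesis .
qed

lemma col_inn: "(\<Sum>c\<in>C. inn A (\<lambda>b. M b c) x * cnj (inn A (\<lambda>b. M b c) y)) = inn A (app y) x"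
proof -
  have "(\<Sum>c\<in>C. inn A (\<lambda>b. M b c) x * cnj (inn A (\<lambda>b. M b c) y))
      = (\<Sum>c\<in>C. \<Sum>a\<in>A. \<Sum>b\<in>A. M a c * cnj (x a) * (cnj (M b c) * y b))"
    by (simp add: inn_def sum_distrib_left sum_distrib_right) (rule sum.cong[OF refl], rule sum.swap)
  also have "\<dots> = (\<Sum>a\<in>A. \<Sum>c\<in>C. \<Sum>b\<in>A. M a c * cnj (x a) * (cnj (M b c) * y b))"
    by (rule sum.swap)
  also have "\<dots> = (\<Sum>a\<in>A. \<Sum>b\<in>A. \<Sum>c\<in>C. M a c * cnj (x a) * (cnj (M b c) * y b))"
    by (intro sum.cong refl) (rule sum.swap)
  also have "\<dots> = inn A (app y) x"
    by (simp add: inn_def app_def rho_def sum_distrib_left sum_distrib_right mult_ac)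
  finally show ?thesis .
qed

lemma app_psd: "inn A (app x) x = of_real (\<Sum>c\<in>C. (cmod (inn A (\<lambda>b. M b c) x))^2)"
proof -
  have "inn A (app x) x = (\<Sum>c\<in>C. inn A (\<lambda>b. M b c) x * cnj (inn A (\<lambda>b. M b c) x))"
    by (rule col_inn[symmetric])
  also have "\<dots> = of_real (\<Sum>c\<in>C. (cmod (inn A (\<lambda>b. M b c) x))^2)"
    unfolding of_real_sum by (intro sum.cong refl) (simp only: complex_norm_square)
  finally show ?thesis .
qed

lemma app_psd_Re: "Re (inn A (app x) x) = (\<Sum>c\<in>C. (cmod (inn A (\<lambda>b. M b c) x))^2)"
  by (simp add: app_psd)

lemma app_psd_nonneg: "Re (inn A (app x) x) \<ge> 0"
  by (simp add: app_psd_Re sum_nonneg)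

lemma app_psd_real: "inn A (app x) x = of_real (Re (inn A (app x) x))"
  by (simp add: app_psd)

lemma inn_self_real: "inn A x x = of_real (Re (inn A x x))"
  by (simp add: inn_self)

lemma zero_on_A_q: "(\<And>a. a \<in> A \<Longrightarrow> x a = 0) \<Longrightarrow> inn A (app x) x = 0"
  by (simp add: inn_def)

lemma continuous_inn: "continuous_on UNIV (\<lambda>x::'a \<Rightarrow> complex. inn A x (w::'a \<Rightarrow> complex))"
  unfolding inn_def by (intro continuous_intros continuous_on_product_coordinates)

lemma continuous_inn_self: "continuous_on UNIV (\<lambda>x::'a \<Rightarrow> complex. inn A x x)"
  unfolding inn_def by (intro continuous_intros continuous_on_product_coordinates)

lemma continuous_q: "continuous_on UNIV (\<lambda>x::'a \<Rightarrow> complex. Re (inn A (app x) x))"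
  unfolding inn_def app_def by (intro continuous_intros continuous_on_product_coordinates)

lemma compact_box:
  "compact (Pi UNIV (\<lambda>a. if a \<in> A then cball (0::complex) 1 else {0}))"
proof -
  have "compactin (product_topology (\<lambda>i. euclidean) UNIV) (PiE UNIV (\<lambda>a. if a \<in> A then cball (0::complex) 1 else {0}))"
    by (subst compactin_PiE) auto
  then show ?thesis
    by (metis PiE_UNIV_domain compactin_euclidean_iff euclidean_product_topology)
qed

lemma scale_q: "Re (inn A (app (\<lambda>a. of_real s * x a)) (\<lambda>a. of_real s * x a)) = s^2 * Re (inn A (app x) x)"
proof -
  have "app (\<lambda>a. of_real s * x a) = (\<lambda>a. of_real s * app x a)"
    by (simp add: fun_eq_iff app_scale)
  then have "inn A (app (\<lambda>a. of_real s * x a)) (\<lambda>a. of_real s * x a) = of_real s * of_real s * inn A (app x) x"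
    by (simp add: inn_scale_left inn_scale_right)
  then show ?thesis by (simp add: power2_eq_square)
qed

lemma scale_inn: "Re (inn A (\<lambda>a. of_real s * x a) (\<lambda>a. of_real s * x a)) = s^2 * Re (inn A x x)"
  by (simp add: inn_scale_left inn_scale_right power2_eq_square)

lemma extend:
  assumes on: "orthonormal A w m"
    and eig: "\<forall>i<m. \<forall>a\<in>A. app (w i) a = of_real (\<mu> i) * w i a"
    and x0w: "\<forall>i<m. inn A x0 (w i) = 0"
    and pos: "Re (inn A (app x0) x0) > 0"
  shows "\<exists>x l. l > 0 \<and> inn A x x = 1 \<and> (\<forall>i<m. inn A x (w i) = 0) \<and> (\<forall>a\<in>A. app x a = of_real l * x a)"
proof -
  define q where "q x = Re (inn A (app x) x)" for x
  define K where "K = {x. (\<forall>a. a \<notin> A \<longrightarrow> x a = 0) \<and> inn A x x = 1 \<and> (\<forall>i<m. inn A x (w i) = 0)}"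
  have normalize: "(\<lambda>a. if a \<in> A then of_real (1 / sqrt (Re (inn A z z))) * z a else 0) \<in> K \<and>
      q (\<lambda>a. if a \<in> A then of_real (1 / sqrt (Re (inn A z z))) * z a else 0) = q z / Re (inn A z z)"
    if zw: "\<forall>i<m. inn A z (w i) = 0" and zr: "Re (inn A z z) > 0" for z
  proof -
    define s where "s = 1 / sqrt (Re (inn A z z))"
    define z' where "z' = (\<lambda>a. if a \<in> A then of_real s * z a else 0)"
    have e1: "inn A z' y = inn A (\<lambda>a. of_real s * z a) y" for y by (rule inn_cong) (auto simp: z'_def)
    have e2: "inn A y z' = inn A y (\<lambda>a. of_real s * z a)" for y by (rule inn_cong) (auto simp: z'_def)
    have e3: "app z' a = app (\<lambda>a. of_real s * z a) a" for a by (rule app_cong) (auto simp: z'_def)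
    have s2: "s^2 * Re (inn A z z) = 1" using zr by (simp add: s_def power_divide)
    have "inn A z' z' = of_real (s^2 * Re (inn A z z))"
      unfolding e1 e2 by (simp add: inn_scale_left inn_scale_right power2_eq_square)
        (subst inn_self_real, simp)
    hence n1: "inn A z' z' = 1" using s2 by simp
    have "inn A (app z') z' = inn A (app (\<lambda>a. of_real s * z a)) (\<lambda>a. of_real s * z a)"
      by (rule inn_cong, rule e3, simp add: z'_def)
    hence "q z' = s^2 * q z"
      unfolding q_def using scale_q by simp
    hence "q z' = q z / Re (inn A z z)"
      using s2 zr by (simp add: field_simps)
    moreover have "z' \<in> K"
    proof -
      have "inn A z' (w i) = of_real s * inn A z (w i)" for i
        unfolding e1 by (rule inn_scale_left)
      then have "\<forall>i<m. inn A z' (w i) = 0" using zw by simp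
      moreover have "\<forall>a. a \<notin> A \<longrightarrow> z' a = 0" by (simp add: z'_def)
      ultimately show ?thesis using n1 unfolding K_def by blast
    qed
    ultimately show ?thesis unfolding z'_def s_def by blast
  qed
  have r0: "Re (inn A x0 x0) > 0"
  proof (rule ccontr)
    assume "\<not> ?thesis"
    with inn_self_nonneg[of A x0] have "Re (inn A x0 x0) = 0" by simp
    hence "\<And>a. a \<in> A \<Longrightarrow> x0 a = 0" by (rule inn_self_zero[OF finA])
    hence "inn A (app x0) x0 = 0" by (rule zero_on_A_q)
    with pos show False by simp
  qed
  from normalize[OF x0w r0] obtain x1 where x1K: "x1 \<in> K" and qx1: "q x1 = q x0 / Re (inn A x0 x0)" by blast
  have qx1pos: "q x1 > 0" using qx1 pos r0 by (simp add: q_def)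
  have Kbox: "K \<subseteq> Pi UNIV (\<lambda>a. if a \<in> A then cball (0::complex) 1 else {0})"
  proof
    fix x assume xK: "x \<in> K"
    have "cmod (x a) \<le> 1" if a: "a \<in> A" for a
    proof -
      have "(cmod (x a))^2 \<le> (\<Sum>b\<in>A. (cmod (x b))^2)"
        using a finA by (intro member_le_sum) auto
      also have "\<dots> = 1" using xK inn_self_Re[of A x] by (simp add: K_def)
      finally show ?thesis by (simp add: power_le_one_iff abs_le_square_iff)
    qed
    then show "x \<in> Pi UNIV (\<lambda>a. if a \<in> A then cball (0::complex) 1 else {0})"
      using xK by (auto simp: K_def)
  qed
  have Kclosed: "closed K"
  proof -
    have "K = (\<Inter>a\<in>-A. {x. x a = 0}) \<inter> {x. inn A x x = 1} \<inter> (\<Inter>i\<in>{..<m}. {x. inn A x (w i) = 0})"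
      by (auto simp: K_def)
    moreover have "closed {x::'a\<Rightarrow>complex. x a = 0}" for a
      by (rule closed_Collect_eq) (auto intro: continuous_intros)
    moreover have "closed {x. inn A x x = 1}"
      by (rule closed_Collect_eq) (auto intro: continuous_intros continuous_inn_self)
    moreover have "closed {x. inn A x (w i) = 0}" for i
      by (rule closed_Collect_eq) (auto intro: continuous_intros continuous_inn)
    ultimately show ?thesis by (auto intro!: closed_Int closed_INT)
  qed
  have Kcompact: "compact K"
    using compact_Int_closed[OF compact_box Kclosed] Kbox by (simp add: Int_absorb1)
  have "continuous_on K q"
    using continuous_q unfolding q_def by (rule continuous_on_subset) simp
  from continuous_attains_sup[OF Kcompact _ this] x1K
  obtain xs where xsK: "xs \<in> K" and xsmax: "\<And>y. y \<in> K \<Longrightarrow> q y \<le> q xs" by blast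
  define l where "l = q xs"
  have lpos: "l > 0" using xsmax[OF x1K] qx1pos by (simp add: l_def)
  have xs1: "inn A xs xs = 1" and xsw: "\<forall>i<m. inn A xs (w i) = 0" using xsK by (auto simp: K_def)
  have bound: "q z \<le> l * Re (inn A z z)" if zw: "\<forall>i<m. inn A z (w i) = 0" for z
  proof (cases "Re (inn A z z) = 0")
    case True
    hence "\<And>a. a \<in> A \<Longrightarrow> z a = 0" by (rule inn_self_zero[OF finA])
    hence "inn A (app z) z = 0" by (rule zero_on_A_q)
    then show ?thesis using True by (simp add: q_def)
  next
    case False
    hence r: "Re (inn A z z) > 0" using inn_self_nonneg[of A z] by simp
    from normalize[OF zw r] have "q z / Re (inn A z z) \<le> l" unfolding l_def by (metis xsmax)
    then show ?thesis using r by (simp add: field_simps)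
  qed
  have hl: "inn A (app xs) xs = of_real l"
    using app_psd_real[of xs] by (simp add: l_def q_def)
  define y where "y a = (if a \<in> A then app xs a - of_real l * xs a else 0)" for a
  have yeq: "inn A y v = inn A (\<lambda>a. app xs a - of_real l * xs a) v" for v
    by (rule inn_cong) (auto simp: y_def)
  have yeq2: "inn A v y = inn A v (\<lambda>a. app xs a - of_real l * xs a)" for v
    by (rule inn_cong) (auto simp: y_def)
  have yw: "inn A y (w i) = 0" if i: "i < m" for i
  proof -
    have "inn A xs (app (w i)) = inn A xs (\<lambda>a. of_real (\<mu> i) * w i a)"
      by (rule inn_cong) (use eig i in auto)
    also have "\<dots> = 0" using xsw i by (simp add: inn_scale_right)
    finally have "inn A xs (app (w i)) = 0" .
    then show ?thesis
      unfolding yeq inn_diff_left inn_scale_left using xsw i by (simp add: app_herm)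
  qed
  have yxs: "inn A y xs = 0"
    unfolding yeq inn_diff_left inn_scale_left hl xs1 by simp
  have xsy: "inn A xs y = 0"
    using yxs inn_cnj[of A y xs] by simp
  define N where "N = inn A y y"
  have appxs: "app xs a = y a + of_real l * xs a" if "a \<in> A" for a
    using that by (simp add: y_def)
  have c1: "inn A (app xs) y = N"
  proof -
    have "inn A (app xs) y = inn A (\<lambda>a. y a + of_real l * xs a) y"
      by (rule inn_cong) (auto simp: appxs)
    then show ?thesis by (simp add: inn_add_left inn_scale_left xsy N_def)
  qed
  have c2: "inn A (app y) xs = N"
  proof -
    have "inn A (app y) xs = inn A y (app xs)" by (rule app_herm)
    also have "\<dots> = inn A y (\<lambda>a. y a + of_real l * xs a)"
      by (rule inn_cong) (auto simp: appxs)
    finally show ?thesis by (simp add: inn_add_right inn_scale_right yxs N_def)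
  qed
  have ineq: "2 * t * Re N \<le> t^2 * (l * Re N - q y)" if t: "t > 0" for t
  proof -
    define z where "z a = xs a + of_real t * y a" for a
    have zw: "\<forall>i<m. inn A z (w i) = 0"
      using xsw yw by (simp add: z_def[abs_def] inn_add_left inn_scale_left)
    have appz: "app z = (\<lambda>a. app xs a + of_real t * app y a)"
      by (simp add: fun_eq_iff z_def[abs_def] app_add app_scale)
    have zz: "inn A z z = 1 + of_real (t^2) * N"
      by (simp add: z_def[abs_def] inn_add_left inn_add_right inn_scale_left inn_scale_right
          xs1 xsy yxs N_def power2_eq_square)
    have qz: "inn A (app z) z = of_real l + of_real (2*t) * N + of_real (t^2) * inn A (app y) y"
      unfolding appz by (simp add: z_def[abs_def] inn_add_left inn_add_right inn_scale_left inn_scale_right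
          hl c1 c2 power2_eq_square algebra_simps)
    from bound[OF zw] have "Re (inn A (app z) z) \<le> l * Re (inn A z z)" by (simp add: q_def)
    hence "l + 2 * t * Re N + t^2 * q y \<le> l * (1 + t^2 * Re N)"
      unfolding qz zz by (simp add: q_def)
    then show ?thesis by (simp add: algebra_simps)
  qed
  have RN: "Re N = 0"
  proof (rule ccontr)
    assume "Re N \<noteq> 0"
    hence n: "Re N > 0" using inn_self_nonneg[of A y] by (simp add: N_def)
    define D where "D = l * Re N - q y"
    define t where "t = Re N / (\<bar>D\<bar> + 1)"
    have t: "t > 0" using n by (simp add: t_def add_pos_nonneg)
    from ineq[OF t] have "2 * t * Re N \<le> t^2 * D" by (simp add: D_def)
    hence "2 * Re N \<le> t * D" using t by (simp add: power2_eq_square mult.assoc)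
    also have "t * D \<le> t * \<bar>D\<bar>" using t by (simp add: mult_left_mono)
    also have "t * \<bar>D\<bar> < Re N"
    proof -
      have "t * \<bar>D\<bar> = Re N * (\<bar>D\<bar> / (\<bar>D\<bar> + 1))" by (simp add: t_def)
      also have "\<dots> < Re N * 1"
        using n by (intro mult_strict_left_mono) auto
      finally show ?thesis by simp
    qed
    finally show False using n by simp
  qed
  have y0: "y a = 0" if "a \<in> A" for a
    using inn_self_zero[OF finA _ that, of y] RN by (simp add: N_def)
  have "\<forall>a\<in>A. app xs a = of_real l * xs a"
    using y0 by (simp add: y_def)
  then show ?thesis using lpos xs1 xsw by blast
qed

end


context psdmat begin

theorem svd_exists:
  "\<exists>(S::nat) lam u v. (\<forall>\<alpha><S. lam \<alpha> > (0::real)) \<and>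
     (\<forall>\<alpha><S. \<forall>\<beta><S. (\<Sum>a\<in>A. u \<alpha> a * cnj (u \<beta> a)) = (if \<alpha> = \<beta> then 1 else 0)) \<and>
     (\<forall>\<alpha><S. \<forall>\<beta><S. (\<Sum>c\<in>C. v \<alpha> c * cnj (v \<beta> c)) = (if \<alpha> = \<beta> then 1 else 0)) \<and>
     (\<forall>a\<in>A. \<forall>c\<in>C. M a c = (\<Sum>\<alpha><S. complex_of_real (lam \<alpha>) * u \<alpha> a * v \<alpha> c))"
proof -
  define P where "P m \<longleftrightarrow> (\<exists>w \<mu>. orthonormal A w m \<and> (\<forall>i<m. \<mu> i > (0::real)) \<and>
      (\<forall>i<m. \<forall>a\<in>A. app (w i) a = of_real (\<mu> i) * w i a))" for m
  have P0: "P 0" by (auto simp: P_def orthonormal_def)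
  have bnd: "m \<le> card A" if "P m" for m
    using that orthonormal_card[OF finA] by (auto simp: P_def)
  have "{m. P m} \<subseteq> {..card A}" using bnd by auto
  then have finP: "finite {m. P m}" by (rule finite_subset) simp
  define m0 where "m0 = Max {m. P m}"
  have Pm0: "P m0" unfolding m0_def using Max_in[OF finP] P0 by auto
  have maxm: "m \<le> m0" if "P m" for m unfolding m0_def using Max_ge[OF finP] that by auto
  from Pm0 obtain w \<mu> where on: "orthonormal A w m0" and mupos: "\<forall>i<m0. \<mu> i > 0"
    and eig: "\<forall>i<m0. \<forall>a\<in>A. app (w i) a = of_real (\<mu> i) * w i a" by (auto simp: P_def)
  have neg: "Re (inn A (app x) x) \<le> 0" if xw: "\<forall>i<m0. inn A x (w i) = 0" for x
  proof (rule ccontr)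
    assume "\<not> ?thesis"
    hence "Re (inn A (app x) x) > 0" by simp
    from extend[OF on eig xw this] obtain x' l where l: "l > 0" and x'1: "inn A x' x' = 1"
      and x'w: "\<forall>i<m0. inn A x' (w i) = 0" and x'e: "\<forall>a\<in>A. app x' a = of_real l * x' a" by blast
    define w' where "w' = w(m0 := x')"
    define \<mu>' where "\<mu>' = \<mu>(m0 := l)"
    have "orthonormal A w' (Suc m0)"
      unfolding orthonormal_def
    proof (intro allI impI)
      fix i j assume i: "i < Suc m0" and j: "j < Suc m0"
      show "inn A (w' i) (w' j) = (if i = j then 1 else 0)"
      proof (cases "i = m0"; cases "j = m0")
        assume "i = m0" "j = m0" then show ?thesis using x'1 by (simp add: w'_def)
      next
        assume "i = m0" "j \<noteq> m0" then show ?thesis using x'w j by (simp add: w'_def)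
      next
        assume "i \<noteq> m0" "j = m0"
        then show ?thesis using x'w i inn_cnj[of A x' "w i"] by (simp add: w'_def)
      next
        assume "i \<noteq> m0" "j \<noteq> m0" then show ?thesis using on i j by (simp add: w'_def orthonormal_def)
      qed
    qed
    moreover have "\<forall>i<Suc m0. \<mu>' i > 0" using mupos l by (simp add: \<mu>'_def less_Suc_eq)
    moreover have "\<forall>i<Suc m0. \<forall>a\<in>A. app (w' i) a = of_real (\<mu>' i) * w' i a"
      using eig x'e by (simp add: w'_def \<mu>'_def less_Suc_eq)
    ultimately have "P (Suc m0)" unfolding P_def by blast
    with maxm show False by fastforce
  qed
  define co where "co c i = inn A (\<lambda>b. M b c) (w i)" for c i
  have expand: "M a c = (\<Sum>i<m0. co c i * w i a)" if a: "a \<in> A" and c: "c \<in> C" for a c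
  proof -
    define p where "p a = M a c - (\<Sum>i<m0. co c i * w i a)" for a
    have pe: "p = (\<lambda>a. M a c - (\<Sum>i<m0. co c i * w i a))" by (simp add: fun_eq_iff p_def)
    have pw: "inn A p (w j) = 0" if "j < m0" for j
      unfolding pe inn_diff_left inn_expand_left[OF on that] by (simp add: co_def)
    have "Re (inn A (app p) p) \<le> 0" using neg pw by blast
    hence "(\<Sum>c'\<in>C. (cmod (inn A (\<lambda>b. M b c') p))^2) = 0"
      using app_psd_nonneg[of p] by (simp add: app_psd_Re)
    hence "(cmod (inn A (\<lambda>b. M b c) p))^2 = 0"
      using c finC by (simp add: sum_nonneg_eq_0_iff)
    hence g: "inn A (\<lambda>b. M b c) p = 0" by simp
    have "inn A p p = inn A p (\<lambda>a. M a c - (\<Sum>i<m0. co c i * w i a))"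
      by (simp only: pe[symmetric])
    also have "\<dots> = inn A p (\<lambda>b. M b c) - (\<Sum>i<m0. cnj (co c i) * inn A p (w i))"
      by (simp add: inn_diff_right inn_sum_right inn_scale_right)
    also have "\<dots> = 0" using g inn_cnj[of A "\<lambda>b. M b c" p] pw by simp
    finally have "Re (inn A p p) = 0" by simp
    hence "p a = 0" by (rule inn_self_zero[OF finA _ a])
    then show ?thesis by (simp add: p_def)
  qed
  define lam where "lam i = sqrt (\<mu> i)" for i
  define v where "v i c = co c i / of_real (lam i)" for i c
  have lampos: "\<forall>i<m0. lam i > 0" using mupos by (simp add: lam_def)
  have u_on: "\<forall>\<alpha><m0. \<forall>\<beta><m0. (\<Sum>a\<in>A. w \<alpha> a * cnj (w \<beta> a)) = (if \<alpha> = \<beta> then 1 else 0)"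
    using on by (simp add: orthonormal_def inn_def)
  have v_on: "\<forall>\<alpha><m0. \<forall>\<beta><m0. (\<Sum>c\<in>C. v \<alpha> c * cnj (v \<beta> c)) = (if \<alpha> = \<beta> then 1 else 0)"
  proof (intro allI impI)
    fix i j assume i: "i < m0" and j: "j < m0"
    have "(\<Sum>c\<in>C. co c i * cnj (co c j)) = inn A (app (w j)) (w i)"
      unfolding co_def by (rule col_inn)
    also have "\<dots> = inn A (\<lambda>a. of_real (\<mu> j) * w j a) (w i)"
      by (rule inn_cong) (use eig j in auto)
    also have "\<dots> = of_real (\<mu> j) * (if j = i then 1 else 0)"
      using on i j by (simp add: inn_scale_left orthonormal_def)
    finally have e: "(\<Sum>c\<in>C. co c i * cnj (co c j)) = of_real (\<mu> j) * (if j = i then 1 else 0)" .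
    have "(\<Sum>c\<in>C. v i c * cnj (v j c)) = (\<Sum>c\<in>C. co c i * cnj (co c j)) / (of_real (lam i) * of_real (lam j))"
      by (simp add: v_def sum_divide_distrib)
    also have "\<dots> = (if i = j then 1 else 0)"
      unfolding e using lampos i j mupos
      by (auto simp: lam_def of_real_mult[symmetric] simp del: of_real_mult)
    finally show "(\<Sum>c\<in>C. v i c * cnj (v j c)) = (if i = j then 1 else 0)" .
  qed
  have decomp: "\<forall>a\<in>A. \<forall>c\<in>C. M a c = (\<Sum>\<alpha><m0. complex_of_real (lam \<alpha>) * w \<alpha> a * v \<alpha> c)"
  proof (intro ballI)
    fix a c assume a: "a \<in> A" and c: "c \<in> C"
    have "(\<Sum>\<alpha><m0. complex_of_real (lam \<alpha>) * w \<alpha> a * v \<alpha> c) = (\<Sum>\<alpha><m0. co c \<alpha> * w \<alpha> a)"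
    proof (intro sum.cong refl)
      fix \<alpha> assume "\<alpha> \<in> {..<m0}"
      then have "lam \<alpha> \<noteq> 0" using lampos by auto
      then show "complex_of_real (lam \<alpha>) * w \<alpha> a * v \<alpha> c = co c \<alpha> * w \<alpha> a" by (simp add: v_def)
    qed
    then show "M a c = (\<Sum>\<alpha><m0. complex_of_real (lam \<alpha>) * w \<alpha> a * v \<alpha> c)"
      using expand[OF a c] by simp
  qed
  show ?thesis by (rule exI[of _ m0], rule exI[of _ lam], rule exI[of _ w], rule exI[of _ v]) (use lampos u_on v_on decomp in blast)
qed

end


lemma apply_decomp:
  assumes finA: "finite A" and on: "orthonormal A u S" and x: "x \<in> A"
    and R: "\<forall>x\<in>A. \<forall>y\<in>A. R x y = (\<Sum>\<alpha><S. complex_of_real ((lam \<alpha>)^2) * u \<alpha> x * cnj (u \<alpha> y))"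
  shows "(\<Sum>y\<in>A. R x y * z y) = (\<Sum>\<alpha><S. complex_of_real ((lam \<alpha>)^2) * inn A z (u \<alpha>) * u \<alpha> x)"
proof -
  have "(\<Sum>y\<in>A. R x y * z y) = (\<Sum>y\<in>A. \<Sum>\<alpha><S. complex_of_real ((lam \<alpha>)^2) * u \<alpha> x * cnj (u \<alpha> y) * z y)"
    using R x by (simp add: sum_distrib_right)
  also have "\<dots> = (\<Sum>\<alpha><S. \<Sum>y\<in>A. complex_of_real ((lam \<alpha>)^2) * u \<alpha> x * cnj (u \<alpha> y) * z y)"
    by (rule sum.swap)
  also have "\<dots> = (\<Sum>\<alpha><S. complex_of_real ((lam \<alpha>)^2) * inn A z (u \<alpha>) * u \<alpha> x)"
    by (simp add: inn_def sum_distrib_left mult_ac)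
  finally show ?thesis .
qed

lemma eig_expand:
  assumes finA: "finite A" and on: "orthonormal A u S" and on': "orthonormal A u' S'"
    and lp: "\<forall>\<alpha><S. lam \<alpha> > (0::real)" and lp': "\<forall>\<beta><S'. lam' \<beta> > (0::real)"
    and R: "\<forall>x\<in>A. \<forall>y\<in>A. R x y = (\<Sum>\<alpha><S. complex_of_real ((lam \<alpha>)^2) * u \<alpha> x * cnj (u \<alpha> y))"
    and R': "\<forall>x\<in>A. \<forall>y\<in>A. R x y = (\<Sum>\<beta><S'. complex_of_real ((lam' \<beta>)^2) * u' \<beta> x * cnj (u' \<beta> y))"
  shows "\<forall>\<beta><S'. \<forall>x\<in>A. u' \<beta> x = (\<Sum>\<alpha><S. inn A (u' \<beta>) (u \<alpha>) * u \<alpha> x)"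
    and "\<forall>\<alpha><S. \<forall>\<beta><S'. inn A (u' \<beta>) (u \<alpha>) \<noteq> 0 \<longrightarrow> lam \<alpha> = lam' \<beta>"
proof -
  define c where "c \<alpha> \<beta> = inn A (u' \<beta>) (u \<alpha>)" for \<alpha> \<beta>
  have E1: "complex_of_real ((lam' \<beta>)^2) * u' \<beta> x = (\<Sum>\<alpha><S. complex_of_real ((lam \<alpha>)^2) * c \<alpha> \<beta> * u \<alpha> x)"
    if b: "\<beta> < S'" and x: "x \<in> A" for \<beta> x
  proof -
    have "(\<Sum>y\<in>A. R x y * u' \<beta> y) = (\<Sum>\<gamma><S'. complex_of_real ((lam' \<gamma>)^2) * inn A (u' \<beta>) (u' \<gamma>) * u' \<gamma> x)"
      by (rule apply_decomp[OF finA on' x R'])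
    also have "\<dots> = (\<Sum>\<gamma><S'. if \<gamma> = \<beta> then complex_of_real ((lam' \<gamma>)^2) * u' \<gamma> x else 0)"
      using on' b by (intro sum.cong refl) (auto simp: orthonormal_def)
    also have "\<dots> = complex_of_real ((lam' \<beta>)^2) * u' \<beta> x" using b by simp
    finally have 1: "(\<Sum>y\<in>A. R x y * u' \<beta> y) = complex_of_real ((lam' \<beta>)^2) * u' \<beta> x" .
    have 2: "(\<Sum>y\<in>A. R x y * u' \<beta> y) = (\<Sum>\<alpha><S. complex_of_real ((lam \<alpha>)^2) * c \<alpha> \<beta> * u \<alpha> x)"
      unfolding c_def by (rule apply_decomp[OF finA on x R])
    from 1 2 show ?thesis by simp
  qed
  have E2: "complex_of_real ((lam' \<beta>)^2) * c \<gamma> \<beta> = complex_of_real ((lam \<gamma>)^2) * c \<gamma> \<beta>"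
    if b: "\<beta> < S'" and g: "\<gamma> < S" for \<beta> \<gamma>
  proof -
    have "complex_of_real ((lam' \<beta>)^2) * c \<gamma> \<beta> = inn A (\<lambda>x. complex_of_real ((lam' \<beta>)^2) * u' \<beta> x) (u \<gamma>)"
      by (simp add: inn_scale_left c_def)
    also have "\<dots> = inn A (\<lambda>x. \<Sum>\<alpha><S. complex_of_real ((lam \<alpha>)^2) * c \<alpha> \<beta> * u \<alpha> x) (u \<gamma>)"
      by (rule inn_cong) (erule E1[OF b], rule refl)
    also have "\<dots> = (\<Sum>\<alpha><S. complex_of_real ((lam \<alpha>)^2) * c \<alpha> \<beta> * inn A (u \<alpha>) (u \<gamma>))"
      by (simp add: inn_sum_left inn_scale_left mult.assoc)
    also have "\<dots> = (\<Sum>\<alpha><S. if \<alpha> = \<gamma> then complex_of_real ((lam \<alpha>)^2) * c \<alpha> \<beta> else 0)"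
      using on g by (intro sum.cong refl) (auto simp: orthonormal_def)
    also have "\<dots> = complex_of_real ((lam \<gamma>)^2) * c \<gamma> \<beta>" using g by simp
    finally show ?thesis .
  qed
  have lameq: "lam \<gamma> = lam' \<beta>" if b: "\<beta> < S'" and g: "\<gamma> < S" and nz: "c \<gamma> \<beta> \<noteq> 0" for \<beta> \<gamma>
  proof -
    from E2[OF b g] nz have "complex_of_real ((lam' \<beta>)^2) = complex_of_real ((lam \<gamma>)^2)" by simp
    hence "(lam' \<beta>)^2 = (lam \<gamma>)^2" using of_real_eq_iff by blast
    then show ?thesis using lp g lp' b by (simp add: power2_eq_iff_nonneg less_imp_le)
  qed
  show "\<forall>\<alpha><S. \<forall>\<beta><S'. inn A (u' \<beta>) (u \<alpha>) \<noteq> 0 \<longrightarrow> lam \<alpha> = lam' \<beta>"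
    using lameq unfolding c_def by blast
  show "\<forall>\<beta><S'. \<forall>x\<in>A. u' \<beta> x = (\<Sum>\<alpha><S. inn A (u' \<beta>) (u \<alpha>) * u \<alpha> x)"
  proof (intro allI impI ballI)
    fix \<beta> x assume b: "\<beta> < S'" and x: "x \<in> A"
    have "complex_of_real ((lam' \<beta>)^2) * u' \<beta> x = (\<Sum>\<alpha><S. complex_of_real ((lam' \<beta>)^2) * (c \<alpha> \<beta> * u \<alpha> x))"
      unfolding E1[OF b x]
    proof (intro sum.cong refl)
      fix \<alpha> assume "\<alpha> \<in> {..<S}"
      then have e: "complex_of_real ((lam' \<beta>)^2) * c \<alpha> \<beta> = complex_of_real ((lam \<alpha>)^2) * c \<alpha> \<beta>"
        using E2[OF b] by blast
      show "complex_of_real ((lam \<alpha>)^2) * c \<alpha> \<beta> * u \<alpha> x = complex_of_real ((lam' \<beta>)^2) * (c \<alpha> \<beta> * u \<alpha> x)"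
        by (metis e mult.assoc)
    qed
    also have "\<dots> = complex_of_real ((lam' \<beta>)^2) * (\<Sum>\<alpha><S. c \<alpha> \<beta> * u \<alpha> x)"
      by (simp add: sum_distrib_left)
    finally have "complex_of_real ((lam' \<beta>)^2) * u' \<beta> x = complex_of_real ((lam' \<beta>)^2) * (\<Sum>\<alpha><S. c \<alpha> \<beta> * u \<alpha> x)" .
    moreover have "complex_of_real ((lam' \<beta>)^2) \<noteq> 0" using lp' b by (metis less_irrefl of_real_eq_0_iff power_eq_0_iff)
    ultimately show "u' \<beta> x = (\<Sum>\<alpha><S. inn A (u' \<beta>) (u \<alpha>) * u \<alpha> x)" by (simp add: c_def)
  qed
qed

lemma decomp_unique:
  assumes finA: "finite A" and on: "orthonormal A u S" and on': "orthonormal A u' S'"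
    and lp: "\<forall>\<alpha><S. lam \<alpha> > (0::real)" and lp': "\<forall>\<beta><S'. lam' \<beta> > (0::real)"
    and R: "\<forall>x\<in>A. \<forall>y\<in>A. R x y = (\<Sum>\<alpha><S. complex_of_real ((lam \<alpha>)^2) * u \<alpha> x * cnj (u \<alpha> y))"
    and R': "\<forall>x\<in>A. \<forall>y\<in>A. R x y = (\<Sum>\<beta><S'. complex_of_real ((lam' \<beta>)^2) * u' \<beta> x * cnj (u' \<beta> y))"
    and x: "x \<in> A" and y: "y \<in> A"
  shows "(\<Sum>\<alpha><S. g (lam \<alpha>) * u \<alpha> x * cnj (u \<alpha> y)) = (\<Sum>\<beta><S'. g (lam' \<beta>) * u' \<beta> x * cnj (u' \<beta> y))"
proof -
  note ex1 = eig_expand[OF finA on on' lp lp' R R']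
  note ex2 = eig_expand[OF finA on' on lp' lp R' R]
  define c where "c \<alpha> \<beta> = inn A (u' \<beta>) (u \<alpha>)" for \<alpha> \<beta>
  have "(\<Sum>\<beta><S'. g (lam' \<beta>) * u' \<beta> x * cnj (u' \<beta> y))
      = (\<Sum>\<beta><S'. \<Sum>\<alpha><S. g (lam' \<beta>) * (c \<alpha> \<beta> * u \<alpha> x) * cnj (u' \<beta> y))"
  proof (intro sum.cong refl)
    fix \<beta> assume "\<beta> \<in> {..<S'}"
    then have "u' \<beta> x = (\<Sum>\<alpha><S. c \<alpha> \<beta> * u \<alpha> x)" using ex1(1) x by (auto simp: c_def)
    then show "g (lam' \<beta>) * u' \<beta> x * cnj (u' \<beta> y) = (\<Sum>\<alpha><S. g (lam' \<beta>) * (c \<alpha> \<beta> * u \<alpha> x) * cnj (u' \<beta> y))"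
      by (simp add: sum_distrib_left sum_distrib_right)
  qed
  also have "\<dots> = (\<Sum>\<alpha><S. \<Sum>\<beta><S'. g (lam' \<beta>) * (c \<alpha> \<beta> * u \<alpha> x) * cnj (u' \<beta> y))"
    by (rule sum.swap)
  also have "\<dots> = (\<Sum>\<alpha><S. \<Sum>\<beta><S'. g (lam \<alpha>) * u \<alpha> x * (c \<alpha> \<beta> * cnj (u' \<beta> y)))"
  proof (intro sum.cong refl)
    fix \<alpha> \<beta> assume a: "\<alpha> \<in> {..<S}" and b: "\<beta> \<in> {..<S'}"
    show "g (lam' \<beta>) * (c \<alpha> \<beta> * u \<alpha> x) * cnj (u' \<beta> y) = g (lam \<alpha>) * u \<alpha> x * (c \<alpha> \<beta> * cnj (u' \<beta> y))"
    proof (cases "c \<alpha> \<beta> = 0")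
      case False
      then have "lam \<alpha> = lam' \<beta>" using ex1(2) a b by (auto simp: c_def)
      then show ?thesis by (simp add: mult_ac)
    qed simp
  qed
  also have "\<dots> = (\<Sum>\<alpha><S. g (lam \<alpha>) * u \<alpha> x * cnj (\<Sum>\<beta><S'. inn A (u \<alpha>) (u' \<beta>) * u' \<beta> y))"
  proof (intro sum.cong refl)
    fix \<alpha> assume "\<alpha> \<in> {..<S}"
    have "c \<alpha> \<beta> = cnj (inn A (u \<alpha>) (u' \<beta>))" for \<beta> by (simp add: c_def inn_cnj)
    then show "(\<Sum>\<beta><S'. g (lam \<alpha>) * u \<alpha> x * (c \<alpha> \<beta> * cnj (u' \<beta> y))) =
        g (lam \<alpha>) * u \<alpha> x * cnj (\<Sum>\<beta><S'. inn A (u \<alpha>) (u' \<beta>) * u' \<beta> y)"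
      by (simp add: sum_distrib_left)
  qed
  also have "\<dots> = (\<Sum>\<alpha><S. g (lam \<alpha>) * u \<alpha> x * cnj (u \<alpha> y))"
    using ex2(1) y by (intro sum.cong refl) auto
  finally show ?thesis by simp
qed



lemma finite_idx: "finite I \<Longrightarrow> finite (idx dims I)"
proof -
  assume fI: "finite I"
  have "idx dims I \<subseteq> (\<lambda>f i. if i \<in> I then f i else 0) ` (PiE I (\<lambda>i. {..<dims i}))"
  proof
    fix a assume a: "a \<in> idx dims I"
    have "a = (\<lambda>i. if i \<in> I then restrict a I i else 0)" using a by (auto simp: idx_def fun_eq_iff)
    moreover have "restrict a I \<in> PiE I (\<lambda>i. {..<dims i})" using a by (auto simp: idx_def)
    ultimately show "a \<in> (\<lambda>f i. if i \<in> I then f i else 0) ` (PiE I (\<lambda>i. {..<dims i}))" by blast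
  qed
  then show ?thesis by (rule finite_subset) (intro finite_imageI finite_PiE fI, simp)
qed

lemma idx_empty: "idx dims {} = {zidx}" by (auto simp: idx_def zidx_def)

lemma merge_in: "I \<subseteq> U \<Longrightarrow> a \<in> idx dims I \<Longrightarrow> c \<in> idx dims (U - I) \<Longrightarrow> Defs.merge I a c \<in> idx dims U"
  by (auto simp: idx_def Defs.merge_def)

lemma restr_in: "J \<subseteq> I \<Longrightarrow> x \<in> idx dims I \<Longrightarrow> restr J x \<in> idx dims J"
  by (auto simp: idx_def restr_def)

lemma restr_merge1: "a \<in> idx dims I \<Longrightarrow> restr I (Defs.merge I a c) = a"
  by (auto simp: idx_def restr_def Defs.merge_def fun_eq_iff)

lemma restr_merge2: "c \<in> idx dims K \<Longrightarrow> I \<inter> K = {} \<Longrightarrow> restr K (Defs.merge I a c) = c"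
  by (auto simp: idx_def restr_def Defs.merge_def fun_eq_iff)

lemma merge_restr: "x \<in> idx dims U \<Longrightarrow> I \<subseteq> U \<Longrightarrow> Defs.merge I (restr I x) (restr (U - I) x) = x"
  by (auto simp: idx_def restr_def Defs.merge_def fun_eq_iff)

lemma restr_restr: "J \<subseteq> I \<Longrightarrow> restr J (restr I x) = restr J x"
  by (auto simp: restr_def fun_eq_iff)

lemma restr_idx_id: "x \<in> idx dims I \<Longrightarrow> restr I x = x"
  by (auto simp: idx_def restr_def fun_eq_iff)

lemma sum_split:
  assumes "I \<subseteq> U"
  shows "(\<Sum>x\<in>idx dims U. f x) = (\<Sum>a\<in>idx dims I. \<Sum>c\<in>idx dims (U - I). f (Defs.merge I a c))"
proof -
  have "(\<Sum>a\<in>idx dims I. \<Sum>c\<in>idx dims (U - I). f (Defs.merge I a c)) =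
      (\<Sum>p\<in>idx dims I \<times> idx dims (U - I). f (Defs.merge I (fst p) (snd p)))"
    by (subst sum.cartesian_product) (simp add: case_prod_beta)
  also have "\<dots> = (\<Sum>x\<in>idx dims U. f x)"
    apply (rule sum.reindex_bij_witness[of _ "\<lambda>x. (restr I x, restr (U - I) x)" "\<lambda>p. Defs.merge I (fst p) (snd p)"])
    using assms by (auto simp: merge_restr restr_merge1 restr_merge2 intro: restr_in merge_in)
  finally show ?thesis by simp
qed

lemma merge_swap: "I \<subseteq> U \<Longrightarrow> a \<in> idx dims I \<Longrightarrow> c \<in> idx dims (U - I) \<Longrightarrow> Defs.merge (U - I) c a = Defs.merge I a c"
  by (auto simp: idx_def Defs.merge_def fun_eq_iff)

lemma diff_diff_U: "I \<subseteq> U \<Longrightarrow> U - (U - I) = I" by auto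


section \<open>Generic matrices on a finite set\<close>

definition mm :: "'a set \<Rightarrow> ('a \<Rightarrow> 'a \<Rightarrow> complex) \<Rightarrow> ('a \<Rightarrow> 'a \<Rightarrow> complex) \<Rightarrow> ('a \<Rightarrow> 'a \<Rightarrow> complex)" where
  "mm A X Y = (\<lambda>a b. \<Sum>c\<in>A. X a c * Y c b)"

definition dm :: "'a set \<Rightarrow> nat \<Rightarrow> (nat \<Rightarrow> complex) \<Rightarrow> (nat \<Rightarrow> 'a \<Rightarrow> complex) \<Rightarrow> ('a \<Rightarrow> 'a \<Rightarrow> complex)" where
  "dm A S f u = (\<lambda>a b. if a \<in> A \<and> b \<in> A then (\<Sum>\<alpha><S. f \<alpha> * u \<alpha> a * cnj (u \<alpha> b)) else 0)"

definition adjm :: "('a \<Rightarrow> 'a \<Rightarrow> complex) \<Rightarrow> ('a \<Rightarrow> 'a \<Rightarrow> complex)" where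
  "adjm X = (\<lambda>a b. cnj (X b a))"

definition supp :: "'a set \<Rightarrow> ('a \<Rightarrow> 'a \<Rightarrow> complex) \<Rightarrow> bool" where
  "supp A X \<longleftrightarrow> (\<forall>a b. (a \<notin> A \<or> b \<notin> A) \<longrightarrow> X a b = 0)"

lemma mmul_mm: "mmul dims I = mm (idx dims I)"
  by (simp add: fun_eq_iff mmul_def mm_def)

lemma op_supported_supp: "op_supported dims I = supp (idx dims I)"
  by (simp add: fun_eq_iff op_supported_def supp_def)

lemma mm_assoc: "mm A (mm A X Y) Z = mm A X (mm A Y Z)"
proof (intro ext)
  fix a b
  have "mm A (mm A X Y) Z a b = (\<Sum>d\<in>A. \<Sum>c\<in>A. X a c * (Y c d * Z d b))"
    by (simp add: mm_def sum_distrib_right mult.assoc)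
  also have "\<dots> = (\<Sum>c\<in>A. \<Sum>d\<in>A. X a c * (Y c d * Z d b))" by (rule sum.swap)
  also have "\<dots> = mm A X (mm A Y Z) a b" by (simp add: mm_def sum_distrib_left)
  finally show "mm A (mm A X Y) Z a b = mm A X (mm A Y Z) a b" .
qed

lemma adjm_adjm [simp]: "adjm (adjm X) = X" by (simp add: adjm_def)

lemma adjm_mm: "adjm (mm A X Y) = mm A (adjm Y) (adjm X)"
  by (simp add: adjm_def mm_def fun_eq_iff mult.commute)

lemma dm_supp: "supp A (dm A S f u)" by (simp add: supp_def dm_def)

lemma adjm_dm: "adjm (dm A S f u) = dm A S (\<lambda>\<alpha>. cnj (f \<alpha>)) u"
  by (auto simp: adjm_def dm_def fun_eq_iff mult_ac)

lemma mm_dm: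
  assumes fin: "finite A" and on: "orthonormal A u S"
  shows "mm A (dm A S f u) (dm A S g u) = dm A S (\<lambda>\<alpha>. f \<alpha> * g \<alpha>) u"
proof (intro ext)
  fix a b
  show "mm A (dm A S f u) (dm A S g u) a b = dm A S (\<lambda>\<alpha>. f \<alpha> * g \<alpha>) u a b"
  proof (cases "a \<in> A \<and> b \<in> A")
    case True
    have "mm A (dm A S f u) (dm A S g u) a b =
        (\<Sum>c\<in>A. (\<Sum>\<alpha><S. f \<alpha> * u \<alpha> a * cnj (u \<alpha> c)) * (\<Sum>\<beta><S. g \<beta> * u \<beta> c * cnj (u \<beta> b)))"
      using True by (simp add: mm_def dm_def)
    also have "\<dots> = (\<Sum>c\<in>A. \<Sum>\<alpha><S. \<Sum>\<beta><S. f \<alpha> * u \<alpha> a * (g \<beta> * cnj (u \<beta> b)) * (u \<beta> c * cnj (u \<alpha> c)))"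
      by (simp add: sum_product mult_ac)
    also have "\<dots> = (\<Sum>\<alpha><S. \<Sum>c\<in>A. \<Sum>\<beta><S. f \<alpha> * u \<alpha> a * (g \<beta> * cnj (u \<beta> b)) * (u \<beta> c * cnj (u \<alpha> c)))"
      by (rule sum.swap)
    also have "\<dots> = (\<Sum>\<alpha><S. \<Sum>\<beta><S. \<Sum>c\<in>A. f \<alpha> * u \<alpha> a * (g \<beta> * cnj (u \<beta> b)) * (u \<beta> c * cnj (u \<alpha> c)))"
      by (intro sum.cong refl) (rule sum.swap)
    also have "\<dots> = (\<Sum>\<alpha><S. \<Sum>\<beta><S. f \<alpha> * u \<alpha> a * (g \<beta> * cnj (u \<beta> b)) * (\<Sum>c\<in>A. u \<beta> c * cnj (u \<alpha> c)))"
      by (simp only: sum_distrib_left)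
    also have "\<dots> = (\<Sum>\<alpha><S. \<Sum>\<beta><S. if \<beta> = \<alpha> then f \<alpha> * u \<alpha> a * (g \<beta> * cnj (u \<beta> b)) else 0)"
      using on by (intro sum.cong refl) (auto simp: orthonormal_def inn_def)
    also have "\<dots> = dm A S (\<lambda>\<alpha>. f \<alpha> * g \<alpha>) u a b"
      using True by (simp add: dm_def mult_ac)
    finally show ?thesis .
  qed (auto simp: mm_def dm_def)
qed

lemma mm_supp: "supp A X \<Longrightarrow> supp A Y \<Longrightarrow> supp A (mm A X Y)"
  by (auto simp: supp_def mm_def)

definition mapv :: "'a set \<Rightarrow> ('a \<Rightarrow> 'a \<Rightarrow> complex) \<Rightarrow> ('a \<Rightarrow> complex) \<Rightarrow> ('a \<Rightarrow> complex)" where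
  "mapv A X x = (\<lambda>a. \<Sum>b\<in>A. X a b * x b)"

lemma mapp_mapv: "mapp dims I = mapv (idx dims I)"
  by (simp add: fun_eq_iff mapp_def mapv_def)

lemma mapv_mm: "mapv A (mm A X Y) x = mapv A X (mapv A Y x)"
proof (intro ext)
  fix a
  have "mapv A (mm A X Y) x a = (\<Sum>b\<in>A. \<Sum>c\<in>A. X a c * (Y c b * x b))"
    by (simp add: mapv_def mm_def sum_distrib_right mult.assoc)
  also have "\<dots> = (\<Sum>c\<in>A. \<Sum>b\<in>A. X a c * (Y c b * x b))" by (rule sum.swap)
  also have "\<dots> = mapv A X (mapv A Y x) a" by (simp add: mapv_def sum_distrib_left)
  finally show "mapv A (mm A X Y) x a = mapv A X (mapv A Y x) a" .
qed

lemma mapv_delta: "finite A \<Longrightarrow> b \<in> A \<Longrightarrow> mapv A X (\<lambda>c. if c = b then 1 else 0) a = X a b"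
proof -
  assume "finite A" "b \<in> A"
  have "mapv A X (\<lambda>c. if c = b then 1 else 0) a = (\<Sum>c\<in>A. if c = b then X a b else 0)"
    unfolding mapv_def by (rule sum.cong) auto
  then show ?thesis using \<open>finite A\<close> \<open>b \<in> A\<close> by simp
qed

lemma mm_left_id_range:
  assumes fin: "finite A" and Qi: "mm A Q Q = Q" and sP: "supp A P"
    and rng: "range (mapv A P) \<subseteq> range (mapv A Q)"
  shows "mm A Q P = P"
proof (intro ext)
  fix a b
  show "mm A Q P a b = P a b"
  proof (cases "b \<in> A")
    case False then show ?thesis using sP by (simp add: mm_def supp_def)
  next
    case True
    define e where "e = (\<lambda>c. if c = b then (1::complex) else 0)"
    from rng obtain z where z: "mapv A P e = mapv A Q z" by blast
    have "mapv A Q (mapv A P e) = mapv A P e"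
      unfolding z mapv_mm[symmetric] Qi ..
    hence "mapv A (mm A Q P) e = mapv A P e" by (simp add: mapv_mm)
    then show ?thesis using mapv_delta[OF fin True] unfolding e_def by metis
  qed
qed

lemma proj_unique:
  assumes fin: "finite A"
    and sP: "supp A P" and iP: "mm A P P = P" and hP: "adjm P = P"
    and sQ: "supp A Q" and iQ: "mm A Q Q = Q" and hQ: "adjm Q = Q"
    and rng: "range (mapv A P) = range (mapv A Q)"
  shows "P = Q"
proof -
  have QP: "mm A Q P = P" by (rule mm_left_id_range[OF fin iQ sP]) (use rng in simp)
  have PQ: "mm A P Q = Q" by (rule mm_left_id_range[OF fin iP sQ]) (use rng in simp)
  have "P = adjm (mm A Q P)" using QP hP by simp
  also have "\<dots> = mm A P Q" by (simp add: adjm_mm hP hQ)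
  finally show ?thesis using PQ by simp
qed


lemma dm_cong: "(\<And>\<alpha>. \<alpha> < S \<Longrightarrow> f \<alpha> = g \<alpha>) \<Longrightarrow> dm A S f u = dm A S g u"
  unfolding dm_def by (intro ext if_cong refl sum.cong) auto

lemma dm_herm: "(\<And>\<alpha>. \<alpha> < S \<Longrightarrow> cnj (f \<alpha>) = f \<alpha>) \<Longrightarrow> adjm (dm A S f u) = dm A S f u"
  unfolding adjm_dm by (rule dm_cong) simp

definition bil :: "'a set \<Rightarrow> ('a \<Rightarrow> 'a \<Rightarrow> complex) \<Rightarrow> ('a \<Rightarrow> complex) \<Rightarrow> ('a \<Rightarrow> complex) \<Rightarrow> complex" where
  "bil A X p q = (\<Sum>a\<in>A. \<Sum>b\<in>A. cnj (p a) * X a b * q b)"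

lemma mat_entry_bil: "mat_entry dims I x M y = bil (idx dims I) M x y"
  by (simp add: mat_entry_def bil_def)

lemma bil_cong: "(\<And>a. a \<in> A \<Longrightarrow> p a = p' a) \<Longrightarrow> (\<And>a. a \<in> A \<Longrightarrow> q a = q' a) \<Longrightarrow> bil A X p q = bil A X p' q'"
  by (simp add: bil_def)

lemma bil_expand:
  "bil A X (\<lambda>c. \<Sum>\<alpha><S. p \<alpha> * f \<alpha> c) (\<lambda>c. \<Sum>\<beta><S'. q \<beta> * g \<beta> c) =
   (\<Sum>\<alpha><S. \<Sum>\<beta><S'. cnj (p \<alpha>) * q \<beta> * bil A X (f \<alpha>) (g \<beta>))"
proof -
  have "bil A X (\<lambda>c. \<Sum>\<alpha><S. p \<alpha> * f \<alpha> c) (\<lambda>c. \<Sum>\<beta><S'. q \<beta> * g \<beta> c) =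
      (\<Sum>a\<in>A. \<Sum>b\<in>A. \<Sum>\<alpha><S. \<Sum>\<beta><S'. cnj (p \<alpha>) * q \<beta> * (cnj (f \<alpha> a) * X a b * g \<beta> b))"
    by (simp add: bil_def sum_product sum_distrib_left sum_distrib_right mult_ac)
  also have "\<dots> = (\<Sum>a\<in>A. \<Sum>\<alpha><S. \<Sum>b\<in>A. \<Sum>\<beta><S'. cnj (p \<alpha>) * q \<beta> * (cnj (f \<alpha> a) * X a b * g \<beta> b))"
    by (intro sum.cong refl) (rule sum.swap)
  also have "\<dots> = (\<Sum>\<alpha><S. \<Sum>a\<in>A. \<Sum>b\<in>A. \<Sum>\<beta><S'. cnj (p \<alpha>) * q \<beta> * (cnj (f \<alpha> a) * X a b * g \<beta> b))"
    by (rule sum.swap)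
  also have "\<dots> = (\<Sum>\<alpha><S. \<Sum>a\<in>A. \<Sum>\<beta><S'. \<Sum>b\<in>A. cnj (p \<alpha>) * q \<beta> * (cnj (f \<alpha> a) * X a b * g \<beta> b))"
    by (intro sum.cong refl) (rule sum.swap)
  also have "\<dots> = (\<Sum>\<alpha><S. \<Sum>\<beta><S'. \<Sum>a\<in>A. \<Sum>b\<in>A. cnj (p \<alpha>) * q \<beta> * (cnj (f \<alpha> a) * X a b * g \<beta> b))"
    by (intro sum.cong refl) (rule sum.swap)
  also have "\<dots> = (\<Sum>\<alpha><S. \<Sum>\<beta><S'. cnj (p \<alpha>) * q \<beta> * bil A X (f \<alpha>) (g \<beta>))"
    by (simp add: bil_def sum_distrib_left)
  finally show ?thesis .
qed

lemma sandwich: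
  assumes hs: "adjm s = s"
    and fp: "\<And>a. a \<in> A \<Longrightarrow> (\<Sum>a'\<in>A. s a a' * p a') = p a"
    and fq: "\<And>a. a \<in> A \<Longrightarrow> (\<Sum>a'\<in>A. s a a' * q a') = q a"
  shows "bil A (mm A (mm A s X) s) p q = bil A X p q"
proof -
  have ps: "(\<Sum>a\<in>A. cnj (p a) * s a b) = cnj (p b)" if b: "b \<in> A" for b
  proof -
    have "s a b = cnj (s b a)" for a using hs unfolding adjm_def by metis
    then have "(\<Sum>a\<in>A. cnj (p a) * s a b) = cnj (\<Sum>a\<in>A. s b a * p a)" by (simp add: mult.commute)
    then show ?thesis using fp[OF b] by simp
  qed
  have "bil A (mm A (mm A s X) s) p q = (\<Sum>a\<in>A. \<Sum>a'\<in>A. cnj (p a) * (\<Sum>b'\<in>A. (\<Sum>b\<in>A. s a b * X b b') * s b' a') * q a')"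
    by (simp add: bil_def mm_def)
  also have "\<dots> = (\<Sum>a\<in>A. \<Sum>a'\<in>A. \<Sum>b'\<in>A. \<Sum>b\<in>A. cnj (p a) * s a b * X b b' * (s b' a' * q a'))"
    by (intro sum.cong refl) (simp add: sum_distrib_left sum_distrib_right mult_ac)
  also have "\<dots> = (\<Sum>a\<in>A. \<Sum>b'\<in>A. \<Sum>a'\<in>A. \<Sum>b\<in>A. cnj (p a) * s a b * X b b' * (s b' a' * q a'))"
    by (rule sum.cong[OF refl], rule sum.swap)
  also have "\<dots> = (\<Sum>a\<in>A. \<Sum>b'\<in>A. \<Sum>b\<in>A. \<Sum>a'\<in>A. cnj (p a) * s a b * X b b' * (s b' a' * q a'))"
    by (rule sum.cong[OF refl], rule sum.cong[OF refl], rule sum.swap)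
  also have "\<dots> = (\<Sum>a\<in>A. \<Sum>b'\<in>A. \<Sum>b\<in>A. cnj (p a) * s a b * X b b' * q b')"
    by (intro sum.cong refl) (simp add: sum_distrib_left[symmetric] fq)
  also have "\<dots> = (\<Sum>b'\<in>A. \<Sum>a\<in>A. \<Sum>b\<in>A. cnj (p a) * s a b * X b b' * q b')"
    by (rule sum.swap)
  also have "\<dots> = (\<Sum>b'\<in>A. \<Sum>b\<in>A. \<Sum>a\<in>A. cnj (p a) * s a b * X b b' * q b')"
    by (rule sum.cong[OF refl], rule sum.swap)
  also have "\<dots> = (\<Sum>b'\<in>A. \<Sum>b\<in>A. cnj (p b) * X b b' * q b')"
    by (intro sum.cong refl) (simp add: sum_distrib_right[symmetric] ps)
  also have "\<dots> = bil A X p q"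
    unfolding bil_def by (rule sum.swap)
  finally show ?thesis .
qed

lemma dm_fix:
  assumes fin: "finite A" and on: "orthonormal A v S" and c: "c \<in> A"
    and w: "\<And>c. c \<in> A \<Longrightarrow> w c = (\<Sum>\<alpha><S. k \<alpha> * v \<alpha> c)"
  shows "(\<Sum>c'\<in>A. dm A S (\<lambda>_. 1) v c c' * w c') = w c"
proof -
  have "(\<Sum>c'\<in>A. dm A S (\<lambda>_. 1) v c c' * w c') = (\<Sum>c'\<in>A. (\<Sum>\<alpha><S. v \<alpha> c * cnj (v \<alpha> c')) * (\<Sum>\<beta><S. k \<beta> * v \<beta> c'))"
    using c by (intro sum.cong refl) (simp add: dm_def w)
  also have "\<dots> = (\<Sum>c'\<in>A. \<Sum>\<alpha><S. \<Sum>\<beta><S. (v \<alpha> c * cnj (v \<alpha> c')) * (k \<beta> * v \<beta> c'))"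
    by (simp only: sum_product)
  also have "\<dots> = (\<Sum>\<alpha><S. \<Sum>c'\<in>A. \<Sum>\<beta><S. (v \<alpha> c * cnj (v \<alpha> c')) * (k \<beta> * v \<beta> c'))"
    by (rule sum.swap)
  also have "\<dots> = (\<Sum>\<alpha><S. \<Sum>\<beta><S. \<Sum>c'\<in>A. (v \<alpha> c * cnj (v \<alpha> c')) * (k \<beta> * v \<beta> c'))"
    by (intro sum.cong refl) (rule sum.swap)
  also have "\<dots> = (\<Sum>\<alpha><S. \<Sum>\<beta><S. v \<alpha> c * k \<beta> * (\<Sum>c'\<in>A. v \<beta> c' * cnj (v \<alpha> c')))"
    by (intro sum.cong refl) (simp add: sum_distrib_left mult_ac)
  also have "\<dots> = (\<Sum>\<alpha><S. \<Sum>\<beta><S. if \<beta> = \<alpha> then v \<alpha> c * k \<beta> else 0)"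
    using on by (intro sum.cong refl) (auto simp: orthonormal_def inn_def)
  also have "\<dots> = w c" using c by (simp add: w mult_ac)
  finally show ?thesis .
qed

lemma ortho_pick:
  assumes on: "orthonormal A v S" and b: "\<beta> < S"
  shows "(\<Sum>c\<in>A. cnj (v \<beta> c) * (\<Sum>\<alpha><S. k \<alpha> * v \<alpha> c)) = k \<beta>"
proof -
  have "(\<Sum>c\<in>A. cnj (v \<beta> c) * (\<Sum>\<alpha><S. k \<alpha> * v \<alpha> c)) = (\<Sum>c\<in>A. \<Sum>\<alpha><S. k \<alpha> * (v \<alpha> c * cnj (v \<beta> c)))"
    by (intro sum.cong refl) (simp add: sum_distrib_left mult_ac)
  also have "\<dots> = (\<Sum>\<alpha><S. \<Sum>c\<in>A. k \<alpha> * (v \<alpha> c * cnj (v \<beta> c)))"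
    by (rule sum.swap)
  also have "\<dots> = (\<Sum>\<alpha><S. k \<alpha> * (\<Sum>c\<in>A. v \<alpha> c * cnj (v \<beta> c)))"
    by (simp only: sum_distrib_left)
  also have "\<dots> = (\<Sum>\<alpha><S. if \<alpha> = \<beta> then k \<alpha> else 0)"
    using on b by (intro sum.cong refl) (auto simp: orthonormal_def inn_def)
  finally show ?thesis using b by simp
qed

lemma ortho_inner:
  assumes on: "orthonormal A v S"
  shows "(\<Sum>c\<in>A. (\<Sum>\<alpha><S. p \<alpha> * v \<alpha> c) * cnj (\<Sum>\<beta><S. q \<beta> * v \<beta> c)) = (\<Sum>\<alpha><S. p \<alpha> * cnj (q \<alpha>))"
proof -
  have "(\<Sum>c\<in>A. (\<Sum>\<alpha><S. p \<alpha> * v \<alpha> c) * cnj (\<Sum>\<beta><S. q \<beta> * v \<beta> c)) =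
      inn A (\<lambda>c. \<Sum>\<alpha><S. p \<alpha> * v \<alpha> c) (\<lambda>c. \<Sum>\<beta><S. q \<beta> * v \<beta> c)"
    by (simp add: inn_def)
  also have "\<dots> = (\<Sum>\<alpha><S. \<Sum>\<beta><S. p \<alpha> * cnj (q \<beta>) * inn A (v \<alpha>) (v \<beta>))"
    by (simp add: inn_sum_left inn_sum_right inn_scale_left inn_scale_right sum_distrib_left mult_ac)
  also have "\<dots> = (\<Sum>\<alpha><S. \<Sum>\<beta><S. if \<alpha> = \<beta> then p \<alpha> * cnj (q \<beta>) else 0)"
    using on by (intro sum.cong refl) (auto simp: orthonormal_def)
  finally show ?thesis by simp
qed

lemma bil_adjm: "bil A (adjm Y) p q = cnj (bil A Y q p)"
proof -
  have "bil A (adjm Y) p q = (\<Sum>a\<in>A. \<Sum>b\<in>A. cnj (p a) * cnj (Y b a) * q b)" by (simp add: bil_def adjm_def)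
  also have "\<dots> = (\<Sum>b\<in>A. \<Sum>a\<in>A. cnj (p a) * cnj (Y b a) * q b)" by (rule sum.swap)
  also have "\<dots> = cnj (bil A Y q p)" by (simp add: bil_def mult_ac)
  finally show ?thesis .
qed

lemma sum4_swap: "(\<Sum>x\<in>A. \<Sum>y\<in>A. \<Sum>z\<in>B. \<Sum>w\<in>B. f x y z w) = (\<Sum>z\<in>B. \<Sum>w\<in>B. \<Sum>x\<in>A. \<Sum>y\<in>A. f x y z w)"
proof -
  have "(\<Sum>x\<in>A. \<Sum>y\<in>A. \<Sum>z\<in>B. \<Sum>w\<in>B. f x y z w) = (\<Sum>x\<in>A. \<Sum>z\<in>B. \<Sum>y\<in>A. \<Sum>w\<in>B. f x y z w)"
    by (rule sum.cong[OF refl], rule sum.swap)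
  also have "\<dots> = (\<Sum>z\<in>B. \<Sum>x\<in>A. \<Sum>y\<in>A. \<Sum>w\<in>B. f x y z w)" by (rule sum.swap)
  also have "\<dots> = (\<Sum>z\<in>B. \<Sum>x\<in>A. \<Sum>w\<in>B. \<Sum>y\<in>A. f x y z w)"
    by (rule sum.cong[OF refl], rule sum.cong[OF refl], rule sum.swap)
  also have "\<dots> = (\<Sum>z\<in>B. \<Sum>w\<in>B. \<Sum>x\<in>A. \<Sum>y\<in>A. f x y z w)"
    by (rule sum.cong[OF refl], rule sum.swap)
  finally show ?thesis .
qed

locale st =
  fixes n :: nat and dims :: "nat \<Rightarrow> nat" and psi :: "mindex \<Rightarrow> complex"
  assumes unit: "unit_state n dims psi"
begin

abbreviation U where "U \<equiv> {0..<n}"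

lemma finite_Ix: "I \<subseteq> U \<Longrightarrow> finite (idx dims I)"
  by (rule finite_idx) (auto intro: finite_subset)

lemma finite_IxU: "finite (idx dims (U - I))"
  by (rule finite_idx) auto

lemma schmidt_exists: "I \<subseteq> U \<Longrightarrow> \<exists>S lam u v. schmidt n dims psi I S lam u v"
proof -
  assume IU: "I \<subseteq> U"
  interpret psdmat "idx dims I" "idx dims (U - I)" "\<lambda>a c. psi (Defs.merge I a c)"
    by unfold_locales (use IU finite_Ix finite_IxU in auto)
  show ?thesis unfolding schmidt_def by (rule svd_exists)
qed

definition "sS I = fst (schmidt_choice n dims psi I)"
definition "slam I = fst (snd (schmidt_choice n dims psi I))"
definition "su I = fst (snd (snd (schmidt_choice n dims psi I)))"
definition "sv I = snd (snd (snd (schmidt_choice n dims psi I)))"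

lemma choice_eq: "schmidt_choice n dims psi I = (sS I, slam I, su I, sv I)"
  by (simp add: sS_def slam_def su_def sv_def)

lemma schm: "I \<subseteq> U \<Longrightarrow> schmidt n dims psi I (sS I) (slam I) (su I) (sv I)"
proof -
  assume IU: "I \<subseteq> U"
  from schmidt_exists[OF IU] obtain S lam u v where "schmidt n dims psi I S lam u v" by blast
  hence ex: "\<exists>p. (\<lambda>(S, lam, u, v). schmidt n dims psi I S lam u v) p"
    by (intro exI[of _ "(S, lam, u, v)"]) simp
  have "(\<lambda>(S, lam, u, v). schmidt n dims psi I S lam u v) (schmidt_choice n dims psi I)"
    unfolding schmidt_choice_def by (rule someI_ex[OF ex])
  then show ?thesis by (simp add: choice_eq)
qed

context
  fixes I S lam u v
  assumes IU: "I \<subseteq> U" and sch: "schmidt n dims psi I S lam u v"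
begin

lemma finI: "finite (idx dims I)" using finite_Ix[OF IU] .

lemma lam_pos: "\<alpha> < S \<Longrightarrow> lam \<alpha> > 0" using sch by (simp add: schmidt_def)

lemma on_u: "orthonormal (idx dims I) u S"
  using sch by (simp add: schmidt_def orthonormal_def inn_def)

lemma on_v: "orthonormal (idx dims (U - I)) v S"
  using sch by (simp add: schmidt_def orthonormal_def inn_def)

lemma dec: "a \<in> idx dims I \<Longrightarrow> c \<in> idx dims (U - I) \<Longrightarrow>
    psi (Defs.merge I a c) = (\<Sum>\<alpha><S. complex_of_real (lam \<alpha>) * u \<alpha> a * v \<alpha> c)"
  using sch by (simp add: schmidt_def)

lemma swap_schmidt: "schmidt n dims psi (U - I) S lam v u"
proof -
  have "psi (Defs.merge (U - I) c a) = (\<Sum>\<alpha><S. complex_of_real (lam \<alpha>) * v \<alpha> c * u \<alpha> a)"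
    if c: "c \<in> idx dims (U - I)" and a: "a \<in> idx dims I" for a c
    using dec[OF a c] merge_swap[OF IU a c] by (simp add: mult_ac)
  then show ?thesis using sch diff_diff_U[OF IU] unfolding schmidt_def by simp
qed

lemma rho_dm: "rho_red n dims psi I = dm (idx dims I) S (\<lambda>\<alpha>. of_real ((lam \<alpha>)^2)) u"
proof (intro ext)
  fix a b
  show "rho_red n dims psi I a b = dm (idx dims I) S (\<lambda>\<alpha>. of_real ((lam \<alpha>)^2)) u a b"
  proof (cases "a \<in> idx dims I \<and> b \<in> idx dims I")
    case True
    then have a: "a \<in> idx dims I" and b: "b \<in> idx dims I" by auto
    have "rho_red n dims psi I a b = (\<Sum>c\<in>idx dims (U - I). psi (Defs.merge I a c) * cnj (psi (Defs.merge I b c)))"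
      using True by (simp add: rho_red_def)
    also have "\<dots> = (\<Sum>c\<in>idx dims (U - I). (\<Sum>\<alpha><S. complex_of_real (lam \<alpha>) * u \<alpha> a * v \<alpha> c) *
        cnj (\<Sum>\<beta><S. complex_of_real (lam \<beta>) * u \<beta> b * v \<beta> c))"
      by (intro sum.cong refl) (simp add: dec a b)
    also have "\<dots> = (\<Sum>c\<in>idx dims (U - I). \<Sum>\<alpha><S. \<Sum>\<beta><S. (complex_of_real (lam \<alpha>) * u \<alpha> a) *
        (complex_of_real (lam \<beta>) * cnj (u \<beta> b)) * (v \<alpha> c * cnj (v \<beta> c)))"
      by (simp add: sum_product mult_ac)
    also have "\<dots> = (\<Sum>\<alpha><S. \<Sum>c\<in>idx dims (U - I). \<Sum>\<beta><S. (complex_of_real (lam \<alpha>) * u \<alpha> a) *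
        (complex_of_real (lam \<beta>) * cnj (u \<beta> b)) * (v \<alpha> c * cnj (v \<beta> c)))"
      by (rule sum.swap)
    also have "\<dots> = (\<Sum>\<alpha><S. \<Sum>\<beta><S. \<Sum>c\<in>idx dims (U - I). (complex_of_real (lam \<alpha>) * u \<alpha> a) *
        (complex_of_real (lam \<beta>) * cnj (u \<beta> b)) * (v \<alpha> c * cnj (v \<beta> c)))"
      by (intro sum.cong refl) (rule sum.swap)
    also have "\<dots> = (\<Sum>\<alpha><S. \<Sum>\<beta><S. (complex_of_real (lam \<alpha>) * u \<alpha> a) *
        (complex_of_real (lam \<beta>) * cnj (u \<beta> b)) * (\<Sum>c\<in>idx dims (U - I). v \<alpha> c * cnj (v \<beta> c)))"
      by (simp only: sum_distrib_left)
    also have "\<dots> = (\<Sum>\<alpha><S. \<Sum>\<beta><S. if \<alpha> = \<beta> then (complex_of_real (lam \<alpha>) * u \<alpha> a) *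
        (complex_of_real (lam \<beta>) * cnj (u \<beta> b)) else 0)"
      using on_v by (intro sum.cong refl) (auto simp: orthonormal_def inn_def)
    also have "\<dots> = dm (idx dims I) S (\<lambda>\<alpha>. of_real ((lam \<alpha>)^2)) u a b"
      using True by (simp add: dm_def power2_eq_square mult_ac)
    finally show ?thesis .
  qed (auto simp: rho_red_def dm_def)
qed

lemma supp_proj_dm: "supp_proj n dims psi I = dm (idx dims I) S (\<lambda>_. 1) u"
proof -
  let ?A = "idx dims I"
  let ?P = "dm ?A S (\<lambda>_. 1) u"
  let ?R = "rho_red n dims psi I"
  have PP: "mm ?A ?P ?P = ?P" by (simp add: mm_dm[OF finI on_u])
  have hP: "adjm ?P = ?P" by (rule dm_herm) simp
  have RP: "mm ?A ?P ?R = ?R" by (simp add: rho_dm mm_dm[OF finI on_u])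
  have PR: "mm ?A ?R (dm ?A S (\<lambda>\<alpha>. of_real (1 / (lam \<alpha>)^2)) u) = ?P"
    unfolding rho_dm mm_dm[OF finI on_u]
    by (intro dm_cong) (frule lam_pos, simp add: field_simps)
  have rng: "range (mapv ?A ?P) = range (mapv ?A ?R)"
  proof
    show "range (mapv ?A ?P) \<subseteq> range (mapv ?A ?R)"
    proof
      fix y assume "y \<in> range (mapv ?A ?P)"
      then obtain x where "y = mapv ?A ?P x" by blast
      also have "\<dots> = mapv ?A ?R (mapv ?A (dm ?A S (\<lambda>\<alpha>. of_real (1 / (lam \<alpha>)^2)) u) x)"
        by (subst PR[symmetric]) (rule mapv_mm)
      finally show "y \<in> range (mapv ?A ?R)" by blast
    qed
    show "range (mapv ?A ?R) \<subseteq> range (mapv ?A ?P)"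
    proof
      fix y assume "y \<in> range (mapv ?A ?R)"
      then obtain x where "y = mapv ?A ?R x" by blast
      also have "\<dots> = mapv ?A ?P (mapv ?A ?R x)"
        by (subst RP[symmetric]) (rule mapv_mm)
      finally show "y \<in> range (mapv ?A ?P)" by blast
    qed
  qed
  have props: "op_supported dims I ?P \<and> mmul dims I ?P ?P = ?P \<and> (\<forall>a b. ?P b a = cnj (?P a b)) \<and>
      range (mapp dims I ?P) = range (mapp dims I ?R)"
  proof (intro conjI allI)
    show "op_supported dims I ?P" by (simp add: op_supported_supp dm_supp)
    show "mmul dims I ?P ?P = ?P" using PP by (simp add: mmul_mm)
    show "?P b a = cnj (?P a b)" for a b using hP unfolding adjm_def by metis
    show "range (mapp dims I ?P) = range (mapp dims I ?R)" using rng by (simp add: mapp_mapv)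
  qed
  have uniq: "Q = ?P" if "op_supported dims I Q \<and> mmul dims I Q Q = Q \<and> (\<forall>a b. Q b a = cnj (Q a b)) \<and>
      range (mapp dims I Q) = range (mapp dims I ?R)" for Q
  proof (rule proj_unique[OF finI])
    show "supp ?A Q" using that by (simp add: op_supported_supp)
    show "mm ?A Q Q = Q" using that by (simp add: mmul_mm)
    show "adjm Q = Q"
    proof (intro ext)
      fix a b
      from that have "Q a b = cnj (Q b a)" by blast
      then show "adjm Q a b = Q a b" by (simp add: adjm_def)
    qed
    show "supp ?A ?P" by (rule dm_supp)
    show "mm ?A ?P ?P = ?P" by (rule PP)
    show "adjm ?P = ?P" by (rule hP)
    show "range (mapv ?A Q) = range (mapv ?A ?P)" using that rng by (simp add: mapp_mapv)
  qed
  show ?thesis unfolding supp_proj_def by (rule the_equality, rule props, rule uniq, assumption)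
qed

lemma absorb_left:
  assumes a: "a \<in> idx dims I" and c: "c \<in> idx dims (U - I)"
  shows "(\<Sum>a'\<in>idx dims I. supp_proj n dims psi I a a' * psi (Defs.merge I a' c)) = psi (Defs.merge I a c)"
proof -
  have "(\<Sum>a'\<in>idx dims I. supp_proj n dims psi I a a' * psi (Defs.merge I a' c)) =
      (\<Sum>a'\<in>idx dims I. (\<Sum>\<alpha><S. u \<alpha> a * cnj (u \<alpha> a')) * (\<Sum>\<beta><S. complex_of_real (lam \<beta>) * u \<beta> a' * v \<beta> c))"
    using a by (intro sum.cong refl) (simp add: supp_proj_dm dm_def dec c)
  also have "\<dots> = (\<Sum>a'\<in>idx dims I. \<Sum>\<alpha><S. \<Sum>\<beta><S. u \<alpha> a * (complex_of_real (lam \<beta>) * v \<beta> c) * (u \<beta> a' * cnj (u \<alpha> a')))"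
    by (simp add: sum_product mult_ac)
  also have "\<dots> = (\<Sum>\<alpha><S. \<Sum>a'\<in>idx dims I. \<Sum>\<beta><S. u \<alpha> a * (complex_of_real (lam \<beta>) * v \<beta> c) * (u \<beta> a' * cnj (u \<alpha> a')))"
    by (rule sum.swap)
  also have "\<dots> = (\<Sum>\<alpha><S. \<Sum>\<beta><S. \<Sum>a'\<in>idx dims I. u \<alpha> a * (complex_of_real (lam \<beta>) * v \<beta> c) * (u \<beta> a' * cnj (u \<alpha> a')))"
    by (intro sum.cong refl) (rule sum.swap)
  also have "\<dots> = (\<Sum>\<alpha><S. \<Sum>\<beta><S. u \<alpha> a * (complex_of_real (lam \<beta>) * v \<beta> c) * (\<Sum>a'\<in>idx dims I. u \<beta> a' * cnj (u \<alpha> a')))"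
    by (simp only: sum_distrib_left)
  also have "\<dots> = (\<Sum>\<alpha><S. \<Sum>\<beta><S. if \<beta> = \<alpha> then u \<alpha> a * (complex_of_real (lam \<beta>) * v \<beta> c) else 0)"
    using on_u by (intro sum.cong refl) (auto simp: orthonormal_def inn_def)
  also have "\<dots> = psi (Defs.merge I a c)"
    by (simp add: dec a c mult_ac)
  finally show ?thesis .
qed

end


definition Qp where
  "Qp I X C = (\<Sum>a\<in>idx dims I. \<Sum>a'\<in>idx dims I. \<Sum>c\<in>idx dims (U - I). \<Sum>c'\<in>idx dims (U - I).
      cnj (psi (Defs.merge I a c)) * X a a' * C c c' * psi (Defs.merge I a' c'))"

lemma Qp_right: "Qp I X C = (\<Sum>a\<in>idx dims I. \<Sum>a'\<in>idx dims I. X a a' *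
    bil (idx dims (U - I)) C (\<lambda>c. psi (Defs.merge I a c)) (\<lambda>c. psi (Defs.merge I a' c)))"
  unfolding Qp_def bil_def
  by (rule sum.cong[OF refl], rule sum.cong[OF refl]) (simp add: sum_distrib_left mult_ac)

lemma Qp_left: "Qp I X C = (\<Sum>c\<in>idx dims (U - I). \<Sum>c'\<in>idx dims (U - I). C c c' *
    bil (idx dims I) X (\<lambda>a. psi (Defs.merge I a c)) (\<lambda>a. psi (Defs.merge I a c')))"
proof -
  let ?A = "idx dims I" and ?K = "idx dims (U - I)"
  let ?F = "\<lambda>a a' c c'. cnj (psi (Defs.merge I a c)) * X a a' * C c c' * psi (Defs.merge I a' c')"
  have "Qp I X C = (\<Sum>a\<in>?A. \<Sum>a'\<in>?A. \<Sum>c\<in>?K. \<Sum>c'\<in>?K. ?F a a' c c')" by (simp add: Qp_def)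
  also have "\<dots> = (\<Sum>a\<in>?A. \<Sum>c\<in>?K. \<Sum>a'\<in>?A. \<Sum>c'\<in>?K. ?F a a' c c')"
    by (rule sum.cong[OF refl], rule sum.swap)
  also have "\<dots> = (\<Sum>c\<in>?K. \<Sum>a\<in>?A. \<Sum>a'\<in>?A. \<Sum>c'\<in>?K. ?F a a' c c')"
    by (rule sum.swap)
  also have "\<dots> = (\<Sum>c\<in>?K. \<Sum>a\<in>?A. \<Sum>c'\<in>?K. \<Sum>a'\<in>?A. ?F a a' c c')"
    by (rule sum.cong[OF refl], rule sum.cong[OF refl], rule sum.swap)
  also have "\<dots> = (\<Sum>c\<in>?K. \<Sum>c'\<in>?K. \<Sum>a\<in>?A. \<Sum>a'\<in>?A. ?F a a' c c')"
    by (rule sum.cong[OF refl], rule sum.swap)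
  also have "\<dots> = (\<Sum>c\<in>?K. \<Sum>c'\<in>?K. C c c' * bil ?A X (\<lambda>a. psi (Defs.merge I a c)) (\<lambda>a. psi (Defs.merge I a c')))"
    unfolding bil_def
    by (rule sum.cong[OF refl], rule sum.cong[OF refl]) (simp add: sum_distrib_left mult_ac)
  finally show ?thesis .
qed

lemma restrict_rho_mm: "restrict_rho n dims psi I X =
    mm (idx dims I) (mm (idx dims I) (supp_proj n dims psi I) X) (supp_proj n dims psi I)"
  by (simp add: restrict_rho_def mmul_mm)

lemma supp_proj_herm: "I \<subseteq> U \<Longrightarrow> adjm (supp_proj n dims psi I) = supp_proj n dims psi I"
  using supp_proj_dm[OF _ schm] by (simp add: dm_herm)

lemma supp_proj_supp: "I \<subseteq> U \<Longrightarrow> supp (idx dims I) (supp_proj n dims psi I)"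
  using supp_proj_dm[OF _ schm] by (simp add: dm_supp)

lemma supp_proj_idem: "I \<subseteq> U \<Longrightarrow> mm (idx dims I) (supp_proj n dims psi I) (supp_proj n dims psi I) = supp_proj n dims psi I"
  using supp_proj_dm[OF _ schm] mm_dm[OF finI[OF _ schm] on_u[OF _ schm]] by simp

lemma absorbL: "I \<subseteq> U \<Longrightarrow> a \<in> idx dims I \<Longrightarrow> c \<in> idx dims (U - I) \<Longrightarrow>
    (\<Sum>a'\<in>idx dims I. supp_proj n dims psi I a a' * psi (Defs.merge I a' c)) = psi (Defs.merge I a c)"
  by (rule absorb_left[OF _ schm])

lemma absorbR:
  assumes IU: "I \<subseteq> U" and a: "a \<in> idx dims I" and c: "c \<in> idx dims (U - I)"
  shows "(\<Sum>c'\<in>idx dims (U - I). supp_proj n dims psi (U - I) c c' * psi (Defs.merge I a c')) = psi (Defs.merge I a c)"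
proof -
  have KU: "U - I \<subseteq> U" by auto
  have sw: "schmidt n dims psi (U - I) (sS I) (slam I) (sv I) (su I)"
    by (rule swap_schmidt[OF IU schm[OF IU]])
  have a': "a \<in> idx dims (U - (U - I))" using a diff_diff_U[OF IU] by simp
  have "(\<Sum>c'\<in>idx dims (U - I). supp_proj n dims psi (U - I) c c' * psi (Defs.merge (U - I) c' a)) = psi (Defs.merge (U - I) c a)"
    by (rule absorb_left[OF KU sw c a'])
  moreover have "psi (Defs.merge (U - I) c' a) = psi (Defs.merge I a c')" if "c' \<in> idx dims (U - I)" for c'
    using merge_swap[OF IU a that] by simp
  ultimately show ?thesis using merge_swap[OF IU a c] by simp
qed

lemma Qp_absL: "I \<subseteq> U \<Longrightarrow> Qp I (restrict_rho n dims psi I X) C = Qp I X C"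
  unfolding Qp_left restrict_rho_mm
  by (intro sum.cong refl arg_cong2[where f="(*)"] sandwich supp_proj_herm absorbL) auto

lemma Qp_absR: "I \<subseteq> U \<Longrightarrow> Qp I X (restrict_rho n dims psi (U - I) C) = Qp I X C"
  unfolding Qp_right restrict_rho_mm
  by (intro sum.cong refl arg_cong2[where f="(*)"] sandwich supp_proj_herm absorbR) auto

lemma Qp_schmidt:
  assumes IU: "I \<subseteq> U" and sch: "schmidt n dims psi I S lam u v"
  shows "Qp I X C = (\<Sum>\<alpha><S. \<Sum>\<beta><S. complex_of_real (lam \<alpha> * lam \<beta>) *
      bil (idx dims I) X (u \<alpha>) (u \<beta>) * bil (idx dims (U - I)) C (v \<alpha>) (v \<beta>))"
proof -
  let ?A = "idx dims I" and ?K = "idx dims (U - I)"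
  define B where "B \<alpha> \<beta> = bil ?K C (v \<alpha>) (v \<beta>)" for \<alpha> \<beta>
  have row: "bil ?K C (\<lambda>c. psi (Defs.merge I a c)) (\<lambda>c. psi (Defs.merge I a' c)) =
      (\<Sum>\<alpha><S. \<Sum>\<beta><S. cnj (complex_of_real (lam \<alpha>) * u \<alpha> a) * (complex_of_real (lam \<beta>) * u \<beta> a') * B \<alpha> \<beta>)"
    if a: "a \<in> ?A" and a': "a' \<in> ?A" for a a'
  proof -
    have "bil ?K C (\<lambda>c. psi (Defs.merge I a c)) (\<lambda>c. psi (Defs.merge I a' c)) =
        bil ?K C (\<lambda>c. \<Sum>\<alpha><S. (complex_of_real (lam \<alpha>) * u \<alpha> a) * v \<alpha> c) (\<lambda>c. \<Sum>\<beta><S. (complex_of_real (lam \<beta>) * u \<beta> a') * v \<beta> c)"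
      by (rule bil_cong) (simp_all add: dec[OF IU sch] a a' mult.assoc)
    then show ?thesis by (simp only: bil_expand B_def)
  qed
  let ?F = "\<lambda>a a' \<alpha> \<beta>. X a a' * (cnj (complex_of_real (lam \<alpha>) * u \<alpha> a) * (complex_of_real (lam \<beta>) * u \<beta> a') * B \<alpha> \<beta>)"
  have "Qp I X C = (\<Sum>a\<in>?A. \<Sum>a'\<in>?A. \<Sum>\<alpha><S. \<Sum>\<beta><S. ?F a a' \<alpha> \<beta>)"
    unfolding Qp_right by (intro sum.cong refl) (simp add: row sum_distrib_left)
  also have "\<dots> = (\<Sum>a\<in>?A. \<Sum>\<alpha><S. \<Sum>a'\<in>?A. \<Sum>\<beta><S. ?F a a' \<alpha> \<beta>)"
    by (rule sum.cong[OF refl], rule sum.swap)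
  also have "\<dots> = (\<Sum>\<alpha><S. \<Sum>a\<in>?A. \<Sum>a'\<in>?A. \<Sum>\<beta><S. ?F a a' \<alpha> \<beta>)"
    by (rule sum.swap)
  also have "\<dots> = (\<Sum>\<alpha><S. \<Sum>a\<in>?A. \<Sum>\<beta><S. \<Sum>a'\<in>?A. ?F a a' \<alpha> \<beta>)"
    by (rule sum.cong[OF refl], rule sum.cong[OF refl], rule sum.swap)
  also have "\<dots> = (\<Sum>\<alpha><S. \<Sum>\<beta><S. \<Sum>a\<in>?A. \<Sum>a'\<in>?A. ?F a a' \<alpha> \<beta>)"
    by (rule sum.cong[OF refl], rule sum.swap)
  also have "\<dots> = (\<Sum>\<alpha><S. \<Sum>\<beta><S. complex_of_real (lam \<alpha> * lam \<beta>) * bil ?A X (u \<alpha>) (u \<beta>) * B \<alpha> \<beta>)"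
    unfolding bil_def
    by (rule sum.cong[OF refl], rule sum.cong[OF refl]) (simp add: sum_distrib_left sum_distrib_right mult_ac)
  finally show ?thesis by (simp only: B_def)
qed

definition Wf where "Wf I a c = (\<Sum>\<alpha><sS I. su I \<alpha> a * sv I \<alpha> c)"

definition Tl where
  "Tl I Y = (\<lambda>c c'. if c \<in> idx dims (U - I) \<and> c' \<in> idx dims (U - I) then
     (\<Sum>a\<in>idx dims I. \<Sum>a'\<in>idx dims I. Y a a' * Wf I a' c * cnj (Wf I a c')) else 0)"

lemma W_formula:
  assumes IU: "I \<subseteq> U" and sch: "schmidt n dims psi I S lam u v"
    and a: "a \<in> idx dims I" and c: "c \<in> idx dims (U - I)"
  shows "(\<Sum>\<alpha><S. u \<alpha> a * v \<alpha> c) =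
    (\<Sum>a'\<in>idx dims I. (\<Sum>\<alpha><S. complex_of_real (1 / lam \<alpha>) * u \<alpha> a * cnj (u \<alpha> a')) * psi (Defs.merge I a' c))"
proof -
  let ?A = "idx dims I"
  have "(\<Sum>a'\<in>?A. (\<Sum>\<alpha><S. complex_of_real (1 / lam \<alpha>) * u \<alpha> a * cnj (u \<alpha> a')) * psi (Defs.merge I a' c)) =
      (\<Sum>a'\<in>?A. (\<Sum>\<alpha><S. complex_of_real (1 / lam \<alpha>) * u \<alpha> a * cnj (u \<alpha> a')) *
         (\<Sum>\<beta><S. complex_of_real (lam \<beta>) * u \<beta> a' * v \<beta> c))"
    by (intro sum.cong refl) (simp add: dec[OF IU sch _ c])
  also have "\<dots> = (\<Sum>a'\<in>?A. \<Sum>\<alpha><S. \<Sum>\<beta><S. (complex_of_real (1 / lam \<alpha>) * u \<alpha> a * cnj (u \<alpha> a')) * (complex_of_real (lam \<beta>) * u \<beta> a' * v \<beta> c))"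
    by (simp only: sum_product)
  also have "\<dots> = (\<Sum>\<alpha><S. \<Sum>a'\<in>?A. \<Sum>\<beta><S. (complex_of_real (1 / lam \<alpha>) * u \<alpha> a * cnj (u \<alpha> a')) * (complex_of_real (lam \<beta>) * u \<beta> a' * v \<beta> c))"
    by (rule sum.swap)
  also have "\<dots> = (\<Sum>\<alpha><S. \<Sum>\<beta><S. \<Sum>a'\<in>?A. (complex_of_real (1 / lam \<alpha>) * u \<alpha> a * cnj (u \<alpha> a')) * (complex_of_real (lam \<beta>) * u \<beta> a' * v \<beta> c))"
    by (rule sum.cong[OF refl], rule sum.swap)
  also have "\<dots> = (\<Sum>\<alpha><S. \<Sum>\<beta><S. (complex_of_real (1 / lam \<alpha>) * u \<alpha> a) * (complex_of_real (lam \<beta>) * v \<beta> c) * (\<Sum>a'\<in>?A. u \<beta> a' * cnj (u \<alpha> a')))"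
    by (intro sum.cong refl) (simp add: sum_distrib_left sum_divide_distrib mult_ac)
  also have "\<dots> = (\<Sum>\<alpha><S. \<Sum>\<beta><S. if \<beta> = \<alpha> then (complex_of_real (1 / lam \<alpha>) * u \<alpha> a) * (complex_of_real (lam \<beta>) * v \<beta> c) else 0)"
    using on_u[OF IU sch] by (intro sum.cong refl) (auto simp: orthonormal_def inn_def)
  also have "\<dots> = (\<Sum>\<alpha><S. u \<alpha> a * v \<alpha> c)"
  proof (intro sum.cong refl)
    fix \<alpha> assume "\<alpha> \<in> {..<S}"
    then have "lam \<alpha> \<noteq> 0" using lam_pos[OF IU sch] by fastforce
    then show "(\<Sum>\<beta><S. if \<beta> = \<alpha> then (complex_of_real (1 / lam \<alpha>) * u \<alpha> a) * (complex_of_real (lam \<beta>) * v \<beta> c) else 0) = u \<alpha> a * v \<alpha> c"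
      using \<open>\<alpha> \<in> {..<S}\<close> by (simp add: field_simps)
  qed
  finally show ?thesis by simp
qed

lemma W_indep:
  assumes IU: "I \<subseteq> U" and sch: "schmidt n dims psi I S lam u v" and sch': "schmidt n dims psi I S' lam' u' v'"
    and a: "a \<in> idx dims I" and c: "c \<in> idx dims (U - I)"
  shows "(\<Sum>\<alpha><S. u \<alpha> a * v \<alpha> c) = (\<Sum>\<beta><S'. u' \<beta> a * v' \<beta> c)"
proof -
  have R: "\<forall>x\<in>idx dims I. \<forall>y\<in>idx dims I. rho_red n dims psi I x y = (\<Sum>\<alpha><S. complex_of_real ((lam \<alpha>)^2) * u \<alpha> x * cnj (u \<alpha> y))"
    by (simp add: rho_dm[OF IU sch] dm_def)
  have R': "\<forall>x\<in>idx dims I. \<forall>y\<in>idx dims I. rho_red n dims psi I x y = (\<Sum>\<beta><S'. complex_of_real ((lam' \<beta>)^2) * u' \<beta> x * cnj (u' \<beta> y))"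
    by (simp add: rho_dm[OF IU sch'] dm_def)
  have lp: "\<forall>\<alpha><S. lam \<alpha> > 0" using lam_pos[OF IU sch] by blast
  have lp': "\<forall>\<beta><S'. lam' \<beta> > 0" using lam_pos[OF IU sch'] by blast
  have eq: "(\<Sum>\<alpha><S. complex_of_real (1 / lam \<alpha>) * u \<alpha> a * cnj (u \<alpha> a')) =
      (\<Sum>\<beta><S'. complex_of_real (1 / lam' \<beta>) * u' \<beta> a * cnj (u' \<beta> a'))" if a': "a' \<in> idx dims I" for a'
    using decomp_unique[OF finI[OF IU sch] on_u[OF IU sch] on_u[OF IU sch'] lp lp' R R' a a', of "\<lambda>x. complex_of_real (1 / x)"]
    by simp
  show ?thesis
    unfolding W_formula[OF IU sch a c] W_formula[OF IU sch' a c]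
    by (intro sum.cong refl) (simp only: eq)
qed

lemma WK:
  assumes IU: "I \<subseteq> U" and a: "a \<in> idx dims I" and c: "c \<in> idx dims (U - I)"
  shows "Wf (U - I) c a = Wf I a c"
proof -
  have KU: "U - I \<subseteq> U" by auto
  have sw: "schmidt n dims psi (U - I) (sS I) (slam I) (sv I) (su I)"
    by (rule swap_schmidt[OF IU schm[OF IU]])
  have a': "a \<in> idx dims (U - (U - I))" using a diff_diff_U[OF IU] by simp
  have "Wf (U - I) c a = (\<Sum>\<alpha><sS I. sv I \<alpha> c * su I \<alpha> a)"
    unfolding Wf_def by (rule W_indep[OF KU schm[OF KU] sw c a'])
  then show ?thesis by (simp add: Wf_def mult.commute)
qed

lemma WW:
  assumes IU: "I \<subseteq> U" and a: "a \<in> idx dims I" and b: "b \<in> idx dims I"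
  shows "(\<Sum>c\<in>idx dims (U - I). Wf I a c * cnj (Wf I b c)) = supp_proj n dims psi I a b"
proof -
  have "(\<Sum>c\<in>idx dims (U - I). Wf I a c * cnj (Wf I b c)) = (\<Sum>\<alpha><sS I. su I \<alpha> a * cnj (su I \<alpha> b))"
    unfolding Wf_def
    using ortho_inner[OF on_v[OF IU schm[OF IU]], of "\<lambda>\<alpha>. su I \<alpha> a" "\<lambda>\<alpha>. su I \<alpha> b"] by simp
  then show ?thesis using a b by (simp add: supp_proj_dm[OF IU schm[OF IU]] dm_def)
qed

lemma WW':
  assumes IU: "I \<subseteq> U" and c: "c \<in> idx dims (U - I)" and d: "d \<in> idx dims (U - I)"
  shows "(\<Sum>a\<in>idx dims I. Wf I a c * cnj (Wf I a d)) = supp_proj n dims psi (U - I) c d"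
proof -
  have KU: "U - I \<subseteq> U" by auto
  have "(\<Sum>a\<in>idx dims I. Wf I a c * cnj (Wf I a d)) = (\<Sum>a\<in>idx dims I. (\<Sum>\<alpha><sS I. sv I \<alpha> c * su I \<alpha> a) * cnj (\<Sum>\<alpha><sS I. sv I \<alpha> d * su I \<alpha> a))"
    by (simp add: Wf_def mult.commute)
  also have "\<dots> = (\<Sum>\<alpha><sS I. sv I \<alpha> c * cnj (sv I \<alpha> d))"
    by (rule ortho_inner[OF on_u[OF IU schm[OF IU]]])
  also have "\<dots> = supp_proj n dims psi (U - I) c d"
    using c d by (simp add: supp_proj_dm[OF KU swap_schmidt[OF IU schm[OF IU]]] dm_def)
  finally show ?thesis .
qed

lemma Tl_supp: "supp (idx dims (U - I)) (Tl I Y)"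
  by (simp add: supp_def Tl_def)

lemma Tl_add: "Tl I (\<lambda>a b. Y1 a b + Y2 a b) = (\<lambda>c c'. Tl I Y1 c c' + Tl I Y2 c c')"
  by (auto simp: Tl_def fun_eq_iff sum.distrib distrib_right)

lemma Tl_scale: "Tl I (\<lambda>a b. k * Y a b) = (\<lambda>c c'. k * Tl I Y c c')"
  by (auto simp: Tl_def fun_eq_iff sum_distrib_left mult.assoc)

lemma Tl_zero: "Tl I (\<lambda>a b. 0) = (\<lambda>c c'. 0)"
  by (auto simp: Tl_def fun_eq_iff)

lemma fixW:
  assumes IU: "I \<subseteq> U" and a: "a \<in> idx dims I" and c: "c \<in> idx dims (U - I)"
  shows "(\<Sum>d\<in>idx dims (U - I). supp_proj n dims psi (U - I) c d * Wf I a d) = Wf I a c"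
proof -
  have KU: "U - I \<subseteq> U" by auto
  have sw: "schmidt n dims psi (U - I) (sS I) (slam I) (sv I) (su I)"
    by (rule swap_schmidt[OF IU schm[OF IU]])
  show ?thesis
    unfolding supp_proj_dm[OF KU sw]
    by (rule dm_fix[OF finite_IxU on_u[OF KU sw] c]) (simp add: Wf_def)
qed

lemma herm_entry: "adjm X = X \<Longrightarrow> X a b = cnj (X b a)"
  unfolding adjm_def by metis

lemma Tl_fix:
  assumes IU: "I \<subseteq> U"
  shows "restrict_rho n dims psi (U - I) (Tl I Y) = Tl I Y"
proof -
  have KU: "U - I \<subseteq> U" by auto
  let ?K = "idx dims (U - I)" and ?A = "idx dims I"
  let ?s = "supp_proj n dims psi (U - I)"
  have ssupp: "supp ?K ?s" by (rule supp_proj_supp[OF KU])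
  have L: "mm ?K ?s (Tl I Y) = Tl I Y"
  proof (intro ext)
    fix c c'
    show "mm ?K ?s (Tl I Y) c c' = Tl I Y c c'"
    proof (cases "c \<in> ?K \<and> c' \<in> ?K")
      case True
      have "mm ?K ?s (Tl I Y) c c' = (\<Sum>d\<in>?K. \<Sum>a\<in>?A. \<Sum>a'\<in>?A. Y a a' * cnj (Wf I a c') * (?s c d * Wf I a' d))"
        using True by (simp add: mm_def Tl_def sum_distrib_left mult_ac)
      also have "\<dots> = (\<Sum>a\<in>?A. \<Sum>d\<in>?K. \<Sum>a'\<in>?A. Y a a' * cnj (Wf I a c') * (?s c d * Wf I a' d))"
        by (rule sum.swap)
      also have "\<dots> = (\<Sum>a\<in>?A. \<Sum>a'\<in>?A. \<Sum>d\<in>?K. Y a a' * cnj (Wf I a c') * (?s c d * Wf I a' d))"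
        by (rule sum.cong[OF refl], rule sum.swap)
      also have "\<dots> = (\<Sum>a\<in>?A. \<Sum>a'\<in>?A. Y a a' * cnj (Wf I a c') * Wf I a' c)"
        using True by (intro sum.cong refl) (simp add: sum_distrib_left[symmetric] fixW[OF IU])
      also have "\<dots> = Tl I Y c c'" using True by (simp add: Tl_def mult_ac)
      finally show ?thesis .
    next
      case False
      then show ?thesis using ssupp by (auto simp: mm_def Tl_def supp_def)
    qed
  qed
  have R: "mm ?K (Tl I Y) ?s = Tl I Y"
  proof (intro ext)
    fix c c'
    show "mm ?K (Tl I Y) ?s c c' = Tl I Y c c'"
    proof (cases "c \<in> ?K \<and> c' \<in> ?K")
      case True
      have h: "cnj (Wf I a d) * ?s d c' = cnj (?s c' d * Wf I a d)" for a d
        using herm_entry[OF supp_proj_herm[OF KU], of d c'] by simp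
      have "mm ?K (Tl I Y) ?s c c' = (\<Sum>d\<in>?K. \<Sum>a\<in>?A. \<Sum>a'\<in>?A. Y a a' * Wf I a' c * (cnj (Wf I a d) * ?s d c'))"
        using True by (simp add: mm_def Tl_def sum_distrib_left sum_distrib_right mult_ac)
      also have "\<dots> = (\<Sum>a\<in>?A. \<Sum>d\<in>?K. \<Sum>a'\<in>?A. Y a a' * Wf I a' c * (cnj (Wf I a d) * ?s d c'))"
        by (rule sum.swap)
      also have "\<dots> = (\<Sum>a\<in>?A. \<Sum>a'\<in>?A. \<Sum>d\<in>?K. Y a a' * Wf I a' c * (cnj (Wf I a d) * ?s d c'))"
        by (rule sum.cong[OF refl], rule sum.swap)
      also have "\<dots> = (\<Sum>a\<in>?A. \<Sum>a'\<in>?A. Y a a' * Wf I a' c * cnj (\<Sum>d\<in>?K. ?s c' d * Wf I a d))"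
        by (intro sum.cong refl) (simp add: h sum_distrib_left)
      also have "\<dots> = Tl I Y c c'"
        using True by (simp add: Tl_def fixW[OF IU])
      finally show ?thesis .
    next
      case False
      then show ?thesis using ssupp by (auto simp: mm_def Tl_def supp_def)
    qed
  qed
  show ?thesis unfolding restrict_rho_mm L R ..
qed

lemma Tl_adjm: "adjm (Tl I Y) = Tl I (adjm Y)"
proof (intro ext)
  fix c c'
  let ?A = "idx dims I"
  have "(\<Sum>a\<in>?A. \<Sum>a'\<in>?A. cnj (Y a a') * cnj (Wf I a' c') * Wf I a c) =
      (\<Sum>a'\<in>?A. \<Sum>a\<in>?A. cnj (Y a a') * cnj (Wf I a' c') * Wf I a c)" by (rule sum.swap)
  then show "adjm (Tl I Y) c c' = Tl I (adjm Y) c c'"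
    by (simp add: adjm_def Tl_def mult_ac)
qed

end



context st begin

lemma Tl_inv:
  assumes IU: "I \<subseteq> U" and sY: "supp (idx dims I) Y" and rY: "restrict_rho n dims psi I Y = Y"
  shows "Tl (U - I) (Tl I Y) = Y"
proof (intro ext)
  fix a a'
  let ?A = "idx dims I" and ?K = "idx dims (U - I)"
  let ?s = "supp_proj n dims psi I"
  have UUI: "U - (U - I) = I" using IU by auto
  show "Tl (U - I) (Tl I Y) a a' = Y a a'"
  proof (cases "a \<in> ?A \<and> a' \<in> ?A")
    case False
    then show ?thesis using sY by (auto simp: Tl_def UUI supp_def)
  next
    case True
    then have a: "a \<in> ?A" and a': "a' \<in> ?A" by auto
    have "Tl (U - I) (Tl I Y) a a' = (\<Sum>c\<in>?K. \<Sum>c'\<in>?K. Tl I Y c c' * Wf I a c' * cnj (Wf I a' c))"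
      using True by (simp add: Tl_def UUI WK[OF IU])
    also have "\<dots> = (\<Sum>c\<in>?K. \<Sum>c'\<in>?K. \<Sum>b\<in>?A. \<Sum>b'\<in>?A. Y b b' * (Wf I b' c * cnj (Wf I a' c)) * (Wf I a c' * cnj (Wf I b c')))"
      by (intro sum.cong refl) (simp add: Tl_def sum_distrib_left sum_distrib_right mult_ac)
    also have "\<dots> = (\<Sum>b\<in>?A. \<Sum>b'\<in>?A. \<Sum>c\<in>?K. \<Sum>c'\<in>?K. Y b b' * (Wf I b' c * cnj (Wf I a' c)) * (Wf I a c' * cnj (Wf I b c')))"
      by (rule sum4_swap[symmetric])
    also have "\<dots> = (\<Sum>b\<in>?A. \<Sum>b'\<in>?A. Y b b' * (\<Sum>c\<in>?K. Wf I b' c * cnj (Wf I a' c)) * (\<Sum>c'\<in>?K. Wf I a c' * cnj (Wf I b c')))"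
      by (intro sum.cong refl) (simp add: sum_product sum_distrib_left mult_ac)
    also have "\<dots> = (\<Sum>b\<in>?A. \<Sum>b'\<in>?A. Y b b' * ?s b' a' * ?s a b)"
      using a a' by (intro sum.cong refl) (simp add: WW[OF IU])
    also have "\<dots> = mm ?A (mm ?A ?s Y) ?s a a'"
    proof -
      have "mm ?A (mm ?A ?s Y) ?s a a' = (\<Sum>b'\<in>?A. \<Sum>b\<in>?A. ?s a b * Y b b' * ?s b' a')"
        by (simp add: mm_def sum_distrib_right)
      also have "\<dots> = (\<Sum>b\<in>?A. \<Sum>b'\<in>?A. ?s a b * Y b b' * ?s b' a')" by (rule sum.swap)
      finally show ?thesis by (simp add: mult_ac)
    qed
    also have "\<dots> = Y a a'" using rY by (simp add: restrict_rho_mm)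
    finally show ?thesis .
  qed
qed

lemma Tl_entry:
  assumes IU: "I \<subseteq> U" and al: "\<alpha> < sS I" and be: "\<beta> < sS I"
  shows "bil (idx dims (U - I)) (Tl I Y) (sv I \<alpha>) (sv I \<beta>) = bil (idx dims I) Y (su I \<beta>) (su I \<alpha>)"
proof -
  let ?A = "idx dims I" and ?K = "idx dims (U - I)"
  have onv: "orthonormal ?K (sv I) (sS I)" by (rule on_v[OF IU schm[OF IU]])
  have p1: "(\<Sum>c\<in>?K. cnj (sv I \<alpha> c) * Wf I a' c) = su I \<alpha> a'" for a'
    unfolding Wf_def using ortho_pick[OF onv al, of "\<lambda>\<gamma>. su I \<gamma> a'"] by (simp add: mult.commute)
  have p2: "(\<Sum>c'\<in>?K. cnj (Wf I a c') * sv I \<beta> c') = cnj (su I \<beta> a)" for a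
  proof -
    have "(\<Sum>c'\<in>?K. cnj (sv I \<beta> c') * Wf I a c') = su I \<beta> a"
      unfolding Wf_def using ortho_pick[OF onv be, of "\<lambda>\<gamma>. su I \<gamma> a"] by (simp add: mult.commute)
    then have "cnj (\<Sum>c'\<in>?K. cnj (sv I \<beta> c') * Wf I a c') = cnj (su I \<beta> a)" by simp
    then show ?thesis by (simp add: mult.commute)
  qed
  have "bil ?K (Tl I Y) (sv I \<alpha>) (sv I \<beta>) =
      (\<Sum>c\<in>?K. \<Sum>c'\<in>?K. \<Sum>a\<in>?A. \<Sum>a'\<in>?A. Y a a' * (cnj (sv I \<alpha> c) * Wf I a' c) * (cnj (Wf I a c') * sv I \<beta> c'))"
    unfolding bil_def by (intro sum.cong refl) (simp add: Tl_def sum_distrib_left sum_distrib_right mult_ac)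
  also have "\<dots> = (\<Sum>a\<in>?A. \<Sum>a'\<in>?A. \<Sum>c\<in>?K. \<Sum>c'\<in>?K. Y a a' * (cnj (sv I \<alpha> c) * Wf I a' c) * (cnj (Wf I a c') * sv I \<beta> c'))"
    by (rule sum4_swap[symmetric])
  also have "\<dots> = (\<Sum>a\<in>?A. \<Sum>a'\<in>?A. Y a a' * (\<Sum>c\<in>?K. cnj (sv I \<alpha> c) * Wf I a' c) * (\<Sum>c'\<in>?K. cnj (Wf I a c') * sv I \<beta> c'))"
    by (intro sum.cong refl) (simp add: sum_product sum_distrib_left mult_ac)
  also have "\<dots> = (\<Sum>a\<in>?A. \<Sum>a'\<in>?A. Y a a' * su I \<alpha> a' * cnj (su I \<beta> a))"
    by (simp add: p1 p2)
  also have "\<dots> = bil ?A Y (su I \<beta>) (su I \<alpha>)"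
    by (simp add: bil_def mult_ac)
  finally show ?thesis .
qed

section \<open>Forms\<close>

definition OmI where "OmI I X \<longleftrightarrow> supp (idx dims I) X \<and> restrict_rho n dims psi I X = X"

lemma card_UI: "I \<subseteq> U \<Longrightarrow> card (U - I) = n - card I"
  by (simp add: card_Diff_subset finite_subset)

lemma UUI: "I \<subseteq> U \<Longrightarrow> U - (U - I) = I" by auto

lemma supp_sandwich: "supp A s \<Longrightarrow> supp A (mm A (mm A s X) s)"
  by (auto simp: supp_def mm_def)

lemma restrict_rho_supp: "I \<subseteq> U \<Longrightarrow> supp (idx dims I) (restrict_rho n dims psi I X)"
  unfolding restrict_rho_mm by (rule supp_sandwich[OF supp_proj_supp])

lemma restrict_rho_idem: "I \<subseteq> U \<Longrightarrow> restrict_rho n dims psi I (restrict_rho n dims psi I X) = restrict_rho n dims psi I X"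
proof -
  assume IU: "I \<subseteq> U"
  let ?A = "idx dims I" and ?s = "supp_proj n dims psi I"
  have ss: "mm ?A ?s ?s = ?s" by (rule supp_proj_idem[OF IU])
  have "mm ?A ?s (mm ?A (mm ?A ?s X) ?s) = mm ?A (mm ?A ?s X) ?s"
    by (simp add: mm_assoc[symmetric] ss)
  moreover have "mm ?A (mm ?A (mm ?A ?s X) ?s) ?s = mm ?A (mm ?A ?s X) ?s"
    by (simp add: mm_assoc ss)
  ultimately show ?thesis unfolding restrict_rho_mm by (simp add: mm_assoc)
qed

lemma OmI_iff: "I \<subseteq> U \<Longrightarrow> (\<exists>X. op_supported dims I X \<and> Y = restrict_rho n dims psi I X) \<longleftrightarrow> OmI I Y"
proof
  assume IU: "I \<subseteq> U"
  assume "\<exists>X. op_supported dims I X \<and> Y = restrict_rho n dims psi I X"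
  then obtain X where "Y = restrict_rho n dims psi I X" by blast
  then show "OmI I Y" using IU by (simp add: OmI_def restrict_rho_supp restrict_rho_idem)
next
  assume "OmI I Y"
  then show "\<exists>X. op_supported dims I X \<and> Y = restrict_rho n dims psi I X"
    by (intro exI[of _ Y]) (simp add: OmI_def op_supported_supp)
qed

lemma Omega_iff: "\<omega> \<in> Omega n dims psi k \<longleftrightarrow>
    (\<forall>I. (I \<subseteq> U \<and> card I = k \<longrightarrow> OmI I (\<omega> I)) \<and> (\<not> (I \<subseteq> U \<and> card I = k) \<longrightarrow> \<omega> I = (\<lambda>a b. 0)))"
  unfolding Omega_def using OmI_iff by auto

lemma OmegaD: "\<omega> \<in> Omega n dims psi k \<Longrightarrow> I \<subseteq> U \<Longrightarrow> card I = k \<Longrightarrow> OmI I (\<omega> I)"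
  by (simp add: Omega_iff)

lemma OmegaD0: "\<omega> \<in> Omega n dims psi k \<Longrightarrow> \<not> (I \<subseteq> U \<and> card I = k) \<Longrightarrow> \<omega> I = (\<lambda>a b. 0)"
  by (simp add: Omega_iff)

lemma OmegaI: "(\<And>I. I \<subseteq> U \<Longrightarrow> card I = k \<Longrightarrow> OmI I (\<omega> I)) \<Longrightarrow> (\<And>I. \<not> (I \<subseteq> U \<and> card I = k) \<Longrightarrow> \<omega> I = (\<lambda>a b. 0))
   \<Longrightarrow> \<omega> \<in> Omega n dims psi k"
  by (simp add: Omega_iff)

lemma restrict_rho_scale: "restrict_rho n dims psi I (\<lambda>a b. k * X a b) = (\<lambda>a b. k * restrict_rho n dims psi I X a b)"
  by (simp add: restrict_rho_mm mm_def fun_eq_iff sum_distrib_left sum_distrib_right mult_ac)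

lemma restrict_rho_add: "restrict_rho n dims psi I (\<lambda>a b. X a b + Y a b) = (\<lambda>a b. restrict_rho n dims psi I X a b + restrict_rho n dims psi I Y a b)"
  by (simp add: restrict_rho_mm mm_def fun_eq_iff sum.distrib distrib_left distrib_right)

lemma restrict_rho_sum: "restrict_rho n dims psi I (\<lambda>a b. \<Sum>j\<in>J. F j a b) = (\<lambda>a b. \<Sum>j\<in>J. restrict_rho n dims psi I (F j) a b)"
  by (simp add: restrict_rho_mm mm_def fun_eq_iff sum_distrib_left sum_distrib_right sum.swap[of _ J])

lemma OmI_scale: "OmI I X \<Longrightarrow> OmI I (\<lambda>a b. k * X a b)"
  by (simp add: OmI_def restrict_rho_scale supp_def)

lemma OmI_add: "OmI I X \<Longrightarrow> OmI I Y \<Longrightarrow> OmI I (\<lambda>a b. X a b + Y a b)"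
  by (simp add: OmI_def restrict_rho_add supp_def)

lemma OmI_zero: "OmI I (\<lambda>a b. 0)"
  using restrict_rho_scale[of I 0 "\<lambda>a b. 0"] by (simp add: OmI_def supp_def)

lemma restrict_rho_adjm: "I \<subseteq> U \<Longrightarrow> restrict_rho n dims psi I (adjm X) = adjm (restrict_rho n dims psi I X)"
  unfolding restrict_rho_mm by (simp add: adjm_mm supp_proj_herm mm_assoc)

lemma OmI_adjm: "I \<subseteq> U \<Longrightarrow> OmI I X \<Longrightarrow> OmI I (adjm X)"
proof -
  assume IU: "I \<subseteq> U" and om: "OmI I X"
  have "restrict_rho n dims psi I (adjm X) = adjm X"
    using restrict_rho_adjm[OF IU, of X] om by (simp add: OmI_def)
  moreover have "supp (idx dims I) (adjm X)" using om by (auto simp: OmI_def supp_def adjm_def)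
  ultimately show ?thesis by (simp add: OmI_def)
qed

definition sg :: "nat set \<Rightarrow> complex" where "sg I = (-1) ^ (\<Sum>I)"

lemma sg_sq: "sg I * sg I = 1"
  by (simp add: sg_def power_add[symmetric] mult_2[symmetric] power_mult)

lemma sg_UI: "I \<subseteq> U \<Longrightarrow> sg (U - I) * sg I = sg U"
proof -
  assume IU: "I \<subseteq> U"
  have "\<Sum>U = \<Sum>(U - I) + \<Sum>I" using IU by (simp add: sum.subset_diff finite_subset)
  then show ?thesis by (simp add: sg_def power_add)
qed

definition Lf :: "nat \<Rightarrow> eform \<Rightarrow> eform" where
  "Lf k \<eta> = (\<lambda>K. if K \<subseteq> U \<and> card K = n - k then (\<lambda>c c'. sg (U - K) * Tl (U - K) (\<eta> (U - K)) c c') else (\<lambda>a b. 0))"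

lemma Lf_add: "Lf k (form_add x y) = form_add (Lf k x) (Lf k y)"
  by (auto simp: Lf_def form_add_def fun_eq_iff Tl_add[unfolded fun_eq_iff] distrib_left)

lemma Lf_scale: "Lf k (form_scale c x) = form_scale c (Lf k x)"
  by (auto simp: Lf_def form_scale_def fun_eq_iff Tl_scale[unfolded fun_eq_iff])

lemma Lf_Omega:
  assumes kn: "k \<le> n" and eta: "\<eta> \<in> Omega n dims psi k"
  shows "Lf k \<eta> \<in> Omega n dims psi (n - k)"
proof (rule OmegaI)
  fix K assume KU: "K \<subseteq> U" and cK: "card K = n - k"
  have IU: "U - K \<subseteq> U" by auto
  have "OmI K (Tl (U - K) (\<eta> (U - K)))"
    unfolding OmI_def using Tl_fix[OF IU, of "\<eta> (U - K)"] Tl_supp[of "U - K" "\<eta> (U - K)"]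
    by (simp add: UUI[OF KU])
  then show "OmI K (Lf k \<eta> K)" using KU cK by (simp add: Lf_def OmI_scale)
next
  fix K assume "\<not> (K \<subseteq> U \<and> card K = n - k)"
  then show "Lf k \<eta> K = (\<lambda>a b. 0)" by (auto simp: Lf_def)
qed

lemma Lf_Lf:
  assumes kn: "k \<le> n" and eta: "\<eta> \<in> Omega n dims psi k"
  shows "Lf (n - k) (Lf k \<eta>) = form_scale (sg U) \<eta>"
proof (intro ext)
  fix I a b
  show "Lf (n - k) (Lf k \<eta>) I a b = form_scale (sg U) \<eta> I a b"
  proof (cases "I \<subseteq> U \<and> card I = k")
    case True
    then have IU: "I \<subseteq> U" and cI: "card I = k" by auto
    have KU: "U - I \<subseteq> U" by auto
    have cK: "card (U - I) = n - k" using card_UI[OF IU] cI by simp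
    have om: "OmI I (\<eta> I)" by (rule OmegaD[OF eta IU cI])
    have "Lf (n - k) (Lf k \<eta>) I = (\<lambda>c c'. sg (U - I) * Tl (U - I) (\<lambda>a b. sg I * Tl I (\<eta> I) a b) c c')"
      using IU cI cK kn by (simp add: Lf_def UUI[OF IU])
    also have "\<dots> = (\<lambda>c c'. sg (U - I) * sg I * Tl (U - I) (Tl I (\<eta> I)) c c')"
      by (simp add: Tl_scale mult.assoc)
    also have "\<dots> = (\<lambda>c c'. sg U * \<eta> I c c')"
      using Tl_inv[OF IU] om sg_UI[OF IU] by (simp add: OmI_def)
    finally show ?thesis by (simp add: form_scale_def)
  next
    case False
    have "\<eta> I = (\<lambda>a b. 0)" by (rule OmegaD0[OF eta False])
    moreover have "n - (n - k) = k" using kn by simp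
    ultimately show ?thesis using False by (auto simp: Lf_def form_scale_def)
  qed
qed

lemma Qp_sumX: "Qp I (\<lambda>a b. \<Sum>j\<in>J. F j a b) C = (\<Sum>j\<in>J. Qp I (F j) C)"
proof -
  let ?A = "idx dims I"
  let ?B = "\<lambda>a a'. bil (idx dims (U - I)) C (\<lambda>c. psi (Defs.merge I a c)) (\<lambda>c. psi (Defs.merge I a' c))"
  have "Qp I (\<lambda>a b. \<Sum>j\<in>J. F j a b) C = (\<Sum>a\<in>?A. \<Sum>a'\<in>?A. \<Sum>j\<in>J. F j a a' * ?B a a')"
    unfolding Qp_right by (simp add: sum_distrib_right)
  also have "\<dots> = (\<Sum>a\<in>?A. \<Sum>j\<in>J. \<Sum>a'\<in>?A. F j a a' * ?B a a')"
    by (rule sum.cong[OF refl], rule sum.swap)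
  also have "\<dots> = (\<Sum>j\<in>J. \<Sum>a\<in>?A. \<Sum>a'\<in>?A. F j a a' * ?B a a')"
    by (rule sum.swap)
  also have "\<dots> = (\<Sum>j\<in>J. Qp I (F j) C)" unfolding Qp_right ..
  finally show ?thesis .
qed

lemma Qp_scaleX: "Qp I (\<lambda>a b. k * X a b) C = k * Qp I X C"
  unfolding Qp_right by (simp add: sum_distrib_left mult.assoc)

lemma Qp_zeroX: "Qp I (\<lambda>a b. 0) C = 0"
  unfolding Qp_right by simp

lemma Qp_sumC: "Qp I X (\<lambda>a b. \<Sum>j\<in>J. F j a b) = (\<Sum>j\<in>J. Qp I X (F j))"
proof -
  let ?K = "idx dims (U - I)"
  let ?B = "\<lambda>c c'. bil (idx dims I) X (\<lambda>a. psi (Defs.merge I a c)) (\<lambda>a. psi (Defs.merge I a c'))"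
  have "Qp I X (\<lambda>a b. \<Sum>j\<in>J. F j a b) = (\<Sum>c\<in>?K. \<Sum>c'\<in>?K. \<Sum>j\<in>J. F j c c' * ?B c c')"
    unfolding Qp_left by (simp add: sum_distrib_right)
  also have "\<dots> = (\<Sum>c\<in>?K. \<Sum>j\<in>J. \<Sum>c'\<in>?K. F j c c' * ?B c c')"
    by (rule sum.cong[OF refl], rule sum.swap)
  also have "\<dots> = (\<Sum>j\<in>J. \<Sum>c\<in>?K. \<Sum>c'\<in>?K. F j c c' * ?B c c')"
    by (rule sum.swap)
  also have "\<dots> = (\<Sum>j\<in>J. Qp I X (F j))" unfolding Qp_left ..
  finally show ?thesis .
qed

lemma Qp_scaleC: "Qp I X (\<lambda>a b. k * C a b) = k * Qp I X C"
  unfolding Qp_left by (simp add: sum_distrib_left mult.assoc)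

lemma Qp_zeroC: "Qp I X (\<lambda>a b. 0) = 0"
  unfolding Qp_left by simp

lemma Qp_inner_comp:
  assumes IU: "I \<subseteq> U"
  shows "Qp I X (adjm (Tl I Y)) = (\<Sum>\<alpha><sS I. \<Sum>\<beta><sS I. complex_of_real (slam I \<alpha> * slam I \<beta>) *
      bil (idx dims I) X (su I \<alpha>) (su I \<beta>) * cnj (bil (idx dims I) Y (su I \<alpha>) (su I \<beta>)))"
  unfolding Qp_schmidt[OF IU schm[OF IU]]
  by (intro sum.cong refl) (simp add: bil_adjm Tl_entry[OF IU])

lemma idx_empty': "idx dims {} = {zidx}" by (rule idx_empty)

lemma empty_facts: "sS {} = 1 \<and> slam {} 0 = 1 \<and> su {} 0 zidx * cnj (su {} 0 zidx) = 1"
proof -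
  have E: "{} \<subseteq> U" by simp
  note sch = schm[OF E]
  have on: "orthonormal {zidx} (su {}) (sS {})" using on_u[OF E sch] by (simp add: idx_empty)
  have S1: "sS {} \<le> 1" using orthonormal_card[OF _ on] by simp
  have rho1: "rho_red n dims psi {} zidx zidx = 1"
  proof -
    have "rho_red n dims psi {} zidx zidx = (\<Sum>c\<in>idx dims U. psi c * cnj (psi c))"
      by (simp add: rho_red_def idx_empty Defs.merge_def)
    also have "\<dots> = of_real (\<Sum>c\<in>idx dims U. (cmod (psi c))^2)"
      unfolding of_real_sum by (intro sum.cong refl) (simp only: complex_norm_square)
    also have "\<dots> = 1" using unit by (simp add: unit_state_def)
    finally show ?thesis .
  qed
  have rr: "rho_red n dims psi {} zidx zidx = (\<Sum>\<alpha><sS {}. complex_of_real ((slam {} \<alpha>)^2) * su {} \<alpha> zidx * cnj (su {} \<alpha> zidx))"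
    by (simp add: rho_dm[OF E sch] dm_def idx_empty)
  have S0: "sS {} \<noteq> 0"
  proof
    assume "sS {} = 0"
    then have "rho_red n dims psi {} zidx zidx = 0" using rr by simp
    with rho1 show False by simp
  qed
  with S1 have S: "sS {} = 1" by simp
  have uu: "su {} 0 zidx * cnj (su {} 0 zidx) = 1"
    using on S by (simp add: orthonormal_def inn_def)
  have "complex_of_real ((slam {} 0)^2) * (su {} 0 zidx * cnj (su {} 0 zidx)) = 1"
    using rho1 rr S by (simp add: mult.assoc)
  then have "complex_of_real ((slam {} 0)^2) = 1" using uu by simp
  then have "(slam {} 0)^2 = 1" by (metis of_real_1 of_real_eq_iff)
  moreover have "slam {} 0 > 0" using lam_pos[OF E sch] S by simp
  ultimately have "slam {} 0 = 1" by (simp add: power2_eq_1_iff)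
  with S uu show ?thesis by simp
qed

lemma card0_sets: "{I. I \<subseteq> U \<and> card I = 0} = {{}}"
  using finite_subset[OF _ finite_atLeastLessThan[of 0 n]] by (fastforce simp: card_eq_0_iff)

lemma inner_Qp: "inner_form n dims psi k \<omega> \<eta> = (\<Sum>I\<in>{I. I \<subseteq> U \<and> card I = k}. Qp I (\<omega> I) (adjm (Tl I (\<eta> I))))"
proof (cases "k = 0")
  case True
  obtain S0 L0 u0 where f: "sS {} = 1" "slam {} 0 = 1" "su {} 0 zidx * cnj (su {} 0 zidx) = 1"
    using empty_facts by blast
  have b: "bil {zidx} X (su {} 0) (su {} 0) = X zidx zidx" for X
    using f(3) by (simp add: bil_def mult_ac)
  have "Qp {} (\<omega> {}) (adjm (Tl {} (\<eta> {}))) = \<omega> {} zidx zidx * cnj (\<eta> {} zidx zidx)"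
    using Qp_inner_comp[of "{}" "\<omega> {}" "\<eta> {}"] f by (simp add: idx_empty b)
  then show ?thesis using True card0_sets by (simp add: inner_form_def)
next
  case False
  have "inner_form n dims psi k \<omega> \<eta> = (\<Sum>I\<in>{I. I \<subseteq> U \<and> card I = k}.
      \<Sum>\<alpha><sS I. \<Sum>\<beta><sS I. complex_of_real (slam I \<alpha> * slam I \<beta>) *
      bil (idx dims I) (\<omega> I) (su I \<alpha>) (su I \<beta>) * cnj (bil (idx dims I) (\<eta> I) (su I \<alpha>) (su I \<beta>)))"
    using False by (simp add: inner_form_def choice_eq mat_entry_bil)
  also have "\<dots> = (\<Sum>I\<in>{I. I \<subseteq> U \<and> card I = k}. Qp I (\<omega> I) (adjm (Tl I (\<eta> I))))"
    by (intro sum.cong refl) (simp add: Qp_inner_comp)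
  finally show ?thesis .
qed

lemma delta_sum: "\<gamma> < (S::nat) \<Longrightarrow> (\<Sum>\<alpha><S. (if \<alpha> = \<gamma> then 1 else 0) * f \<alpha>) = (f \<gamma> :: complex)"
proof -
  assume g: "\<gamma> < S"
  have "(\<Sum>\<alpha><S. (if \<alpha> = \<gamma> then 1 else 0) * f \<alpha>) = (\<Sum>\<alpha><S. if \<alpha> = \<gamma> then f \<alpha> else 0)"
    by (intro sum.cong) auto
  also have "\<dots> = f \<gamma>" using g by (subst sum.remove[of _ \<gamma>]) auto
  finally show ?thesis .
qed

lemma delta_sum2:
  assumes "\<alpha> < (S::nat)" "\<beta> < S"
  shows "(\<Sum>\<gamma><S. \<Sum>\<delta><S. (if \<gamma> = \<alpha> then 1 else 0) * ((if \<delta> = \<beta> then 1 else 0) * g \<gamma> \<delta>)) = (g \<alpha> \<beta> :: complex)"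
proof -
  have "(\<Sum>\<gamma><S. \<Sum>\<delta><S. (if \<gamma> = \<alpha> then 1 else 0) * ((if \<delta> = \<beta> then 1 else 0) * g \<gamma> \<delta>)) =
      (\<Sum>\<gamma><S. (if \<gamma> = \<alpha> then 1 else 0) * g \<gamma> \<beta>)"
    by (intro sum.cong refl) (simp add: sum_distrib_left[symmetric] delta_sum assms(2))
  also have "\<dots> = g \<alpha> \<beta>" by (rule delta_sum[OF assms(1)])
  finally show ?thesis .
qed

definition R1 :: "mindex set \<Rightarrow> (mindex \<Rightarrow> complex) \<Rightarrow> (mindex \<Rightarrow> complex) \<Rightarrow> qop" where
  "R1 A p q = (\<lambda>a b. if a \<in> A \<and> b \<in> A then p a * cnj (q b) else 0)"

lemma rank1_fix:
  assumes hs: "adjm s = s" and ss: "supp A s"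
    and fp: "\<And>a. a \<in> A \<Longrightarrow> (\<Sum>a'\<in>A. s a a' * p a') = p a"
    and fq: "\<And>a. a \<in> A \<Longrightarrow> (\<Sum>a'\<in>A. s a a' * q a') = q a"
  shows "mm A (mm A s (R1 A p q)) s = R1 A p q"
proof (intro ext)
  fix a b
  show "mm A (mm A s (R1 A p q)) s a b = R1 A p q a b"
  proof (cases "a \<in> A \<and> b \<in> A")
    case True
    have q2: "(\<Sum>e\<in>A. cnj (q e) * s e b) = cnj (q b)"
    proof -
      have "s e b = cnj (s b e)" for e using herm_entry[OF hs] by metis
      then have "(\<Sum>e\<in>A. cnj (q e) * s e b) = cnj (\<Sum>e\<in>A. s b e * q e)" by (simp add: mult.commute)
      then show ?thesis using fq True by simp
    qed
    have "mm A (mm A s (R1 A p q)) s a b = (\<Sum>e\<in>A. (\<Sum>d\<in>A. s a d * (p d * cnj (q e))) * s e b)"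
      using True by (simp add: mm_def R1_def cong: sum.cong)
    also have "\<dots> = (\<Sum>e\<in>A. (\<Sum>d\<in>A. s a d * p d) * (cnj (q e) * s e b))"
      by (intro sum.cong refl) (simp add: sum_distrib_right sum_distrib_left mult_ac)
    also have "\<dots> = (\<Sum>d\<in>A. s a d * p d) * (\<Sum>e\<in>A. cnj (q e) * s e b)"
      by (simp add: sum_distrib_left)
    also have "\<dots> = R1 A p q a b" using True fp q2 by (simp add: R1_def)
    finally show ?thesis .
  next
    case False
    then show ?thesis using ss by (auto simp: mm_def R1_def supp_def)
  qed
qed

lemma bil_R1: "bil A (R1 A p q) x y = (\<Sum>a\<in>A. cnj (x a) * p a) * (\<Sum>b\<in>A. cnj (q b) * y b)"
  by (simp add: bil_def R1_def sum_product mult_ac)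

lemma dm_sandwich:
  assumes cA: "c \<in> A" and c'A: "c' \<in> A"
  shows "mm A (mm A (dm A S (\<lambda>_. 1) v) C) (dm A S (\<lambda>_. 1) v) c c' =
    (\<Sum>\<alpha><S. \<Sum>\<beta><S. v \<alpha> c * bil A C (v \<alpha>) (v \<beta>) * cnj (v \<beta> c'))"
proof -
  let ?F = "\<lambda>e d \<alpha> \<beta>. v \<alpha> c * cnj (v \<beta> c') * (cnj (v \<alpha> d) * C d e * v \<beta> e)"
  have "mm A (mm A (dm A S (\<lambda>_. 1) v) C) (dm A S (\<lambda>_. 1) v) c c' =
      (\<Sum>e\<in>A. \<Sum>d\<in>A. (\<Sum>\<alpha><S. v \<alpha> c * cnj (v \<alpha> d)) * C d e * (\<Sum>\<beta><S. v \<beta> e * cnj (v \<beta> c')))"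
    using cA c'A by (simp add: mm_def dm_def sum_distrib_right cong: sum.cong)
  also have "\<dots> = (\<Sum>e\<in>A. \<Sum>d\<in>A. \<Sum>\<alpha><S. \<Sum>\<beta><S. ?F e d \<alpha> \<beta>)"
    by (intro sum.cong refl) (simp add: sum_product sum_distrib_left sum_distrib_right mult_ac)
  also have "\<dots> = (\<Sum>\<alpha><S. \<Sum>\<beta><S. \<Sum>e\<in>A. \<Sum>d\<in>A. ?F e d \<alpha> \<beta>)"
    by (rule sum4_swap)
  also have "\<dots> = (\<Sum>\<alpha><S. \<Sum>\<beta><S. \<Sum>d\<in>A. \<Sum>e\<in>A. ?F e d \<alpha> \<beta>)"
    by (rule sum.cong[OF refl], rule sum.cong[OF refl], rule sum.swap)
  also have "\<dots> = (\<Sum>\<alpha><S. \<Sum>\<beta><S. v \<alpha> c * bil A C (v \<alpha>) (v \<beta>) * cnj (v \<beta> c'))"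
    unfolding bil_def by (intro sum.cong refl) (simp add: sum_distrib_left mult_ac)
  finally show ?thesis .
qed

lemma Q_nondeg:
  assumes IU: "I \<subseteq> U" and omC: "OmI (U - I) C" and Q0: "\<And>X. OmI I X \<Longrightarrow> Qp I X C = 0"
  shows "C = (\<lambda>a b. 0)"
proof -
  let ?A = "idx dims I" and ?K = "idx dims (U - I)"
  let ?S = "sS I" and ?u = "su I" and ?v = "sv I" and ?l = "slam I"
  note sch = schm[OF IU]
  have KU: "U - I \<subseteq> U" by auto
  note onu = on_u[OF IU sch]
  have bzero: "bil ?K C (?v \<alpha>) (?v \<beta>) = 0" if al: "\<alpha> < ?S" and be: "\<beta> < ?S" for \<alpha> \<beta>
  proof -
    let ?E = "R1 ?A (?u \<alpha>) (?u \<beta>)"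
    have fixu: "(\<Sum>a'\<in>?A. supp_proj n dims psi I a a' * ?u \<gamma> a') = ?u \<gamma> a" if "a \<in> ?A" "\<gamma> < ?S" for a \<gamma>
      unfolding supp_proj_dm[OF IU sch]
      by (rule dm_fix[OF finI[OF IU sch] onu that(1), of _ "\<lambda>\<alpha>. if \<alpha> = \<gamma> then 1 else 0"]) (simp add: delta_sum that(2))
    have omE: "OmI I ?E"
      unfolding OmI_def restrict_rho_mm
    proof
      show "supp ?A ?E" by (simp add: supp_def R1_def)
      show "mm ?A (mm ?A (supp_proj n dims psi I) ?E) (supp_proj n dims psi I) = ?E"
        by (rule rank1_fix[OF supp_proj_herm[OF IU] supp_proj_supp[OF IU]]) (use fixu al be in auto)
    qed
    have ob: "(\<Sum>a\<in>?A. cnj (?u \<gamma> a) * ?u \<alpha> a) = (if \<gamma> = \<alpha> then 1 else 0)" if "\<gamma> < ?S" for \<gamma>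
      using onu that al unfolding orthonormal_def inn_def by (auto simp: mult.commute)
    have ob2: "(\<Sum>b\<in>?A. cnj (?u \<beta> b) * ?u \<delta> b) = (if \<delta> = \<beta> then 1 else 0)" if "\<delta> < ?S" for \<delta>
      using onu that be unfolding orthonormal_def inn_def by (auto simp: mult.commute)
    have "Qp I ?E C = (\<Sum>\<gamma><?S. \<Sum>\<delta><?S. complex_of_real (?l \<gamma> * ?l \<delta>) *
        ((if \<gamma> = \<alpha> then 1 else 0) * (if \<delta> = \<beta> then 1 else 0)) * bil ?K C (?v \<gamma>) (?v \<delta>))"
      unfolding Qp_schmidt[OF IU sch] bil_R1 by (intro sum.cong refl) (simp add: ob ob2)
    also have "\<dots> = (\<Sum>\<gamma><?S. \<Sum>\<delta><?S. (if \<gamma> = \<alpha> then 1 else 0) * ((if \<delta> = \<beta> then 1 else 0) *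
        (complex_of_real (?l \<gamma> * ?l \<delta>) * bil ?K C (?v \<gamma>) (?v \<delta>))))"
      by (intro sum.cong refl) (simp only: mult_ac)
    also have "\<dots> = complex_of_real (?l \<alpha> * ?l \<beta>) * bil ?K C (?v \<alpha>) (?v \<beta>)"
      by (rule delta_sum2[OF al be])
    finally have "complex_of_real (?l \<alpha> * ?l \<beta>) * bil ?K C (?v \<alpha>) (?v \<beta>) = 0"
      using Q0[OF omE] by simp
    moreover have "?l \<alpha> * ?l \<beta> \<noteq> 0" using lam_pos[OF IU sch] al be by (metis mult_pos_pos less_irrefl)
    ultimately show ?thesis by simp
  qed
  have sw: "schmidt n dims psi (U - I) ?S ?l ?v ?u" by (rule swap_schmidt[OF IU sch])
  show ?thesis
  proof (intro ext)
    fix c c'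
    show "C c c' = 0"
    proof (cases "c \<in> ?K \<and> c' \<in> ?K")
      case True
      have "C c c' = restrict_rho n dims psi (U - I) C c c'" using omC by (simp add: OmI_def)
      also have "\<dots> = (\<Sum>\<alpha><?S. \<Sum>\<beta><?S. ?v \<alpha> c * bil ?K C (?v \<alpha>) (?v \<beta>) * cnj (?v \<beta> c'))"
        unfolding restrict_rho_mm supp_proj_dm[OF KU sw] using True by (simp add: dm_sandwich)
      also have "\<dots> = 0" by (simp add: bzero)
      finally show ?thesis .
    next
      case False
      then show ?thesis using omC by (auto simp: OmI_def supp_def)
    qed
  qed
qed

definition Phi :: "nat \<Rightarrow> eform \<Rightarrow> eform \<Rightarrow> complex" where
  "Phi m \<omega> \<zeta> = (\<Sum>J\<in>{J. J \<subseteq> U \<and> card J = m}. sg J * Qp J (\<omega> J) (\<zeta> (U - J)))"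

definition conc :: "nat set \<Rightarrow> qop \<Rightarrow> eform" where
  "conc J X = (\<lambda>I. if I = J then X else (\<lambda>a b. 0))"

lemma finite_P: "finite {J. J \<subseteq> U \<and> card J = m}"
  by (rule finite_subset[of _ "Pow U"]) auto

lemma conc_Omega: "J \<subseteq> U \<Longrightarrow> card J = m \<Longrightarrow> OmI J X \<Longrightarrow> conc J X \<in> Omega n dims psi m"
  by (rule OmegaI) (auto simp: conc_def OmI_zero)

lemma sum_conc:
  assumes J: "J \<subseteq> U" "card J = m" and z: "\<And>I. F I (\<lambda>a b. 0) = 0"
  shows "(\<Sum>I\<in>{J. J \<subseteq> U \<and> card J = m}. F I (conc J X I)) = F J X"
proof -
  have "(\<Sum>I\<in>{J. J \<subseteq> U \<and> card J = m}. F I (conc J X I)) = (\<Sum>I\<in>{J. J \<subseteq> U \<and> card J = m}. if I = J then F J X else 0)"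
    by (intro sum.cong refl) (simp add: conc_def z)
  also have "\<dots> = F J X" using J finite_P by simp
  finally show ?thesis .
qed

lemma sg_nz: "sg J \<noteq> 0" by (simp add: sg_def)

lemma Omega_nondeg:
  assumes mn: "m \<le> n" and zeta: "\<zeta> \<in> Omega n dims psi (n - m)"
    and P0: "\<And>\<omega>. \<omega> \<in> Omega n dims psi m \<Longrightarrow> Phi m \<omega> \<zeta> = 0"
  shows "\<zeta> = zero_form"
proof (intro ext)
  fix K a b
  show "\<zeta> K a b = zero_form K a b"
  proof (cases "K \<subseteq> U \<and> card K = n - m")
    case True
    then have KU: "K \<subseteq> U" and cK: "card K = n - m" by auto
    define J where "J = U - K"
    have JU: "J \<subseteq> U" and cJ: "card J = m" and KJ: "K = U - J"
      using card_UI[OF KU] cK mn KU by (auto simp: J_def)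
    have "Qp J X (\<zeta> (U - J)) = 0" if om: "OmI J X" for X
    proof -
      have "Phi m (conc J X) \<zeta> = sg J * Qp J X (\<zeta> (U - J))"
        unfolding Phi_def by (rule sum_conc[OF JU cJ, of "\<lambda>I Y. sg I * Qp I Y (\<zeta> (U - I))"]) (simp add: Qp_zeroX)
      with P0[OF conc_Omega[OF JU cJ om]] sg_nz show ?thesis by simp
    qed
    moreover have "OmI (U - J) (\<zeta> (U - J))" using OmegaD[OF zeta] KJ KU cK by simp
    ultimately have "\<zeta> (U - J) = (\<lambda>a b. 0)" by (intro Q_nondeg[OF JU]) auto
    then show ?thesis using KJ by (simp add: zero_form_def)
  next
    case False
    then show ?thesis using OmegaD0[OF zeta] by (simp add: zero_form_def)
  qed
qed

lemma OmI_Tl: "I \<subseteq> U \<Longrightarrow> OmI (U - I) (Tl I Y)"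
  by (simp add: OmI_def Tl_fix Tl_supp)

lemma inner_pos:
  assumes xi: "\<xi> \<in> Omega n dims psi m"
    and P0: "\<And>\<omega>. \<omega> \<in> Omega n dims psi m \<Longrightarrow> inner_form n dims psi m \<omega> \<xi> = 0"
  shows "\<xi> = zero_form"
proof (intro ext)
  fix J a b
  show "\<xi> J a b = zero_form J a b"
  proof (cases "J \<subseteq> U \<and> card J = m")
    case True
    then have JU: "J \<subseteq> U" and cJ: "card J = m" by auto
    have KU: "U - J \<subseteq> U" by auto
    have "Qp J X (adjm (Tl J (\<xi> J))) = 0" if om: "OmI J X" for X
    proof -
      have "inner_form n dims psi m (conc J X) \<xi> = Qp J X (adjm (Tl J (\<xi> J)))"
        unfolding inner_Qp by (rule sum_conc[OF JU cJ, of "\<lambda>I Y. Qp I Y (adjm (Tl I (\<xi> I)))"]) (simp add: Qp_zeroX)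
      with P0[OF conc_Omega[OF JU cJ om]] show ?thesis by simp
    qed
    moreover have "OmI (U - J) (adjm (Tl J (\<xi> J)))" by (rule OmI_adjm[OF KU OmI_Tl[OF JU]])
    ultimately have "adjm (Tl J (\<xi> J)) = (\<lambda>a b. 0)" by (intro Q_nondeg[OF JU]) auto
    then have "Tl J (\<xi> J) = (\<lambda>a b. 0)" by (metis adjm_adjm adjm_def complex_cnj_zero)
    then have "Tl (U - J) (Tl J (\<xi> J)) = (\<lambda>a b. 0)" by (simp add: Tl_zero)
    moreover have "Tl (U - J) (Tl J (\<xi> J)) = \<xi> J"
      using OmegaD[OF xi JU cJ] by (intro Tl_inv[OF JU]) (auto simp: OmI_def)
    ultimately show ?thesis by (simp add: zero_form_def)
  next
    case False
    then show ?thesis using OmegaD0[OF xi] by (simp add: zero_form_def)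
  qed
qed

end



context st begin

definition cm :: "nat \<Rightarrow> nat" where "cm m = (if m = 0 then 1 else m)"

lemma cm_pos: "cm m > 0" by (simp add: cm_def)

lemma mm_id_right:
  assumes fin: "finite A" and ss: "supp A s"
  shows "mm A s (\<lambda>a b. if a = b \<and> a \<in> A then 1 else 0) = s"
proof (intro ext)
  fix a b
  have "mm A s (\<lambda>a b. if a = b \<and> a \<in> A then 1 else 0) a b = (\<Sum>c\<in>A. if c = b then s a b else 0)"
    unfolding mm_def by (rule sum.cong) auto
  also have "\<dots> = s a b"
    using fin ss by (cases "b \<in> A") (auto simp: supp_def)
  finally show "mm A s (\<lambda>a b. if a = b \<and> a \<in> A then 1 else 0) a b = s a b" .
qed

lemma restr_empty: "restr {} a = zidx" by (simp add: restr_def zidx_def fun_eq_iff)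

lemma idx_single_eq:
  assumes "a \<in> idx dims {j}" "b \<in> idx dims {j}" "a j = b j"
  shows "a = b"
proof (intro ext)
  fix x show "a x = b x" using assms by (cases "x = j") (auto simp: idx_def)
qed

lemma dform_eq:
  assumes IU: "I \<subseteq> U" and cI: "card I = Suc m"
  shows "dform n dims psi m \<omega> I = restrict_rho n dims psi I
      (\<lambda>a b. of_nat (cm m) * (\<Sum>j\<in>I. sten dims j (I - {j}) (\<omega> (I - {j})) a b))"
proof (cases "m = 0")
  case False
  then show ?thesis using IU cI by (simp add: dform_def cm_def)
next
  case True
  then obtain j where I: "I = {j}" using cI card_1_singletonE by auto
  let ?Id = "\<lambda>a b. if a = b \<and> a \<in> idx dims I then 1 else (0::complex)"
  have st: "sten dims j {} (\<omega> {}) = (\<lambda>a b. \<omega> {} zidx zidx * ?Id a b)"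
  proof (intro ext)
    fix a b
    show "sten dims j {} (\<omega> {}) a b = \<omega> {} zidx zidx * ?Id a b"
    proof (cases "a \<in> idx dims {j} \<and> b \<in> idx dims {j} \<and> a j = b j")
      case True
      then have "a = b" using idx_single_eq by blast
      then show ?thesis using True by (simp add: sten_def restr_empty I)
    next
      case False
      then have "\<not> (a = b \<and> a \<in> idx dims I)" by (auto simp: I)
      then show ?thesis using False by (auto simp: sten_def I)
    qed
  qed
  have "restrict_rho n dims psi I (\<lambda>a b. of_nat (cm m) * (\<Sum>j\<in>I. sten dims j (I - {j}) (\<omega> (I - {j})) a b))
      = restrict_rho n dims psi I (\<lambda>a b. \<omega> {} zidx zidx * ?Id a b)"
    using True by (simp add: I cm_def st)
  also have "\<dots> = (\<lambda>a b. \<omega> {} zidx zidx * restrict_rho n dims psi I ?Id a b)"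
    by (rule restrict_rho_scale)
  also have "restrict_rho n dims psi I ?Id = supp_proj n dims psi I"
    unfolding restrict_rho_mm using mm_id_right[OF finite_Ix[OF IU] supp_proj_supp[OF IU]] supp_proj_idem[OF IU] by simp
  finally show ?thesis using True IU cI by (simp add: dform_def)
qed

lemma card_le_n: "I \<subseteq> U \<Longrightarrow> card I \<le> n"
  using card_mono[of U I] by simp

lemma dform_other: "\<not> (I \<subseteq> U \<and> card I = Suc m) \<Longrightarrow> dform n dims psi m \<omega> I = (\<lambda>a b. 0)"
  by (auto simp: dform_def)

lemma dform_top: "dform n dims psi n \<omega> = zero_form"
proof (intro ext)
  fix I a b
  have "\<not> (I \<subseteq> U \<and> card I = Suc n)"
  proof
    assume "I \<subseteq> U \<and> card I = Suc n"
    then show False using card_le_n[of I] by simp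
  qed
  then show "dform n dims psi n \<omega> I a b = zero_form I a b" by (simp add: dform_other zero_form_def)
qed

lemma dform_Omega: "dform n dims psi m \<omega> \<in> Omega n dims psi (Suc m)"
proof (rule OmegaI)
  fix I assume IU: "I \<subseteq> U" and cI: "card I = Suc m"
  show "OmI I (dform n dims psi m \<omega> I)"
    unfolding dform_eq[OF IU cI] OmI_def using restrict_rho_supp[OF IU] restrict_rho_idem[OF IU] by simp
qed (rule dform_other)

lemma sten_adjm: "sten dims j J (adjm X) = adjm (sten dims j J X)"
  by (auto simp: sten_def adjm_def fun_eq_iff)

lemma sten_scale: "sten dims j J (\<lambda>a b. k * X a b) = (\<lambda>a b. k * sten dims j J X a b)"
  by (auto simp: sten_def fun_eq_iff)

lemma dform_adjf: "dform n dims psi m (\<lambda>I. adjm (\<omega> I)) = (\<lambda>I. adjm (dform n dims psi m \<omega> I))"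
proof (intro ext)
  fix I a b
  show "dform n dims psi m (\<lambda>I. adjm (\<omega> I)) I a b = adjm (dform n dims psi m \<omega> I) a b"
  proof (cases "I \<subseteq> U \<and> card I = Suc m")
    case True
    then have IU: "I \<subseteq> U" and cI: "card I = Suc m" by auto
    have e: "(\<lambda>a b. of_nat (cm m) * (\<Sum>j\<in>I. sten dims j (I - {j}) (adjm (\<omega> (I - {j}))) a b)) =
        adjm (\<lambda>a b. of_nat (cm m) * (\<Sum>j\<in>I. sten dims j (I - {j}) (\<omega> (I - {j})) a b))"
      unfolding sten_adjm by (simp add: adjm_def)
    show ?thesis unfolding dform_eq[OF IU cI] e restrict_rho_adjm[OF IU] ..
  next
    case False
    then show ?thesis by (simp add: dform_other adjm_def)
  qed
qed

lemma dform_scale: "dform n dims psi m (form_scale k \<omega>) = form_scale k (dform n dims psi m \<omega>)"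
proof (intro ext)
  fix I a b
  show "dform n dims psi m (form_scale k \<omega>) I a b = form_scale k (dform n dims psi m \<omega>) I a b"
  proof (cases "I \<subseteq> U \<and> card I = Suc m")
    case True
    then have IU: "I \<subseteq> U" and cI: "card I = Suc m" by auto
    have e: "(\<lambda>a b. of_nat (cm m) * (\<Sum>j\<in>I. sten dims j (I - {j}) (form_scale k \<omega> (I - {j})) a b)) =
        (\<lambda>a b. k * (of_nat (cm m) * (\<Sum>j\<in>I. sten dims j (I - {j}) (\<omega> (I - {j})) a b)))"
      by (simp add: form_scale_def sten_scale sum_distrib_left mult_ac)
    have "dform n dims psi m (form_scale k \<omega>) I = (\<lambda>a b. k * dform n dims psi m \<omega> I a b)"
      by (simp only: dform_eq[OF IU cI] e restrict_rho_scale)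
    then show ?thesis by (simp add: form_scale_def)
  next
    case False
    then show ?thesis by (simp add: dform_other form_scale_def)
  qed
qed

definition ten :: "nat \<Rightarrow> nat set \<Rightarrow> qop \<Rightarrow> qop" where
  "ten j J X = (\<lambda>a b. if a \<in> idx dims (insert j J) \<and> b \<in> idx dims (insert j J) \<and> a j = b j
      then X (restr J a) (restr J b) else 0)"

definition eps :: "nat \<Rightarrow> nat set \<Rightarrow> complex" where
  "eps j J = (-1) ^ card {i\<in>J. i < j}"

lemma sten_ten: "sten dims j J X = (\<lambda>a b. eps j J * ten j J X a b)"
  by (auto simp: sten_def ten_def eps_def fun_eq_iff)

lemma Qp_global:
  assumes IU: "I \<subseteq> U"
  shows "Qp I X C = (\<Sum>x\<in>idx dims U. \<Sum>x'\<in>idx dims U. cnj (psi x) * X (restr I x) (restr I x') *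
      C (restr (U - I) x) (restr (U - I) x') * psi x')"
proof -
  let ?A = "idx dims I" and ?K = "idx dims (U - I)"
  let ?G = "\<lambda>x x'. cnj (psi x) * X (restr I x) (restr I x') * C (restr (U - I) x) (restr (U - I) x') * psi x'"
  have dis: "I \<inter> (U - I) = {}" by auto
  have "(\<Sum>x\<in>idx dims U. \<Sum>x'\<in>idx dims U. ?G x x') =
      (\<Sum>a\<in>?A. \<Sum>c\<in>?K. \<Sum>a'\<in>?A. \<Sum>c'\<in>?K. ?G (Defs.merge I a c) (Defs.merge I a' c'))"
    by (simp add: sum_split[OF IU])
  also have "\<dots> = (\<Sum>a\<in>?A. \<Sum>c\<in>?K. \<Sum>a'\<in>?A. \<Sum>c'\<in>?K.
      cnj (psi (Defs.merge I a c)) * X a a' * C c c' * psi (Defs.merge I a' c'))"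
    by (intro sum.cong refl) (simp add: restr_merge1 restr_merge2[OF _ dis])
  also have "\<dots> = (\<Sum>a\<in>?A. \<Sum>a'\<in>?A. \<Sum>c\<in>?K. \<Sum>c'\<in>?K.
      cnj (psi (Defs.merge I a c)) * X a a' * C c c' * psi (Defs.merge I a' c'))"
    by (rule sum.cong[OF refl], rule sum.swap)
  finally show ?thesis by (simp add: Qp_def)
qed

lemma key_ten:
  assumes jU: "j \<in> U" and jJ: "j \<notin> J" and JU: "J \<subseteq> U"
  shows "Qp (insert j J) (ten j J A) C = Qp J A (ten j (U - insert j J) C)"
proof -
  let ?I = "insert j J" and ?K = "U - insert j J"
  have IU: "?I \<subseteq> U" using jU JU by auto
  have UJ: "insert j ?K = U - J" using jU jJ by auto
  have UI: "U - ?I = ?K" by simp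
  have l: "ten j J A (restr ?I x) (restr ?I x') = (if x j = x' j then A (restr J x) (restr J x') else 0)"
    if "x \<in> idx dims U" "x' \<in> idx dims U" for x x'
  proof -
    have e1: "restr J (restr ?I x) = restr J x" "restr J (restr ?I x') = restr J x'" by (auto intro: restr_restr)
    have e2: "restr ?I x j = x j" "restr ?I x' j = x' j" by (auto simp: restr_def)
    have m: "restr ?I x \<in> idx dims ?I" "restr ?I x' \<in> idx dims ?I" using that restr_in[OF IU] by auto
    show ?thesis unfolding ten_def using e1 e2 m by simp
  qed
  have r: "ten j ?K C (restr (U - J) x) (restr (U - J) x') = (if x j = x' j then C (restr ?K x) (restr ?K x') else 0)"
    if "x \<in> idx dims U" "x' \<in> idx dims U" for x x'
  proof -
    have sub: "U - J \<subseteq> U" by auto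
    have "restr (U - J) x \<in> idx dims (insert j ?K)" "restr (U - J) x' \<in> idx dims (insert j ?K)"
      using restr_in[OF sub] that UJ by auto
    moreover have "?K \<subseteq> U - J" by auto
    moreover have "restr ?K (restr (U - J) x) = restr ?K x" "restr ?K (restr (U - J) x') = restr ?K x'"
      by (auto intro: restr_restr)
    moreover have "restr (U - J) x j = x j" "restr (U - J) x' j = x' j" using jU jJ by (auto simp: restr_def)
    ultimately show ?thesis unfolding ten_def by simp
  qed
  show ?thesis
    unfolding Qp_global[OF IU] Qp_global[OF JU]
    by (intro sum.cong refl) (simp add: l r)
qed

lemma card_lt_split:
  assumes jU: "j \<in> U" and jJ: "j \<notin> J" and JU: "J \<subseteq> U"
  shows "card {i\<in>J. i < j} + card {i\<in>U - insert j J. i < j} = j"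
proof -
  have "{i\<in>J. i < j} \<union> {i\<in>U - insert j J. i < j} = {..<j}" using jU JU by auto
  moreover have "{i\<in>J. i < j} \<inter> {i\<in>U - insert j J. i < j} = {}" by auto
  moreover have "finite {i\<in>J. i < j}" "finite {i\<in>U - insert j J. i < j}" by auto
  ultimately show ?thesis by (metis card_Un_disjoint card_lessThan)
qed

lemma eps_sq: "eps j J * eps j J = 1"
  by (simp add: eps_def power_add[symmetric] mult_2[symmetric] power_mult)

lemma sign_swap:
  assumes jU: "j \<in> U" and jJ: "j \<notin> J" and JU: "J \<subseteq> U"
  shows "sg (insert j J) * eps j J = sg J * eps j (U - insert j J)"
proof -
  have fJ: "finite J" using JU by (auto intro: finite_subset)
  have s1: "sg (insert j J) = (-1) ^ j * sg J" using fJ jJ by (simp add: sg_def power_add)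
  have e: "eps j J * eps j (U - insert j J) = (-1) ^ j"
    unfolding eps_def power_add[symmetric] card_lt_split[OF jU jJ JU] ..
  have "sg (insert j J) * eps j J = sg J * (eps j J * eps j (U - insert j J)) * eps j J"
    by (simp add: s1 e mult_ac)
  also have "\<dots> = sg J * eps j (U - insert j J) * (eps j J * eps j J)" by (simp add: mult_ac)
  finally show ?thesis by (simp add: eps_sq)
qed

lemma reindex:
  "(\<Sum>I\<in>{I. I \<subseteq> U \<and> card I = Suc m}. \<Sum>j\<in>I. F (I - {j}) j) =
   (\<Sum>J\<in>{J. J \<subseteq> U \<and> card J = m}. \<Sum>j\<in>U - J. F J j)"
proof -
  have fin1: "finite {I. I \<subseteq> U \<and> card I = Suc m}" by (rule finite_P)
  have fin2: "finite {J. J \<subseteq> U \<and> card J = m}" by (rule finite_P)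
  have "(\<Sum>I\<in>{I. I \<subseteq> U \<and> card I = Suc m}. \<Sum>j\<in>I. F (I - {j}) j) =
      (\<Sum>p\<in>Sigma {I. I \<subseteq> U \<and> card I = Suc m} (\<lambda>I. I). F (fst p - {snd p}) (snd p))"
    using fin1 by (subst sum.Sigma) (auto intro: finite_subset simp: case_prod_beta)
  also have "\<dots> = (\<Sum>p\<in>Sigma {J. J \<subseteq> U \<and> card J = m} (\<lambda>J. U - J). F (fst p) (snd p))"
  proof (rule sum.reindex_bij_witness[of _ "\<lambda>p. (insert (snd p) (fst p), snd p)" "\<lambda>p. (fst p - {snd p}, snd p)"])
    fix p assume p: "p \<in> Sigma {J. J \<subseteq> U \<and> card J = m} (\<lambda>J. U - J)"
    obtain J j where pJ: "p = (J, j)" by (cases p)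
    have JU: "J \<subseteq> U" and cJ: "card J = m" and jJ: "j \<in> U - J" using p pJ by auto
    have fJ: "finite J" using JU by (auto intro: finite_subset)
    show "(fst (insert (snd p) (fst p), snd p) - {snd (insert (snd p) (fst p), snd p)}, snd (insert (snd p) (fst p), snd p)) = p"
      using jJ pJ by auto
    show "(insert (snd p) (fst p), snd p) \<in> Sigma {I. I \<subseteq> U \<and> card I = Suc m} (\<lambda>I. I)"
      using JU cJ jJ fJ pJ by auto
  next
    fix p assume p: "p \<in> Sigma {I. I \<subseteq> U \<and> card I = Suc m} (\<lambda>I. I)"
    obtain I j where pI: "p = (I, j)" by (cases p)
    have IU: "I \<subseteq> U" and cI: "card I = Suc m" and jI: "j \<in> I" using p pI by auto
    have fI: "finite I" using IU by (auto intro: finite_subset)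
    show "(insert (snd (fst p - {snd p}, snd p)) (fst (fst p - {snd p}, snd p)), snd (fst p - {snd p}, snd p)) = p"
      using jI pI by (auto simp: insert_absorb)
    show "(fst p - {snd p}, snd p) \<in> Sigma {J. J \<subseteq> U \<and> card J = m} (\<lambda>J. U - J)"
      using IU cI jI fI pI by auto
    show "F (fst (fst p - {snd p}, snd p)) (snd (fst p - {snd p}, snd p)) = F (fst p - {snd p}) (snd p)"
      by simp
  qed
  also have "\<dots> = (\<Sum>J\<in>{J. J \<subseteq> U \<and> card J = m}. \<Sum>j\<in>U - J. F J j)"
    using fin2 by (subst sum.Sigma) (auto simp: case_prod_beta)
  finally show ?thesis .
qed

end



context st begin

lemma Qp_dform:
  assumes IU: "I \<subseteq> U" and cI: "card I = Suc m"
  shows "Qp I (dform n dims psi m \<omega> I) C =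
    of_nat (cm m) * (\<Sum>j\<in>I. eps j (I - {j}) * Qp I (ten j (I - {j}) (\<omega> (I - {j}))) C)"
  unfolding dform_eq[OF IU cI] Qp_absL[OF IU] Qp_scaleX Qp_sumX sten_ten ..

lemma Qp_dform_right:
  assumes JU: "J \<subseteq> U" and cK: "card (U - J) = Suc m"
  shows "Qp J X (dform n dims psi m \<zeta> (U - J)) =
    of_nat (cm m) * (\<Sum>j\<in>U - J. eps j (U - insert j J) * Qp J X (ten j (U - insert j J) (\<zeta> (U - insert j J))))"
proof -
  have KU: "U - J \<subseteq> U" by auto
  have e: "U - J - {j} = U - insert j J" for j by auto
  show ?thesis
    unfolding dform_eq[OF KU cK] Qp_absR[OF JU] Qp_scaleC Qp_sumC sten_ten e ..
qed

lemma adjunction: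
  assumes mn: "Suc m \<le> n"
  shows "of_nat (cm (n - Suc m)) * Phi (Suc m) (dform n dims psi m \<omega>) \<zeta> =
         of_nat (cm m) * Phi m \<omega> (dform n dims psi (n - Suc m) \<zeta>)"
proof -
  define H where "H J j = sg J * (eps j (U - insert j J) * Qp J (\<omega> J) (ten j (U - insert j J) (\<zeta> (U - insert j J))))" for J j
  define G where "G J j = sg (insert j J) * (eps j J * Qp (insert j J) (ten j J (\<omega> J)) (\<zeta> (U - insert j J)))" for J j
  have L: "Phi (Suc m) (dform n dims psi m \<omega>) \<zeta> = of_nat (cm m) * (\<Sum>J\<in>{J. J \<subseteq> U \<and> card J = m}. \<Sum>j\<in>U - J. H J j)"
  proof -
    have "Phi (Suc m) (dform n dims psi m \<omega>) \<zeta> =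
        (\<Sum>I\<in>{I. I \<subseteq> U \<and> card I = Suc m}. of_nat (cm m) * (\<Sum>j\<in>I. G (I - {j}) j))"
      unfolding Phi_def
    proof (intro sum.cong refl)
      fix I assume "I \<in> {I. I \<subseteq> U \<and> card I = Suc m}"
      then have IU: "I \<subseteq> U" and cI: "card I = Suc m" by auto
      have ins: "insert j (I - {j}) = I" if "j \<in> I" for j using that by auto
      have "(\<Sum>j\<in>I. G (I - {j}) j) = (\<Sum>j\<in>I. sg I * (eps j (I - {j}) * Qp I (ten j (I - {j}) (\<omega> (I - {j}))) (\<zeta> (U - I))))"
        by (intro sum.cong refl) (simp add: G_def ins insert_absorb)
      then show "sg I * Qp I (dform n dims psi m \<omega> I) (\<zeta> (U - I)) = of_nat (cm m) * (\<Sum>j\<in>I. G (I - {j}) j)"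
        by (simp add: Qp_dform[OF IU cI] sum_distrib_left mult_ac)
    qed
    also have "\<dots> = of_nat (cm m) * (\<Sum>I\<in>{I. I \<subseteq> U \<and> card I = Suc m}. \<Sum>j\<in>I. G (I - {j}) j)"
      by (simp add: sum_distrib_left)
    also have "\<dots> = of_nat (cm m) * (\<Sum>J\<in>{J. J \<subseteq> U \<and> card J = m}. \<Sum>j\<in>U - J. G J j)"
      by (simp only: reindex)
    also have "\<dots> = of_nat (cm m) * (\<Sum>J\<in>{J. J \<subseteq> U \<and> card J = m}. \<Sum>j\<in>U - J. H J j)"
    proof -
      have "G J j = H J j" if "J \<subseteq> U" "j \<in> U - J" for J j
      proof -
        have jU: "j \<in> U" and jJ: "j \<notin> J" using that by auto
        have "G J j = sg (insert j J) * eps j J * Qp J (\<omega> J) (ten j (U - insert j J) (\<zeta> (U - insert j J)))"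
          by (simp add: G_def key_ten[OF jU jJ that(1)] mult.assoc)
        also have "\<dots> = H J j" by (simp add: H_def sign_swap[OF jU jJ that(1)] mult.assoc)
        finally show ?thesis .
      qed
      then show ?thesis by (intro arg_cong2[where f="(*)"] refl sum.cong) auto
    qed
    finally show ?thesis .
  qed
  have R: "Phi m \<omega> (dform n dims psi (n - Suc m) \<zeta>) = of_nat (cm (n - Suc m)) * (\<Sum>J\<in>{J. J \<subseteq> U \<and> card J = m}. \<Sum>j\<in>U - J. H J j)"
  proof -
    have "Phi m \<omega> (dform n dims psi (n - Suc m) \<zeta>) =
        (\<Sum>J\<in>{J. J \<subseteq> U \<and> card J = m}. of_nat (cm (n - Suc m)) * (\<Sum>j\<in>U - J. H J j))"
      unfolding Phi_def
    proof (intro sum.cong refl)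
      fix J assume "J \<in> {J. J \<subseteq> U \<and> card J = m}"
      then have JU: "J \<subseteq> U" and cJ: "card J = m" by auto
      have cK: "card (U - J) = Suc (n - Suc m)" using card_UI[OF JU] cJ mn by simp
      show "sg J * Qp J (\<omega> J) (dform n dims psi (n - Suc m) \<zeta> (U - J)) = of_nat (cm (n - Suc m)) * (\<Sum>j\<in>U - J. H J j)"
        by (simp add: Qp_dform_right[OF JU cK] H_def sum_distrib_left mult_ac)
    qed
    also have "\<dots> = of_nat (cm (n - Suc m)) * (\<Sum>J\<in>{J. J \<subseteq> U \<and> card J = m}. \<Sum>j\<in>U - J. H J j)"
      by (simp add: sum_distrib_left)
    finally show ?thesis .
  qed
  show ?thesis unfolding L R by (simp add: mult_ac)
qed

definition adjf :: "eform \<Rightarrow> eform" where "adjf \<omega> = (\<lambda>I. adjm (\<omega> I))"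

definition form_diff :: "eform \<Rightarrow> eform \<Rightarrow> eform" where
  "form_diff x y = (\<lambda>I a b. x I a b - y I a b)"

lemma adjm_zero: "adjm (\<lambda>a b. 0) = (\<lambda>a b. 0)" by (simp add: adjm_def)

lemma adjf_Omega: "\<omega> \<in> Omega n dims psi k \<Longrightarrow> adjf \<omega> \<in> Omega n dims psi k"
  by (rule OmegaI) (auto simp: adjf_def intro: OmI_adjm OmegaD dest: OmegaD0 simp: adjm_zero)

lemma adjf_zero_iff: "adjf \<omega> = zero_form \<longleftrightarrow> \<omega> = zero_form"
  by (auto simp: adjf_def zero_form_def adjm_def fun_eq_iff)

lemma Omega_diff: "x \<in> Omega n dims psi k \<Longrightarrow> y \<in> Omega n dims psi k \<Longrightarrow> form_diff x y \<in> Omega n dims psi k"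
proof (rule OmegaI)
  fix I assume x: "x \<in> Omega n dims psi k" and y: "y \<in> Omega n dims psi k" and I: "I \<subseteq> U" "card I = k"
  have "OmI I (\<lambda>a b. x I a b + (-1) * y I a b)"
    by (intro OmI_add OmI_scale OmegaD[OF x I(1,2)] OmegaD[OF y I(1,2)])
  then show "OmI I (form_diff x y I)" by (simp add: form_diff_def)
next
  fix I assume x: "x \<in> Omega n dims psi k" and y: "y \<in> Omega n dims psi k" and I: "\<not> (I \<subseteq> U \<and> card I = k)"
  then show "form_diff x y I = (\<lambda>a b. 0)" by (simp add: form_diff_def OmegaD0)
qed

lemma Qp_diffC: "Qp I X (\<lambda>a b. A a b - B a b) = Qp I X A - Qp I X B"
  by (simp add: Qp_left left_diff_distrib sum_subtractf)

lemma Tl_diff: "Tl I (\<lambda>a b. X a b - Y a b) = (\<lambda>c c'. Tl I X c c' - Tl I Y c c')"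
proof -
  have e: "(\<lambda>a b. X a b - Y a b) = (\<lambda>a b. X a b + (-1) * Y a b)" by simp
  have "Tl I (\<lambda>a b. X a b + (-1) * Y a b) = (\<lambda>c c'. Tl I X c c' + (-1) * Tl I Y c c')"
    by (simp only: Tl_add Tl_scale)
  then show ?thesis unfolding e by simp
qed

lemma inner_diff: "inner_form n dims psi m \<omega> (form_diff x y) = inner_form n dims psi m \<omega> x - inner_form n dims psi m \<omega> y"
proof -
  have "adjm (Tl I (form_diff x y I)) = (\<lambda>a b. adjm (Tl I (x I)) a b - adjm (Tl I (y I)) a b)" for I
    by (simp add: form_diff_def Tl_diff adjm_def)
  then show ?thesis unfolding inner_Qp by (simp add: Qp_diffC sum_subtractf)
qed

lemma codiff_eq:
  assumes k: "k \<noteq> 0" and xi: "\<xi> \<in> Omega n dims psi (k - 1)"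
    and H: "\<And>\<omega>. \<omega> \<in> Omega n dims psi (k - 1) \<Longrightarrow>
      inner_form n dims psi k (dform n dims psi (k - 1) \<omega>) \<eta> = inner_form n dims psi (k - 1) \<omega> \<xi>"
  shows "codiff n dims psi k \<eta> = \<xi>"
proof -
  let ?P = "\<lambda>\<xi>. \<xi> \<in> Omega n dims psi (k - 1) \<and> (\<forall>\<omega>\<in>Omega n dims psi (k - 1).
      inner_form n dims psi k (dform n dims psi (k - 1) \<omega>) \<eta> = inner_form n dims psi (k - 1) \<omega> \<xi>)"
  have c: "codiff n dims psi k \<eta> = (THE \<xi>. ?P \<xi>)" using k unfolding codiff_def by simp
  have uniq: "\<xi>' = \<xi>" if "?P \<xi>'" for \<xi>'
  proof -
    from that have xi': "\<xi>' \<in> Omega n dims psi (k - 1)" and H': "\<And>\<omega>. \<omega> \<in> Omega n dims psi (k - 1) \<Longrightarrow>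
        inner_form n dims psi k (dform n dims psi (k - 1) \<omega>) \<eta> = inner_form n dims psi (k - 1) \<omega> \<xi>'" by auto
    have "form_diff \<xi>' \<xi> = zero_form"
    proof (rule inner_pos)
      show "form_diff \<xi>' \<xi> \<in> Omega n dims psi (k - 1)" by (rule Omega_diff[OF xi' xi])
      fix \<omega> assume "\<omega> \<in> Omega n dims psi (k - 1)"
      then show "inner_form n dims psi (k - 1) \<omega> (form_diff \<xi>' \<xi>) = 0"
        using H H' by (simp add: inner_diff)
    qed
    then show ?thesis by (auto simp: form_diff_def zero_form_def fun_eq_iff)
  qed
  have P: "?P \<xi>" using xi H by blast
  have "(THE \<xi>. ?P \<xi>) = \<xi>" by (rule the_equality[of ?P \<xi>, OF P uniq]) 
  with c show ?thesis by simp
qed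

lemma sg_cnj: "cnj (sg I) = sg I" by (simp add: sg_def)

lemma Omega_scale: "\<omega> \<in> Omega n dims psi k \<Longrightarrow> form_scale c \<omega> \<in> Omega n dims psi k"
proof (rule OmegaI)
  fix I assume "\<omega> \<in> Omega n dims psi k" "I \<subseteq> U" "card I = k"
  then show "OmI I (form_scale c \<omega> I)" unfolding form_scale_def by (intro OmI_scale OmegaD)
next
  fix I assume "\<omega> \<in> Omega n dims psi k" "\<not> (I \<subseteq> U \<and> card I = k)"
  then show "form_scale c \<omega> I = (\<lambda>a b. 0)" by (simp add: form_scale_def OmegaD0)
qed

lemma Lf_at:
  assumes IU: "I \<subseteq> U" and cI: "card I = k" and kn: "k \<le> n"
  shows "Lf k \<eta> (U - I) = (\<lambda>c c'. sg I * Tl I (\<eta> I) c c')"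
proof -
  have "card (U - I) = n - k" using card_UI[OF IU] cI by simp
  then show ?thesis by (simp add: Lf_def UUI[OF IU])
qed

lemma codiff_char:
  assumes kn: "k \<le> n" and eta: "\<eta> \<in> Omega n dims psi k"
  shows "codiff n dims psi k \<eta> = zero_form \<longleftrightarrow> dform n dims psi (n - k) (Lf k \<eta>) = zero_form"
proof (cases "k = 0")
  case True
  then show ?thesis by (simp add: codiff_def dform_top)
next
  case False
  define m where "m = k - 1"
  have km: "k = Suc m" using False by (simp add: m_def)
  define \<zeta> where "\<zeta> = adjf (Lf k \<eta>)"
  have zeta: "\<zeta> \<in> Omega n dims psi (n - k)" unfolding \<zeta>_def by (rule adjf_Omega[OF Lf_Omega[OF kn eta]])
  define D where "D = dform n dims psi (n - k) \<zeta>"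
  have sk: "Suc (n - k) = n - m" using kn km by simp
  have DO: "D \<in> Omega n dims psi (n - m)"
    using dform_Omega[of "n - k" \<zeta>] unfolding D_def sk .
  have Dadj: "D = adjf (dform n dims psi (n - k) (Lf k \<eta>))"
    unfolding D_def \<zeta>_def adjf_def by (rule dform_adjf)
  define r :: complex where "r = of_nat (cm m) / of_nat (cm (n - k))"
  define G where "G J = (\<lambda>a b. r * sg J * D (U - J) a b)" for J
  define \<xi> where "\<xi> = (\<lambda>J. if J \<subseteq> U \<and> card J = m then Tl (U - J) (adjm (G J)) else (\<lambda>a b. 0))"
  have cK: "card (U - J) = n - m" if "J \<subseteq> U" "card J = m" for J
    using card_UI[OF that(1)] that(2) by simp
  have OmG: "OmI (U - J) (adjm (G J))" if JU: "J \<subseteq> U" and cJ: "card J = m" for J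
  proof -
    have KU: "U - J \<subseteq> U" by auto
    have "OmI (U - J) (D (U - J))" using OmegaD[OF DO KU cK[OF JU cJ]] .
    then have "OmI (U - J) (G J)" unfolding G_def using OmI_scale[of "U - J" "D (U - J)" "r * sg J"]
      by (simp add: mult.assoc)
    then show ?thesis by (rule OmI_adjm[OF KU])
  qed
  have xiO: "\<xi> \<in> Omega n dims psi m"
  proof (rule OmegaI)
    fix J assume JU: "J \<subseteq> U" and cJ: "card J = m"
    have KU: "U - J \<subseteq> U" by auto
    show "OmI J (\<xi> J)" using OmI_Tl[OF KU] JU cJ by (simp add: \<xi>_def UUI[OF JU])
  qed (auto simp: \<xi>_def)
  have Txi: "Tl J (\<xi> J) = adjm (G J)" if JU: "J \<subseteq> U" and cJ: "card J = m" for J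
  proof -
    have KU: "U - J \<subseteq> U" by auto
    have "Tl (U - (U - J)) (Tl (U - J) (adjm (G J))) = adjm (G J)"
      using OmG[OF JU cJ] by (intro Tl_inv[OF KU]) (auto simp: OmI_def)
    then show ?thesis using JU cJ by (simp add: \<xi>_def UUI[OF JU])
  qed
  have cmpos: "(of_nat (cm (n - k)) :: complex) \<noteq> 0" using cm_pos[of "n - k"] by simp
  have inner_eq: "inner_form n dims psi k (dform n dims psi m \<omega>) \<eta> = inner_form n dims psi m \<omega> \<xi>"
    if om: "\<omega> \<in> Omega n dims psi m" for \<omega>
  proof -
    have "inner_form n dims psi k (dform n dims psi m \<omega>) \<eta> = Phi k (dform n dims psi m \<omega>) \<zeta>"
      unfolding inner_Qp Phi_def
    proof (intro sum.cong refl)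
      fix I assume "I \<in> {I. I \<subseteq> U \<and> card I = k}"
      then have IU: "I \<subseteq> U" and cI: "card I = k" by auto
      have "\<zeta> (U - I) = (\<lambda>a b. cnj (sg I) * adjm (Tl I (\<eta> I)) a b)"
        by (simp add: \<zeta>_def adjf_def Lf_at[OF IU cI kn] adjm_def)
      then show "Qp I (dform n dims psi m \<omega> I) (adjm (Tl I (\<eta> I))) = sg I * Qp I (dform n dims psi m \<omega> I) (\<zeta> (U - I))"
        by (simp add: Qp_scaleC sg_cnj mult.assoc[symmetric] sg_sq)
    qed
    also have "\<dots> = r * Phi m \<omega> D"
    proof -
      have "of_nat (cm (n - k)) * Phi k (dform n dims psi m \<omega>) \<zeta> = of_nat (cm m) * Phi m \<omega> D"
        using adjunction[of m \<omega> \<zeta>] kn km by (simp add: D_def)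
      then show ?thesis using cmpos by (simp add: r_def field_simps)
    qed
    also have "\<dots> = (\<Sum>J\<in>{J. J \<subseteq> U \<and> card J = m}. Qp J (\<omega> J) (G J))"
      unfolding Phi_def G_def by (simp add: sum_distrib_left Qp_scaleC mult_ac)
    also have "\<dots> = inner_form n dims psi m \<omega> \<xi>"
      unfolding inner_Qp by (intro sum.cong refl) (simp add: Txi)
    finally show ?thesis .
  qed
  have cod: "codiff n dims psi k \<eta> = \<xi>"
    by (rule codiff_eq[OF False]) (use xiO inner_eq in \<open>simp_all add: m_def\<close>)
  have rnz: "r \<noteq> 0" using cm_pos[of m] cm_pos[of "n - k"] by (simp add: r_def)
  have "\<xi> = zero_form \<longleftrightarrow> D = zero_form"
  proof
    assume D0: "D = zero_form"
    show "\<xi> = zero_form"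
      by (auto simp: \<xi>_def G_def D0 zero_form_def adjm_zero Tl_zero fun_eq_iff)
  next
    assume x0: "\<xi> = zero_form"
    show "D = zero_form"
    proof (intro ext)
      fix K a b
      show "D K a b = zero_form K a b"
      proof (cases "K \<subseteq> U \<and> card K = n - m")
        case True
        then have KU: "K \<subseteq> U" and cK': "card K = n - m" by auto
        define J where "J = U - K"
        have JU: "J \<subseteq> U" and cJ: "card J = m" and KJ: "K = U - J"
          using card_UI[OF KU] cK' kn km KU by (auto simp: J_def)
        have "adjm (G J) = Tl J (\<xi> J)" using Txi[OF JU cJ] by simp
        also have "\<dots> = (\<lambda>a b. 0)" using x0 by (simp add: zero_form_def Tl_zero)
        finally have "G J = (\<lambda>a b. 0)" by (metis adjm_adjm adjm_zero)
        then have "r * sg J * D K a b = 0" unfolding G_def KJ by meson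
        then show ?thesis using rnz sg_nz by (simp add: zero_form_def)
      next
        case False
        then show ?thesis using OmegaD0[OF DO] by (simp add: zero_form_def)
      qed
    qed
  qed
  then show ?thesis using cod Dadj adjf_zero_iff by simp
qed

lemma dform_char:
  assumes kn: "k \<le> n" and eta: "\<eta> \<in> Omega n dims psi k"
  shows "dform n dims psi k \<eta> = zero_form \<longleftrightarrow> codiff n dims psi (n - k) (Lf k \<eta>) = zero_form"
proof -
  have nk: "n - (n - k) = k" using kn by simp
  have "codiff n dims psi (n - k) (Lf k \<eta>) = zero_form \<longleftrightarrow>
      dform n dims psi (n - (n - k)) (Lf (n - k) (Lf k \<eta>)) = zero_form"
    by (rule codiff_char[OF _ Lf_Omega[OF kn eta]]) simp
  also have "\<dots> \<longleftrightarrow> form_scale (sg U) (dform n dims psi k \<eta>) = zero_form"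
    by (simp add: nk Lf_Lf[OF kn eta] dform_scale)
  also have "\<dots> \<longleftrightarrow> dform n dims psi k \<eta> = zero_form"
    using sg_nz[of U] by (auto simp: form_scale_def zero_form_def fun_eq_iff)
  finally show ?thesis by simp
qed

lemma Lf_Harm:
  assumes kn: "k \<le> n" and h: "\<eta> \<in> Harm n dims psi k"
  shows "Lf k \<eta> \<in> Harm n dims psi (n - k)"
proof -
  have eO: "\<eta> \<in> Omega n dims psi k" and d0: "dform n dims psi k \<eta> = zero_form"
    and c0: "codiff n dims psi k \<eta> = zero_form" using h by (auto simp: Harm_def)
  have "Lf k \<eta> \<in> Omega n dims psi (n - k)" by (rule Lf_Omega[OF kn eO])
  moreover have "dform n dims psi (n - k) (Lf k \<eta>) = zero_form" using codiff_char[OF kn eO] c0 by simp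
  moreover have "codiff n dims psi (n - k) (Lf k \<eta>) = zero_form" using dform_char[OF kn eO] d0 by simp
  ultimately show ?thesis by (simp add: Harm_def)
qed

theorem harm_iso:
  assumes kn: "k \<le> n"
  shows "\<exists>f. bij_betw f (Harm n dims psi k) (Harm n dims psi (n - k)) \<and>
    (\<forall>x\<in>Harm n dims psi k. \<forall>y\<in>Harm n dims psi k. f (form_add x y) = form_add (f x) (f y)) \<and>
    (\<forall>c. \<forall>x\<in>Harm n dims psi k. f (form_scale c x) = form_scale c (f x))"
proof (intro exI conjI ballI allI)
  have nk: "n - (n - k) = k" using kn by simp
  have sgU: "sg U * sg U = 1" by (rule sg_sq)
  show "bij_betw (Lf k) (Harm n dims psi k) (Harm n dims psi (n - k))"
    unfolding bij_betw_def
  proof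
    show "inj_on (Lf k) (Harm n dims psi k)"
    proof (rule inj_onI)
      fix x y assume x: "x \<in> Harm n dims psi k" and y: "y \<in> Harm n dims psi k" and e: "Lf k x = Lf k y"
      have "form_scale (sg U) x = form_scale (sg U) y"
        using Lf_Lf[OF kn, of x] Lf_Lf[OF kn, of y] x y e by (simp add: Harm_def)
      then show "x = y" using sg_nz[of U] by (auto simp: form_scale_def fun_eq_iff)
    qed
    show "Lf k ` Harm n dims psi k = Harm n dims psi (n - k)"
    proof
      show "Lf k ` Harm n dims psi k \<subseteq> Harm n dims psi (n - k)" using Lf_Harm[OF kn] by blast
      show "Harm n dims psi (n - k) \<subseteq> Lf k ` Harm n dims psi k"
      proof
        fix z assume z: "z \<in> Harm n dims psi (n - k)"
        have zO: "z \<in> Omega n dims psi (n - k)" using z by (simp add: Harm_def)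
        define x where "x = form_scale (sg U) (Lf (n - k) z)"
        have LL: "Lf k (Lf (n - k) z) = form_scale (sg U) z"
          using Lf_Lf[of "n - k" z] zO nk by simp
        have Lx: "Lf k x = z"
          unfolding x_def Lf_scale LL using sgU by (simp add: form_scale_def mult.assoc[symmetric])
        have "Lf (n - k) z \<in> Harm n dims psi k" using Lf_Harm[of "n - k" z] z nk by simp
        then have xO: "x \<in> Omega n dims psi k" unfolding x_def Harm_def
          by (intro Omega_scale) simp
        have "dform n dims psi k x = zero_form" using dform_char[OF kn xO] Lx z by (simp add: Harm_def)
        moreover have "codiff n dims psi k x = zero_form" using codiff_char[OF kn xO] Lx z by (simp add: Harm_def)
        ultimately have "x \<in> Harm n dims psi k" using xO by (simp add: Harm_def)
        then show "z \<in> Lf k ` Harm n dims psi k" using Lx by blast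
      qed
    qed
  qed
  fix x y assume "x \<in> Harm n dims psi k" "y \<in> Harm n dims psi k"
  show "Lf k (form_add x y) = form_add (Lf k x) (Lf k y)" by (rule Lf_add)
next
  fix c x assume "x \<in> Harm n dims psi k"
  show "Lf k (form_scale c x) = form_scale c (Lf k x)" by (rule Lf_scale)
qed

end

theorem theorem3:
  fixes n :: nat and dims :: "nat \<Rightarrow> nat" and psi :: "mindex \<Rightarrow> complex" and k :: nat
  assumes "unit_state n dims psi"
    and "k \<le> n"
  shows "\<exists>f. bij_betw f (Harm n dims psi k) (Harm n dims psi (n - k)) \<and>
    (\<forall>x\<in>Harm n dims psi k. \<forall>y\<in>Harm n dims psi k. f (form_add x y) = form_add (f x) (f y)) \<and>
    (\<forall>c. \<forall>x\<in>Harm n dims psi k. f (form_scale c x) = form_scale c (f x))"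
proof -
  interpret st n dims psi by unfold_locales (rule assms(1))
  show ?thesis by (rule harm_iso[OF assms(2)])
qed

end
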